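(* Fix partitions $\mu\subseteq\lambda$, and let $T$ be an SSYT of shape $\lambda^+/\mu^-$ where $\lambda^+/\lambda$ is a horizontal strip and $\mu/\mu^-$ is a vertical strip. Suppose that the downward path of $T$, if it exists, exits right. Then $\mathrm{D}(T)$ is an SSYT of shape $\lambda'/\mu'$ where $\lambda'/\lambda$ is a horizontal strip and $\mu/\mu'$ is a vertical strip.
   Context: Diagrams are in French notation: a partition $\lambda$ is the set of cells in columns $i$ and rows $j$ (rows numbered from the bottom starting at 1) with $1\le i\le\lambda_j$; $\lambda/\mu$ is the set difference. An SSYT of skew shape has positive integer entries weakly increasing left to right in rows and strictly increasing bottom to top in columns. A horizontal (vertical) strip is a skew shape with no two cells in a common column (row). An outside corner of $T$ is a cell with no cell of $T$ immediately above or immediately right of it. Row insertion: to insert a value $x$ starting at row $j$: if $x$ is weakly larger than all entries of row $j$ (or row $j$ is empty), put $x$ in a new cell at the right end of row $j$ (if the row is empty and the shape is $\alpha/\beta$, in column $\alpha_j+1$) and stop; otherwise replace the entry $y$ of the leftmost cell of row $j$ with entry $>x$ by $x$ and insert $y$ starting at row $j+1$. External insertion $T\leftarrow_0 k$ starts at row 1. Reverse row insertion $T\rightarrow c$, $c$ an outside corner in row $j$ with entry $k$: delete $c$ and reverse-insert $x=k$ into row $j-1$, where reverse-inserting $x$ into row $r$ means: if $r=0$ stop ($x$ lands in row 0); else if $x$ is weakly smaller than all entries of row $r$, place $x$ in a new cell immediately left of the leftmost cell of row $r$ and stop ($x$ lands in row $r$); else replace the entry $y$ of the rightmost cell of row $r$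 with entry $<x$ by $x$ and reverse-insert $y$ into row $r-1$. The value at termination is the final entry. The reverse bumping path is the set of cells (including cells present in only one tableau) where the tableaux before and after differ. Downward slide: let $c_1,\dots,c_p$ be the cells of $\lambda^+/\lambda$ from right to left, $T_0=T$, $T_i=T_{i-1}\rightarrow c_i$ with final entry $k_i$ and reverse bumping path $B_i$. Let $m$ be the least $i$ such that $k_i$ lands in a row $\ge1$, and $m'=m-1$; if none exists, $m=m'=p$. Then $\mathrm{D}(T)=(\cdots((T_m\leftarrow_0 k_{m'})\leftarrow_0 k_{m'-1})\cdots)\leftarrow_0 k_1$. If such $m$ exists, the downward path of $T$ is $B_m$ (otherwise $T$ has no downward path); it exits right if its lowest cell lies in a row strictly below every cell of $\mu/\mu^-$. *)

theory Defs
  imports Main "HOL-Library.Product_Lexorder"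
begin

section \<open>Partitions and diagrams (French notation)\<close>

text \<open>A partition is a weakly decreasing list of positive integers; its j-th part
  (rows numbered from 1) is pt lam j, which is 0 beyond the length.
  A cell is a pair (i, j): column i, row j.\<close>

definition is_partition :: "nat list \<Rightarrow> bool" where
  "is_partition l \<longleftrightarrow> sorted_wrt (\<ge>) l \<and> (\<forall>x\<in>set l. 0 < x)"

definition pt :: "nat list \<Rightarrow> nat \<Rightarrow> nat" where
  "pt l j = (if 1 \<le> j \<and> j \<le> length l then l ! (j - 1) else 0)"

definition diagram :: "nat list \<Rightarrow> (nat \<times> nat) set" where
  "diagram l = {(i, j). 1 \<le> j \<and> 1 \<le> i \<and> i \<le> pt l j}"

definition hstrip :: "nat list \<Rightarrow> nat list \<Rightarrow> bool" where
  "hstrip outer inner \<longleftrightarrow> diagram inner \<subseteq> diagram outer \<and>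
     (\<forall>c\<in>diagram outer - diagram inner. \<forall>d\<in>diagram outer - diagram inner.
        fst c = fst d \<longrightarrow> c = d)"

definition vstrip :: "nat list \<Rightarrow> nat list \<Rightarrow> bool" where
  "vstrip outer inner \<longleftrightarrow> diagram inner \<subseteq> diagram outer \<and>
     (\<forall>c\<in>diagram outer - diagram inner. \<forall>d\<in>diagram outer - diagram inner.
        snd c = snd d \<longrightarrow> c = d)"

text \<open>A (skew) tableau carries its shape: element j-1 of the list describes row j as a pair
  (b, r), where b is the length of row j of the inner shape and r is the list of entries of
  row j from left to right, occupying columns b+1, ..., b + length r.\<close>

type_synonym tab = "(nat \<times> nat list) list"

definition rowof :: "tab \<Rightarrow> nat \<Rightarrow> nat \<times> nat list" where
  "rowof T j = (if 1 \<le> j \<and> j \<le> length T then T ! (j - 1) else (0, []))"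

definition setrow :: "nat \<Rightarrow> nat \<times> nat list \<Rightarrow> tab \<Rightarrow> tab" where
  "setrow j row T = (if j \<le> length T then T[j - 1 := row]
                     else T @ replicate (j - 1 - length T) (0, []) @ [row])"

definition cellmap :: "tab \<Rightarrow> nat \<times> nat \<Rightarrow> nat option" where
  "cellmap T c = (case c of (i, j) \<Rightarrow> (case rowof T j of (b, r) \<Rightarrow>
      if 1 \<le> j \<and> b < i \<and> i \<le> b + length r then Some (r ! (i - b - 1)) else None))"

definition is_ssyt :: "tab \<Rightarrow> bool" where
  "is_ssyt T \<longleftrightarrow>
     (\<forall>c a. cellmap T c = Some a \<longrightarrow> 0 < a) \<and>
     (\<forall>i i' j a a'. i < i' \<longrightarrow> cellmap T (i, j) = Some a \<longrightarrow> cellmap T (i', j) = Some a'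
        \<longrightarrow> a \<le> a') \<and>
     (\<forall>i j j' a a'. j < j' \<longrightarrow> cellmap T (i, j) = Some a \<longrightarrow> cellmap T (i, j') = Some a'
        \<longrightarrow> a < a')"

definition ssyt_of_shape :: "tab \<Rightarrow> nat list \<Rightarrow> nat list \<Rightarrow> bool" where
  "ssyt_of_shape T lam mu \<longleftrightarrow> diagram mu \<subseteq> diagram lam \<and>
     (\<forall>j\<ge>1. fst (rowof T j) = pt mu j \<and> fst (rowof T j) + length (snd (rowof T j)) = pt lam j) \<and>
     is_ssyt T"

lemma length_setrow_le: "1 \<le> j \<Longrightarrow> j \<le> length T \<Longrightarrow> length (setrow j row T) = length T"
  by (simp add: setrow_def)

function ins :: "nat \<Rightarrow> nat \<Rightarrow> tab \<Rightarrow> tab" where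
  "ins x j T = (if j = 0 then T else
     (case rowof T j of (b, r) \<Rightarrow>
       if (\<forall>y\<in>set r. y \<le> x) then setrow j (b, r @ [x]) T
       else (let k = Min {k. k < length r \<and> x < r ! k} in
         ins (r ! k) (Suc j) (setrow j (b, r[k := x]) T))))"
  by pat_completeness auto
termination
  apply (relation "measure (\<lambda>(x, j, T). Suc (length T) - j)")
   apply simp
  apply (clarsimp simp: length_setrow_le)
  subgoal for x j T b r
    by (cases "j \<le> length T") (auto simp: rowof_def setrow_def)
  done

declare ins.simps [simp del]

definition ext_ins :: "tab \<Rightarrow> nat \<Rightarrow> tab" where
  "ext_ins T k = ins k 1 T"

text \<open>revins x r T reverse-inserts x into row r; it returns the resulting tableau,
  the row in which x lands (0 if it lands in row 0), and the final value.\<close>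

fun revins :: "nat \<Rightarrow> nat \<Rightarrow> tab \<Rightarrow> tab \<times> nat \<times> nat" where
  "revins x 0 T = (T, 0, x)"
| "revins x (Suc r) T = (case rowof T (Suc r) of (b, row) \<Rightarrow>
     if (\<forall>y\<in>set row. x \<le> y) then (setrow (Suc r) (b - 1, x # row) T, Suc r, x)
     else (let k = Max {k. k < length row \<and> row ! k < x} in
       revins (row ! k) r (setrow (Suc r) (b, row[k := x]) T)))"

text \<open>Reverse row insertion at an outside corner c in row j: c is the rightmost cell of row j;
  delete it and reverse-insert its entry into row j - 1.\<close>

definition rev_corner :: "tab \<Rightarrow> nat \<times> nat \<Rightarrow> tab \<times> nat \<times> nat" where
  "rev_corner T c = (let j = snd c; (b, row) = rowof T j in
      revins (last row) (j - 1) (setrow j (b, butlast row) T))"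

definition bump_path :: "tab \<Rightarrow> tab \<Rightarrow> (nat \<times> nat) set" where
  "bump_path T T' = {c. cellmap T c \<noteq> cellmap T' c}"

text \<open>The cells of lamp/lam listed from right to left (for a horizontal strip the columns are
  distinct, so lexicographic order on (column,row) is the left-to-right order).\<close>

definition strip_cells :: "nat list \<Rightarrow> nat list \<Rightarrow> (nat \<times> nat) list" where
  "strip_cells lamp lam = rev (sorted_list_of_set (diagram lamp - diagram lam))"

text \<open>Element i-1 of the result is (T_i, k_i, landing row of k_i, B_i).\<close>

fun slide_steps :: "tab \<Rightarrow> (nat \<times> nat) list \<Rightarrow> (tab \<times> nat \<times> nat \<times> (nat \<times> nat) set) list" where
  "slide_steps T [] = []"
| "slide_steps T (c # cs) = (case rev_corner T c of (T', l, k) \<Rightarrow>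
     (T', k, l, bump_path T T') # slide_steps T' cs)"

definition steps :: "nat list \<Rightarrow> nat list \<Rightarrow> tab \<Rightarrow> (tab \<times> nat \<times> nat \<times> (nat \<times> nat) set) list" where
  "steps lamp lam T = slide_steps T (strip_cells lamp lam)"

definition step_tab :: "nat list \<Rightarrow> nat list \<Rightarrow> tab \<Rightarrow> nat \<Rightarrow> tab" where
  "step_tab lamp lam T i = (if i = 0 then T else fst (steps lamp lam T ! (i - 1)))"

definition step_val :: "nat list \<Rightarrow> nat list \<Rightarrow> tab \<Rightarrow> nat \<Rightarrow> nat" where
  "step_val lamp lam T i = fst (snd (steps lamp lam T ! (i - 1)))"

definition step_row :: "nat list \<Rightarrow> nat list \<Rightarrow> tab \<Rightarrow> nat \<Rightarrow> nat" where
  "step_row lamp lam T i = fst (snd (snd (steps lamp lam T ! (i - 1))))"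

definition step_path :: "nat list \<Rightarrow> nat list \<Rightarrow> tab \<Rightarrow> nat \<Rightarrow> (nat \<times> nat) set" where
  "step_path lamp lam T i = snd (snd (snd (steps lamp lam T ! (i - 1))))"

definition has_down_path :: "nat list \<Rightarrow> nat list \<Rightarrow> tab \<Rightarrow> bool" where
  "has_down_path lamp lam T \<longleftrightarrow>
     (\<exists>i. 1 \<le> i \<and> i \<le> length (steps lamp lam T) \<and> 1 \<le> step_row lamp lam T i)"

definition down_m :: "nat list \<Rightarrow> nat list \<Rightarrow> tab \<Rightarrow> nat" where
  "down_m lamp lam T = (if has_down_path lamp lam T
     then (LEAST i. 1 \<le> i \<and> i \<le> length (steps lamp lam T) \<and> 1 \<le> step_row lamp lam T i)
     else length (steps lamp lam T))"

definition down_m' :: "nat list \<Rightarrow> nat list \<Rightarrow> tab \<Rightarrow> nat" where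
  "down_m' lamp lam T = (if has_down_path lamp lam T then down_m lamp lam T - 1
     else length (steps lamp lam T))"

definition down_slide :: "nat list \<Rightarrow> nat list \<Rightarrow> tab \<Rightarrow> tab" where
  \<comment> \<open>D(T) for T of shape lamp/_ with lamp/lam the horizontal strip\<close>
  "down_slide lamp lam T =
     foldl (\<lambda>U i. ext_ins U (step_val lamp lam T i))
       (step_tab lamp lam T (down_m lamp lam T)) (rev [1..<Suc (down_m' lamp lam T)])"

definition down_path :: "nat list \<Rightarrow> nat list \<Rightarrow> tab \<Rightarrow> (nat \<times> nat) set" where
  "down_path lamp lam T = step_path lamp lam T (down_m lamp lam T)"

definition exits_right :: "(nat \<times> nat) set \<Rightarrow> nat list \<Rightarrow> nat list \<Rightarrow> bool" where
  \<comment> \<open>the lowest cell of path B lies strictly below every cell of mu/mum\<close>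
  "exits_right B mu mum \<longleftrightarrow>
     (\<exists>c\<in>B. (\<forall>c'\<in>B. snd c \<le> snd c') \<and> (\<forall>d\<in>diagram mu - diagram mum. snd c < snd d))"

end

theory Submission
  imports Defs "HOL-Library.Multiset"
begin


lemma rowof_setrow: "1 \<le> j \<Longrightarrow> rowof (setrow j row T) i = (if i = j then row else rowof T i)"
proof (cases "j \<le> length T")
  case True
  assume j: "1 \<le> j"
  show ?thesis using True j unfolding rowof_def setrow_def
    by (auto simp: nth_list_update)
next
  case False
  assume j: "1 \<le> j"
  have len: "length (T @ replicate (j - 1 - length T) (0, []) @ [row]) = j" using False by simp
  show ?thesis
  proof (cases "1 \<le> i \<and> i \<le> length T")
    case True
    then have "i - 1 < length T" by linarith
    then show ?thesis using True False j unfolding rowof_def setrow_def by (simp add: nth_append)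
  next
    case nI: False
    show ?thesis
    proof (cases "i = j")
      case True
      have "\<not> j - 1 < length T" using False by linarith
      then show ?thesis using True False j unfolding rowof_def setrow_def
        by (simp add: nth_append)
    next
      case ne: False
      show ?thesis
      proof (cases "1 \<le> i \<and> i < j")
        case True
        then have "(T @ replicate (j - 1 - length T) (0, []) @ [row]) ! (i - 1) = (0, [])"
          using nI by (auto simp: nth_append)
        then show ?thesis using True nI False j ne unfolding rowof_def setrow_def by auto
      next
        case False
        then show ?thesis using nI ne \<open>\<not> j \<le> length T\<close> j unfolding rowof_def setrow_def by auto
      qed
    qed
  qed
qed

definition teq :: "tab \<Rightarrow> tab \<Rightarrow> bool" where
  "teq S S' \<longleftrightarrow> (\<forall>i. rowof S i = rowof S' i)"

lemma teq_refl[simp]: "teq S S" by (simp add: teq_def)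
lemma teq_sym: "teq S S' \<Longrightarrow> teq S' S" by (simp add: teq_def)
lemma teq_trans: "teq S S' \<Longrightarrow> teq S' S'' \<Longrightarrow> teq S S''" by (simp add: teq_def)

lemma teq_setrow: "1 \<le> j \<Longrightarrow> teq S S' \<Longrightarrow> teq (setrow j row S) (setrow j row S')"
  by (simp add: teq_def rowof_setrow)

definition rstep :: "nat list \<Rightarrow> nat \<Rightarrow> nat list \<times> nat option" where
  "rstep R x = (if (\<forall>y\<in>set R. y \<le> x) then (R @ [x], None)
     else (let k = Min {k. k < length R \<and> x < R ! k} in (R[k := x], Some (R ! k))))"

lemma ins_rstep: "ins x j T = (if j = 0 then T else
     (case rowof T j of (b, r) \<Rightarrow> (case rstep r x of (r', None) \<Rightarrow> setrow j (b, r') T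
        | (r', Some y) \<Rightarrow> ins y (Suc j) (setrow j (b, r') T))))"
  by (subst ins.simps) (auto simp: rstep_def Let_def split: prod.splits)

lemma ins_0[simp]: "ins x 0 T = T" by (subst ins.simps) simp

lemma teq_ins: "teq S S' \<Longrightarrow> teq (ins x j S) (ins x j S')"
proof (induction x j S arbitrary: S' rule: ins.induct)
  case (1 x j T)
  show ?case
  proof (cases "j = 0")
    case True then show ?thesis using 1 by simp
  next
    case False
    have rj: "rowof T j = rowof S' j" using "1.prems" by (simp add: teq_def)
    obtain b r where br: "rowof T j = (b, r)" by fastforce
    show ?thesis
    proof (cases "\<forall>y\<in>set r. y \<le> x")
      case True
      moreover have "ins x j T = setrow j (b, r @ [x]) T"
        using False br True by (subst ins.simps) simp
      moreover have "ins x j S' = setrow j (b, r @ [x]) S'"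
        using False br rj True by (subst ins.simps) simp
      ultimately show ?thesis using False "1.prems" by (simp add: teq_setrow)
    next
      case nT: False
      let ?k = "Min {k. k < length r \<and> x < r ! k}"
      have "teq (ins (r ! ?k) (Suc j) (setrow j (b, r[?k := x]) T))
                (ins (r ! ?k) (Suc j) (setrow j (b, r[?k := x]) S'))"
        by (rule "1.IH"[OF False br[symmetric] nT refl]) (use False "1.prems" in \<open>simp add: teq_setrow\<close>)
      moreover have "ins x j T = ins (r ! ?k) (Suc j) (setrow j (b, r[?k := x]) T)"
        using False br nT by (subst ins.simps) (auto simp: Let_def)
      moreover have "ins x j S' = ins (r ! ?k) (Suc j) (setrow j (b, r[?k := x]) S')"
        using False br rj nT by (subst ins.simps) (auto simp: Let_def)
      ultimately show ?thesis by simp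
    qed
  qed
qed

lemma first_gt:
  assumes "\<not> (\<forall>y\<in>set (R::nat list). y \<le> x)"
  shows "Min {k. k < length R \<and> x < R ! k} < length R"
    "x < R ! Min {k. k < length R \<and> x < R ! k}"
    "\<forall>i < Min {k. k < length R \<and> x < R ! k}. R ! i \<le> x"
proof -
  let ?A = "{k. k < length R \<and> x < R ! k}"
  have fin: "finite ?A" by simp
  obtain y where "y \<in> set R" "\<not> y \<le> x" using assms by blast
  hence "y \<in> set R" "x < y" by (auto simp: not_le)
  then obtain i0 where "i0 < length R" "R ! i0 = y" by (auto simp: in_set_conv_nth)
  hence ne: "?A \<noteq> {}" using \<open>x < y\<close> by auto
  have "Min ?A \<in> ?A" using Min_in[OF fin ne] .
  then show "Min ?A < length R" "x < R ! Min ?A" by auto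
  show "\<forall>i < Min ?A. R ! i \<le> x"
  proof (intro allI impI)
    fix i assume i: "i < Min ?A"
    hence "i < length R" using \<open>Min ?A \<in> ?A\<close> by auto
    show "R ! i \<le> x"
    proof (rule ccontr)
      assume "\<not> R ! i \<le> x"
      hence "i \<in> ?A" using \<open>i < length R\<close> by auto
      hence "Min ?A \<le> i" using fin by simp
      thus False using i by simp
    qed
  qed
qed


lemma rstep_le: "(\<forall>y\<in>set R. y \<le> x) \<Longrightarrow> rstep R x = (R @ [x], None)"
  by (simp add: rstep_def)

definition is_min_gt :: "nat list \<Rightarrow> nat \<Rightarrow> nat \<Rightarrow> bool" where
  "is_min_gt R x m \<longleftrightarrow> m \<in> set R \<and> x < m \<and> (\<forall>y\<in>set R. x < y \<longrightarrow> m \<le> y)"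

lemma rstep_gt_idx:
  assumes "\<not> (\<forall>y\<in>set R. y \<le> (x::nat))"
  shows "\<exists>k. rstep R x = (R[k := x], Some (R ! k)) \<and> k < length R \<and> x < R ! k \<and> (\<forall>i<k. R ! i \<le> x)"
  using first_gt[OF assms] assms by (auto simp: rstep_def Let_def)

lemma sorted_upd_first:
  assumes "sorted R" "k < length R" "(x::nat) < R ! k" "\<forall>i<k. R ! i \<le> x"
  shows "sorted (R[k := x])"
  unfolding sorted_iff_nth_mono
proof (intro allI impI)
  fix i j assume ij: "i \<le> j" "j < length (R[k := x])"
  have s: "\<And>a b. a \<le> b \<Longrightarrow> b < length R \<Longrightarrow> R ! a \<le> R ! b"
    using assms(1) by (simp add: sorted_iff_nth_mono)
  show "R[k := x] ! i \<le> R[k := x] ! j"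
    using ij assms s[of k j] s[of i j] by (auto simp: nth_list_update)
qed

lemma rstep_gt:
  assumes "sorted R" "\<not> (\<forall>y\<in>set R. y \<le> (x::nat))"
  shows "\<exists>R' m. rstep R x = (R', Some m) \<and> is_min_gt R x m \<and>
            mset R' = add_mset x (mset R - {#m#}) \<and> sorted R' \<and> length R' = length R"
proof -
  obtain k where k: "rstep R x = (R[k := x], Some (R ! k))" "k < length R" "x < R ! k" "\<forall>i<k. R ! i \<le> x"
    using rstep_gt_idx[OF assms(2)] by blast
  have "is_min_gt R x (R ! k)"
    unfolding is_min_gt_def
  proof (intro conjI ballI impI)
    show "R ! k \<in> set R" using k by simp
    show "x < R ! k" using k by simp
    fix y assume "y \<in> set R" "x < y"
    then obtain i where i: "i < length R" "R ! i = y" by (auto simp: in_set_conv_nth)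
    have "\<not> i < k" using k(4) i \<open>x < y\<close> by force
    thus "R ! k \<le> y" using assms(1) i by (metis not_less sorted_iff_nth_mono)
  qed
  moreover have "mset (R[k := x]) = add_mset x (mset R - {#R ! k#})" using k by (simp add: mset_update)
  moreover have "sorted (R[k := x])" using sorted_upd_first[OF assms(1) k(2-4)] .
  ultimately show ?thesis using k by auto
qed

lemma rstep_sorted: "sorted R \<Longrightarrow> (x::nat) \<ge> 0 \<Longrightarrow> sorted (fst (rstep R x))"
proof (cases "\<forall>y\<in>set R. y \<le> x")
  case True
  assume "sorted R"
  then show ?thesis using True by (simp add: rstep_le sorted_append)
next
  case False
  assume "sorted R"
  then show ?thesis using rstep_gt[OF _ False] by auto
qed

definition opt :: "'a option \<Rightarrow> 'a list" where
  "opt v = (case v of None \<Rightarrow> [] | Some y \<Rightarrow> [y])"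

lemma opt_simps[simp]: "opt None = []" "opt (Some y) = [y]" by (simp_all add: opt_def)

fun rp :: "nat list \<Rightarrow> nat list \<Rightarrow> nat list \<times> nat list" where
  "rp R [] = (R, [])"
| "rp R (v # vs) = (case rstep R v of (R', ov) \<Rightarrow> (case rp R' vs of (R'', Os) \<Rightarrow> (R'', opt ov @ Os)))"

lemma rp_append: "rp R (V @ W) = (case rp R V of (R1, O1) \<Rightarrow> (case rp R1 W of (R2, O2) \<Rightarrow> (R2, O1 @ O2)))"
  by (induction V arbitrary: R) (auto split: prod.splits)

lemma rp_snoc: "rp R (V @ [x]) = (case rp R V of (R1, O1) \<Rightarrow> (case rstep R1 x of (R2, ov) \<Rightarrow> (R2, O1 @ opt ov)))"
  by (simp add: rp_append split: prod.splits)

lemma rstep_len: "length (fst (rstep R x)) + length (opt (snd (rstep R x))) = Suc (length R)"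
  by (auto simp: rstep_def Let_def)

lemma rp_len: "length (fst (rp R V)) + length (snd (rp R V)) = length R + length V"
proof (induction V arbitrary: R)
  case Nil then show ?case by simp
next
  case (Cons v V)
  obtain R' ov where e: "rstep R v = (R', ov)" by fastforce
  have "length R' + length (opt ov) = Suc (length R)" using rstep_len[of R v] e by simp
  then show ?case using Cons[of R'] e by (auto split: prod.splits)
qed

lemma rp_sorted: "sorted R \<Longrightarrow> sorted (fst (rp R V))"
proof (induction V arbitrary: R)
  case Nil then show ?case by simp
next
  case (Cons v V)
  obtain R' ov where e: "rstep R v = (R', ov)" by fastforce
  have "sorted R'" using rstep_sorted[OF Cons.prems, of v] e by simp
  then show ?case using Cons.IH[of R'] e by (auto split: prod.splits)
qed

lemma rp_out_sorted_gen:
  assumes "sorted R" "sorted V" "\<forall>v\<in>set V. a \<le> v" "\<forall>w\<in>set O0. \<forall>y\<in>set R. a < y \<longrightarrow> w \<le> y" "sorted O0"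
  shows "sorted (O0 @ snd (rp R V))"
  using assms
proof (induction V arbitrary: R a O0)
  case Nil then show ?case by simp
next
  case (Cons v V)
  show ?case
  proof (cases "\<forall>y\<in>set R. y \<le> v")
    case True
    have e: "rstep R v = (R @ [v], None)" using rstep_le[OF True] .
    have "sorted (O0 @ snd (rp (R @ [v]) V))"
    proof (rule Cons.IH)
      show "sorted (R @ [v])" using Cons.prems(1) True by (simp add: sorted_append)
      show "sorted V" using Cons.prems(2) by simp
      show "\<forall>x\<in>set V. v \<le> x" using Cons.prems(2) by simp
      show "\<forall>w\<in>set O0. \<forall>y\<in>set (R @ [v]). v < y \<longrightarrow> w \<le> y" using True by auto
      show "sorted O0" by fact
    qed
    then show ?thesis using e by (auto split: prod.splits)
  next
    case False
    obtain k where k: "rstep R v = (R[k := v], Some (R ! k))" "k < length R" "v < R ! k" "\<forall>i<k. R ! i \<le> v"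
      using rstep_gt_idx[OF False] by blast
    have av: "a \<le> v" using Cons.prems(3) by simp
    have "sorted ((O0 @ [R ! k]) @ snd (rp (R[k := v]) V))"
    proof (rule Cons.IH)
      show "sorted (R[k := v])" using sorted_upd_first[OF Cons.prems(1) k(2-4)] .
      show "sorted V" using Cons.prems(2) by simp
      show "\<forall>x\<in>set V. v \<le> x" using Cons.prems(2) by simp
      show "\<forall>w\<in>set (O0 @ [R ! k]). \<forall>y\<in>set (R[k := v]). v < y \<longrightarrow> w \<le> y"
      proof (intro ballI impI)
        fix w y assume w: "w \<in> set (O0 @ [R ! k])" and y: "y \<in> set (R[k := v])" and vy: "v < y"
        obtain i where i: "i < length R" "R[k := v] ! i = y" using y by (auto simp: in_set_conv_nth)
        have ik: "i \<noteq> k" using i vy k(2) by auto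
        hence yi: "y = R ! i" using i by simp
        have "\<not> i < k" using k(4) yi vy by force
        hence "k < i" using ik by simp
        hence "R ! k \<le> y" using Cons.prems(1) i yi by (simp add: sorted_iff_nth_mono)
        moreover have "y \<in> set R" using yi i by simp
        ultimately show "w \<le> y" using w Cons.prems(4) av vy by auto
      qed
      show "sorted (O0 @ [R ! k])" using Cons.prems(4,5) av k(2,3) by (auto simp: sorted_append)
    qed
    then show ?thesis using k by (auto split: prod.splits)
  qed
qed

lemma rp_out_sorted: "sorted R \<Longrightarrow> sorted V \<Longrightarrow> sorted (snd (rp R V))"
  using rp_out_sorted_gen[of R V 0 "[]"] by simp


definition InvM :: "nat \<Rightarrow> nat list \<Rightarrow> nat list \<Rightarrow> nat list \<Rightarrow> nat list \<Rightarrow> bool" where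
  "InvM z R1 O1 R2 O2 \<longleftrightarrow> sorted R1 \<and> sorted R2 \<and>
     ((mset R2 = add_mset z (mset R1) \<and> mset O2 = mset O1) \<or>
      (\<exists>q. z < q \<and> add_mset q (mset R2) = add_mset z (mset R1) \<and> mset O2 = add_mset q (mset O1)))"

lemma mset_add_diff_mem: "m \<in># M \<Longrightarrow> add_mset q (M - {#m#}) = add_mset q M - {#m#}"
  by (simp add: multiset_eq_iff)

lemma in_set_mset_eq: "mset A = mset B \<Longrightarrow> y \<in> set A \<longleftrightarrow> y \<in> set B"
  by (metis set_mset_mset)

lemma in_set_count: "y \<in> set R \<longleftrightarrow> 0 < count (mset R) y"
  by (simp add: count_greater_zero_iff)

lemma stepA:
  assumes s1: "sorted R1" and s2: "sorted R2" and A1: "mset R2 = add_mset z (mset R1)" and A2: "mset O2 = mset O1"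
    and zx: "z \<le> x"
  shows "InvM z (fst (rstep R1 x)) (O1 @ opt (snd (rstep R1 x))) (fst (rstep R2 x)) (O2 @ opt (snd (rstep R2 x)))"
proof -
  have srt: "sorted (fst (rstep R1 x))" "sorted (fst (rstep R2 x))" using rstep_sorted s1 s2 by auto
  have "set_mset (mset R2) = insert z (set_mset (mset R1))" using A1 by simp
  hence set2: "set R2 = insert z (set R1)" by simp
  show ?thesis
  proof (cases "\<forall>y\<in>set R1. y \<le> x")
    case True
    hence T2: "\<forall>y\<in>set R2. y \<le> x" using set2 zx by auto
    have "mset (R2 @ [x]) = add_mset z (mset (R1 @ [x]))" using A1 by simp
    then show ?thesis using rstep_le[OF True] rstep_le[OF T2] A2 srt unfolding InvM_def by simp
  next
    case False
    hence F2: "\<not>(\<forall>y\<in>set R2. y \<le> x)" using set2 by auto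
    obtain R1' m1 where r1: "rstep R1 x = (R1', Some m1)" "is_min_gt R1 x m1" "mset R1' = add_mset x (mset R1 - {#m1#})"
      using rstep_gt[OF s1 False] by blast
    obtain R2' m2 where r2: "rstep R2 x = (R2', Some m2)" "is_min_gt R2 x m2" "mset R2' = add_mset x (mset R2 - {#m2#})"
      using rstep_gt[OF s2 F2] by blast
    have "m2 \<le> m1" using r1(2) r2(2) set2 unfolding is_min_gt_def by auto
    moreover have "m1 \<le> m2" using r1(2) r2(2) set2 zx unfolding is_min_gt_def by auto
    ultimately have m: "m1 = m2" by simp
    have m1R: "m1 \<in># mset R1" using r1(2) by (simp add: is_min_gt_def)
    have "mset R2' = add_mset x (add_mset z (mset R1) - {#m1#})" using r2(3) A1 m by simp
    also have "\<dots> = add_mset z (mset R1')" using r1(3) m1R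
      by (simp add: mset_add_diff_mem[symmetric] add_mset_commute)
    finally have e: "mset R2' = add_mset z (mset R1')" .
    have "mset (O2 @ [m2]) = mset (O1 @ [m1])" using A2 m by simp
    then show ?thesis using r1(1) r2(1) srt e unfolding InvM_def by simp
  qed
qed

lemma H1: "m \<in># M \<Longrightarrow> add_mset q (add_mset x (M - {#m#})) = add_mset x (add_mset q M - {#m#})"
  by (auto simp: multiset_eq_iff)

lemma H2: "m \<in># M \<Longrightarrow> add_mset m (add_mset x (M - {#m#})) = add_mset x M"
  by (auto simp: multiset_eq_iff)

lemma InvM_A: "sorted R1 \<Longrightarrow> sorted R2 \<Longrightarrow> mset R2 = add_mset z (mset R1) \<Longrightarrow> mset O2 = mset O1 \<Longrightarrow> InvM z R1 O1 R2 O2"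
  unfolding InvM_def by blast

lemma InvM_B: "sorted R1 \<Longrightarrow> sorted R2 \<Longrightarrow> z < q \<Longrightarrow> add_mset q (mset R2) = add_mset z (mset R1) \<Longrightarrow> mset O2 = add_mset q (mset O1) \<Longrightarrow> InvM z R1 O1 R2 O2"
  unfolding InvM_def by blast

lemma all_le_eq: "(\<And>y. x < y \<Longrightarrow> y \<in> set R2 \<longleftrightarrow> y \<in> set R1) \<Longrightarrow> (\<forall>y\<in>set R1. y \<le> (x::nat)) \<longleftrightarrow> (\<forall>y\<in>set R2. y \<le> x)"
  by (meson not_le)

lemma stepB:
  assumes s1: "sorted R1" and s2: "sorted R2" and B1: "z < q" and B2: "add_mset q (mset R2) = add_mset z (mset R1)"
    and B3: "mset O2 = add_mset q (mset O1)" and zx: "z \<le> x"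
  shows "InvM z (fst (rstep R1 x)) (O1 @ opt (snd (rstep R1 x))) (fst (rstep R2 x)) (O2 @ opt (snd (rstep R2 x)))"
proof -
  have srt: "sorted (fst (rstep R1 x))" "sorted (fst (rstep R2 x))" using rstep_sorted s1 s2 by auto
  have qz: "q \<noteq> z" using B1 by simp
  have c: "\<And>y. count (mset R2) y + (if y = q then 1 else 0) = count (mset R1) y + (if y = z then 1 else 0)"
  proof -
    fix y
    have "count (add_mset q (mset R2)) y = count (add_mset z (mset R1)) y" using B2 by simp
    thus "count (mset R2) y + (if y = q then 1 else 0) = count (mset R1) y + (if y = z then 1 else 0)"
      by (auto split: if_splits)
  qed
  have "count (mset R1) q = Suc (count (mset R2) q)" using c[of q] qz by simp
  hence qR1: "q \<in># mset R1" by (metis count_greater_zero_iff zero_less_Suc)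
  have R2m: "mset R2 = add_mset z (mset R1 - {#q#})"
  proof (subst multiset_eq_iff, intro allI)
    fix y show "count (mset R2) y = count (add_mset z (mset R1 - {#q#})) y"
    proof -
      have q0: "0 < count (mset R1) q" using qR1 by simp
      show ?thesis using c[of y] q0 qz by (cases "y = q"; cases "y = z") auto
    qed
  qed
  have cnt: "\<And>y. y \<noteq> z \<Longrightarrow> y \<noteq> q \<Longrightarrow> y \<in> set R2 \<longleftrightarrow> y \<in> set R1"
  proof -
    fix y assume "y \<noteq> z" "y \<noteq> q"
    hence "count (mset R2) y = count (mset R1) y" using c[of y] by simp
    thus "y \<in> set R2 \<longleftrightarrow> y \<in> set R1" by (simp only: in_set_count)
  qed
  have sub: "\<And>y. y \<in> set R2 \<Longrightarrow> y \<noteq> z \<Longrightarrow> y \<in> set R1"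
  proof -
    fix y assume "y \<in> set R2" "y \<noteq> z"
    hence "count (mset R2) y \<le> count (mset R1) y" using c[of y] by simp
    thus "y \<in> set R1" using \<open>y \<in> set R2\<close> by (metis in_set_count less_le_trans)
  qed
  show ?thesis
  proof (cases "q \<le> x")
    case qx: True
    have eqs: "\<And>y. x < y \<Longrightarrow> y \<in> set R2 \<longleftrightarrow> y \<in> set R1"
    proof -
      fix y assume "x < y" thus "y \<in> set R2 \<longleftrightarrow> y \<in> set R1" using cnt[of y] zx qx by simp
    qed
    note le_eq = all_le_eq[of x R2 R1, OF eqs]
    show ?thesis
    proof (cases "\<forall>y\<in>set R1. y \<le> x")
      case True
      hence T2: "\<forall>y\<in>set R2. y \<le> x" using le_eq by simp
      have e: "add_mset q (mset (R2 @ [x])) = add_mset z (mset (R1 @ [x]))"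
        using B2 by (simp add: add_mset_commute)
      have "InvM z (R1 @ [x]) (O1 @ []) (R2 @ [x]) (O2 @ [])"
        by (rule InvM_B) (use s1 s2 True T2 B1 e B3 in \<open>simp_all add: sorted_append\<close>)
      then show ?thesis using rstep_le[OF True] rstep_le[OF T2] by simp
    next
      case False
      hence F2: "\<not>(\<forall>y\<in>set R2. y \<le> x)" using le_eq by simp
      obtain R1' m1 where r1: "rstep R1 x = (R1', Some m1)" "is_min_gt R1 x m1" "mset R1' = add_mset x (mset R1 - {#m1#})" "sorted R1'"
        using rstep_gt[OF s1 False] by blast
      obtain R2' m2 where r2: "rstep R2 x = (R2', Some m2)" "is_min_gt R2 x m2" "mset R2' = add_mset x (mset R2 - {#m2#})" "sorted R2'"
        using rstep_gt[OF s2 F2] by blast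
      have m1R: "m1 \<in> set R1" "x < m1" using r1(2) by (simp_all add: is_min_gt_def)
      have m2R: "m2 \<in> set R2" "x < m2" using r2(2) by (simp_all add: is_min_gt_def)
      have "m2 \<le> m1" using r2(2) m1R eqs[of m1] unfolding is_min_gt_def by blast
      moreover have "m1 \<le> m2" using r1(2) m2R eqs[of m2] unfolding is_min_gt_def by blast
      ultimately have m: "m1 = m2" by simp
      have "add_mset q (mset R2') = add_mset x (add_mset q (mset R2) - {#m2#})"
        unfolding r2(3) by (rule H1) (use m2R in simp)
      also have "\<dots> = add_mset x (add_mset z (mset R1) - {#m1#})" using B2 m by simp
      also have "\<dots> = add_mset z (mset R1')" unfolding r1(3) by (rule H1[symmetric]) (use m1R in simp)
      finally have e: "add_mset q (mset R2') = add_mset z (mset R1')" .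
      have o: "mset (O2 @ [m2]) = add_mset q (mset (O1 @ [m1]))" using B3 m by (simp add: add_mset_commute)
      have "InvM z R1' (O1 @ [m1]) R2' (O2 @ [m2])" by (rule InvM_B[OF r1(4) r2(4) B1 e o])
      then show ?thesis using r1(1) r2(1) by simp
    qed
  next
    case qx: False
    have F1: "\<not>(\<forall>y\<in>set R1. y \<le> x)" using qR1 qx by auto
    obtain R1' m1 where r1: "rstep R1 x = (R1', Some m1)" "is_min_gt R1 x m1" "mset R1' = add_mset x (mset R1 - {#m1#})" "sorted R1'"
      using rstep_gt[OF s1 F1] by blast
    have m1R: "m1 \<in> set R1" "x < m1" using r1(2) by (simp_all add: is_min_gt_def)
    have m1z: "m1 \<noteq> z" using m1R zx by simp
    show ?thesis
    proof (cases "\<forall>y\<in>set R2. y \<le> x")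
      case True
      have m1q: "m1 = q"
      proof (rule ccontr)
        assume "m1 \<noteq> q"
        hence "m1 \<in> set R2" using cnt[of m1] m1R m1z by simp
        thus False using True m1R by auto
      qed
      have e: "mset (R2 @ [x]) = add_mset z (mset R1')" using R2m r1(3) m1q by (simp add: add_mset_commute)
      have o: "mset (O2 @ []) = mset (O1 @ [m1])" using B3 m1q by simp
      have "InvM z R1' (O1 @ [m1]) (R2 @ [x]) (O2 @ [])"
        by (rule InvM_A[OF r1(4) _ e o]) (use s2 True in \<open>simp add: sorted_append\<close>)
      then show ?thesis using r1(1) rstep_le[OF True] by simp
    next
      case F2: False
      obtain R2' m2 where r2: "rstep R2 x = (R2', Some m2)" "is_min_gt R2 x m2" "mset R2' = add_mset x (mset R2 - {#m2#})" "sorted R2'"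
        using rstep_gt[OF s2 F2] by blast
      have m2R: "m2 \<in> set R2" "x < m2" using r2(2) by (simp_all add: is_min_gt_def)
      have m2z: "m2 \<noteq> z" using m2R zx by simp
      have "m2 \<in> set R1" using sub m2R m2z by simp
      hence m12: "m1 \<le> m2" using r1(2) m2R unfolding is_min_gt_def by blast
      show ?thesis
      proof (cases "m1 = m2")
        case m: True
        have "add_mset q (mset R2') = add_mset x (add_mset q (mset R2) - {#m2#})"
          unfolding r2(3) by (rule H1) (use m2R in simp)
        also have "\<dots> = add_mset x (add_mset z (mset R1) - {#m1#})" using B2 m by simp
        also have "\<dots> = add_mset z (mset R1')" unfolding r1(3) by (rule H1[symmetric]) (use m1R in simp)
        finally have e: "add_mset q (mset R2') = add_mset z (mset R1')" .
        have o: "mset (O2 @ [m2]) = add_mset q (mset (O1 @ [m1]))" using B3 m by (simp add: add_mset_commute)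
        have "InvM z R1' (O1 @ [m1]) R2' (O2 @ [m2])" by (rule InvM_B[OF r1(4) r2(4) B1 e o])
        then show ?thesis using r1(1) r2(1) by simp
      next
        case ne: False
        have "m1 \<notin> set R2"
        proof
          assume "m1 \<in> set R2"
          hence "m2 \<le> m1" using r2(2) m1R unfolding is_min_gt_def by blast
          thus False using m12 ne by simp
        qed
        hence m1q: "m1 = q" using cnt[of m1] m1R m1z by auto
        have "add_mset m2 (mset R2') = add_mset x (mset R2)"
          unfolding r2(3) by (rule H2) (use m2R in simp)
        also have "\<dots> = add_mset z (mset R1')" unfolding R2m r1(3) m1q by (rule add_mset_commute)
        finally have e: "add_mset m2 (mset R2') = add_mset z (mset R1')" .
        have zm2: "z < m2" using m2R zx by simp
        have o: "mset (O2 @ [m2]) = add_mset m2 (mset (O1 @ [m1]))" using B3 m1q by (simp add: add_mset_commute)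
        have "InvM z R1' (O1 @ [m1]) R2' (O2 @ [m2])" by (rule InvM_B[OF r1(4) r2(4) zm2 e o])
        then show ?thesis using r1(1) r2(1) by simp
      qed
    qed
  qed
qed

lemma stepM:
  assumes inv: "InvM z R1 O1 R2 O2" and zx: "z \<le> x"
  shows "InvM z (fst (rstep R1 x)) (O1 @ opt (snd (rstep R1 x))) (fst (rstep R2 x)) (O2 @ opt (snd (rstep R2 x)))"
proof -
  have s1: "sorted R1" and s2: "sorted R2" using inv by (auto simp: InvM_def)
  from inv consider (A) "mset R2 = add_mset z (mset R1)" "mset O2 = mset O1"
    | (B) q where "z < q" "add_mset q (mset R2) = add_mset z (mset R1)" "mset O2 = add_mset q (mset O1)"
    unfolding InvM_def by blast
  then show ?thesis
  proof cases
    case A then show ?thesis using stepA[OF s1 s2 _ _ zx] by blast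
  next
    case B then show ?thesis using stepB[OF s1 s2 _ _ _ zx] by blast
  qed
qed

lemma baseM:
  assumes "sorted R"
  shows "InvM z R [] (fst (rstep R z)) (opt (snd (rstep R z)))"
proof (cases "\<forall>y\<in>set R. y \<le> z")
  case True
  then show ?thesis using assms rstep_le[OF True] by (simp add: InvM_def sorted_append)
next
  case False
  obtain R' m where r: "rstep R z = (R', Some m)" "is_min_gt R z m" "mset R' = add_mset z (mset R - {#m#})" "sorted R'"
    using rstep_gt[OF assms False] by blast
  have mR: "m \<in># mset R" using r(2) by (simp add: is_min_gt_def)
  have "add_mset m (mset R') = add_mset z (mset R)" unfolding r(3) by (rule H2[OF mR])
  then show ?thesis using r assms unfolding InvM_def is_min_gt_def by auto
qed

lemma M_run:
  assumes "sorted R" "\<forall>s\<in>set S. z \<le> s"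
  shows "InvM z (fst (rp R S)) (snd (rp R S)) (fst (rp R (z # S))) (snd (rp R (z # S)))"
  using assms(2)
proof (induction S rule: rev_induct)
  case Nil
  show ?case using baseM[OF assms(1), of z] by (auto split: prod.splits)
next
  case (snoc x S)
  have IH: "InvM z (fst (rp R S)) (snd (rp R S)) (fst (rp R (z # S))) (snd (rp R (z # S)))"
    using snoc by simp
  have zx: "z \<le> x" using snoc.prems by simp
  have "InvM z (fst (rstep (fst (rp R S)) x)) (snd (rp R S) @ opt (snd (rstep (fst (rp R S)) x)))
     (fst (rstep (fst (rp R (z # S))) x)) (snd (rp R (z # S)) @ opt (snd (rstep (fst (rp R (z # S))) x)))"
    using stepM[OF IH zx] .
  moreover have "rp R (S @ [x]) = (fst (rstep (fst (rp R S)) x), snd (rp R S) @ opt (snd (rstep (fst (rp R S)) x)))"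
    by (simp add: rp_snoc split: prod.splits)
  moreover have "rp R (z # S @ [x]) = (fst (rstep (fst (rp R (z # S))) x), snd (rp R (z # S)) @ opt (snd (rstep (fst (rp R (z # S))) x)))"
    using rp_snoc[of R "z # S" x] by (simp split: prod.splits)
  ultimately show ?case by simp
qed

lemma M_final:
  assumes "sorted R" "\<forall>s\<in>set S. z \<le> s"
  shows "(mset (snd (rp R (P @ z # S))) = mset (snd (rp R (P @ S))) \<and>
            length (fst (rp R (P @ z # S))) = Suc (length (fst (rp R (P @ S))))) \<or>
         (\<exists>q. mset (snd (rp R (P @ z # S))) = add_mset q (mset (snd (rp R (P @ S)))) \<and>
            length (fst (rp R (P @ z # S))) = length (fst (rp R (P @ S))))"
proof -
  obtain R1 O1 where p: "rp R P = (R1, O1)" by fastforce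
  have sR1: "sorted R1" using rp_sorted[OF assms(1), of P] p by simp
  have inv: "InvM z (fst (rp R1 S)) (snd (rp R1 S)) (fst (rp R1 (z # S))) (snd (rp R1 (z # S)))"
    using M_run[OF sR1 assms(2)] .
  have e1: "rp R (P @ S) = (fst (rp R1 S), O1 @ snd (rp R1 S))" using p by (simp add: rp_append split: prod.splits)
  have e2: "rp R (P @ z # S) = (fst (rp R1 (z # S)), O1 @ snd (rp R1 (z # S)))" using p by (simp add: rp_append split: prod.splits)
  show ?thesis using inv unfolding e1 e2 InvM_def
    by (auto dest: arg_cong[where f=size])
qed

lemma insort_split: "\<exists>P S. xs = P @ S \<and> insort q xs = P @ q # S \<and> (sorted xs \<longrightarrow> (\<forall>s\<in>set S. q \<le> s))"
proof (induction xs)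
  case Nil then show ?case by auto
next
  case (Cons a xs)
  show ?case
  proof (cases "q \<le> a")
    case True
    then show ?thesis by (rule_tac x="[]" in exI, rule_tac x="a # xs" in exI) auto
  next
    case False
    then obtain P S where "xs = P @ S" "insort q xs = P @ q # S" "sorted xs \<longrightarrow> (\<forall>s\<in>set S. q \<le> s)"
      using Cons by blast
    then show ?thesis using False by (rule_tac x="a # P" in exI, rule_tac x=S in exI) auto
  qed
qed

lemma sorted_add_split:
  assumes "sorted O1" "sorted O2" "mset O2 = add_mset q (mset O1)"
  shows "\<exists>P S. O1 = P @ S \<and> O2 = P @ q # S \<and> (\<forall>s\<in>set S. q \<le> s)"
proof -
  have "sort (q # O1) = O2" by (rule properties_for_sort) (use assms(2,3) in simp_all)
  hence "O2 = insort q O1" using assms(1) by (simp add: sorted_sort_id)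
  then show ?thesis using insort_split[of O1 q] assms(1) by auto
qed

lemma sorted_mset_eq: "sorted A \<Longrightarrow> sorted B \<Longrightarrow> mset A = mset B \<Longrightarrow> A = B"
  by (metis properties_for_sort)


abbreviation Bv :: "tab \<Rightarrow> nat \<Rightarrow> nat" where "Bv S j \<equiv> fst (rowof S j)"
abbreviation Rv :: "tab \<Rightarrow> nat \<Rightarrow> nat list" where "Rv S j \<equiv> snd (rowof S j)"

primrec cv :: "tab \<Rightarrow> nat \<Rightarrow> nat \<Rightarrow> nat \<Rightarrow> nat option" where
  "cv S x j 0 = None"
| "cv S x j (Suc i) = (if Suc i < j then None else if Suc i = j then Some x else
     (case cv S x j i of None \<Rightarrow> None | Some v \<Rightarrow> snd (rstep (Rv S i) v)))"

lemma cv_lt: "i < j \<Longrightarrow> cv S x j i = None"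
  by (cases i) auto

lemma cv_eq: "1 \<le> j \<Longrightarrow> cv S x j j = Some x"
  by (cases j) auto

lemma cv_step: "1 \<le> j \<Longrightarrow> j \<le> i \<Longrightarrow> cv S x j (Suc i) = (case cv S x j i of None \<Rightarrow> None | Some v \<Rightarrow> snd (rstep (Rv S i) v))"
  by simp

lemma cv_shift:
  assumes "snd (rstep (Rv S j) x) = Some y" "\<forall>i>j. rowof S' i = rowof S i" "1 \<le> j" "Suc j \<le> i"
  shows "cv S' y (Suc j) i = cv S x j i"
  using assms(4)
proof (induction i)
  case 0 then show ?case by simp
next
  case (Suc i)
  show ?case
  proof (cases "Suc i = Suc j")
    case True
    then show ?thesis using assms(1,3) cv_eq[of j S x] by simp
  next
    case False
    hence ij: "Suc j \<le> i" using Suc.prems by simp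
    have "cv S' y (Suc j) (Suc i) = (case cv S' y (Suc j) i of None \<Rightarrow> None | Some v \<Rightarrow> snd (rstep (Rv S' i) v))"
      using ij by simp
    also have "\<dots> = (case cv S x j i of None \<Rightarrow> None | Some v \<Rightarrow> snd (rstep (Rv S i) v))"
    proof -
      have r: "rowof S' i = rowof S i" using assms(2) ij by simp
      show ?thesis unfolding Suc.IH[OF ij] r by (rule refl)
    qed
    also have "\<dots> = cv S x j (Suc i)" using ij assms(3) by simp
    finally show ?thesis .
  qed
qed

lemma cv_after_none:
  assumes "snd (rstep (Rv S j) x) = None" "1 \<le> j" "j < i"
  shows "cv S x j i = None"
  using assms(3)
proof (induction i)
  case 0 then show ?case by simp
next
  case (Suc i)
  show ?case
  proof (cases "i = j")
    case True then show ?thesis using assms(1,2) cv_eq[of j S x] by simp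
  next
    case False
    hence "j < i" using Suc.prems by simp
    then show ?thesis using Suc.IH by simp
  qed
qed

lemma ins_cv:
  "1 \<le> j \<Longrightarrow> 1 \<le> i \<Longrightarrow> rowof (ins x j S) i =
     (case cv S x j i of None \<Rightarrow> rowof S i | Some v \<Rightarrow> (Bv S i, fst (rstep (Rv S i) v)))"
proof (induction x j S arbitrary: i rule: ins.induct)
  case (1 x j T)
  obtain b r where br: "rowof T j = (b, r)" by fastforce
  have j0: "j \<noteq> 0" using "1.prems" by simp
  show ?case
  proof (cases "\<forall>y\<in>set r. y \<le> x")
    case True
    have e: "ins x j T = setrow j (b, r @ [x]) T" using j0 br True by (subst ins.simps) simp
    have rs: "rstep r x = (r @ [x], None)" using rstep_le[OF True] .
    show ?thesis
    proof (cases "i = j")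
      case True
      then show ?thesis using e br rs cv_eq[of j T x] "1.prems" by (simp add: rowof_setrow)
    next
      case False
      have "cv T x j i = None"
      proof (cases "i < j")
        case True then show ?thesis by (rule cv_lt)
      next
        case False
        hence "j < i" using \<open>i \<noteq> j\<close> by simp
        then show ?thesis using cv_after_none[of T j x i] br rs "1.prems" by simp
      qed
      then show ?thesis using e False "1.prems" by (simp add: rowof_setrow)
    qed
  next
    case nT: False
    let ?k = "Min {k. k < length r \<and> x < r ! k}"
    define S' where "S' = setrow j (b, r[?k := x]) T"
    have e: "ins x j T = ins (r ! ?k) (Suc j) S'"
      using j0 br nT unfolding S'_def by (subst ins.simps) (auto simp: Let_def)
    have rs: "rstep r x = (r[?k := x], Some (r ! ?k))" using nT by (simp add: rstep_def Let_def)
    have IH: "\<And>i. 1 \<le> i \<Longrightarrow> rowof (ins (r ! ?k) (Suc j) S') i =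
       (case cv S' (r ! ?k) (Suc j) i of None \<Rightarrow> rowof S' i | Some v \<Rightarrow> (Bv S' i, fst (rstep (Rv S' i) v)))"
      using "1.IH"[OF j0 br[symmetric] nT refl] unfolding S'_def by simp
    have rows: "\<forall>i>j. rowof S' i = rowof T i" using "1.prems" unfolding S'_def by (simp add: rowof_setrow)
    show ?thesis
    proof (cases "i \<le> j")
      case True
      have "cv S' (r ! ?k) (Suc j) i = None" using True by (simp add: cv_lt)
      moreover have "rowof S' i = (case cv T x j i of None \<Rightarrow> rowof T i | Some v \<Rightarrow> (Bv T i, fst (rstep (Rv T i) v)))"
      proof (cases "i = j")
        case True
        then show ?thesis using br rs cv_eq[of j T x] "1.prems" unfolding S'_def by (simp add: rowof_setrow)
      next
        case False
        then show ?thesis using \<open>i \<le> j\<close> cv_lt[of i j T x] "1.prems" unfolding S'_def by (simp add: rowof_setrow)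
      qed
      ultimately show ?thesis using e IH[OF "1.prems"(2)] by simp
    next
      case False
      have cvs: "cv S' (r ! ?k) (Suc j) i = cv T x j i"
        by (rule cv_shift) (use rs br rows False "1.prems" in auto)
      show ?thesis using e IH[OF "1.prems"(2)] cvs rows False by (auto split: option.splits)
    qed
  qed
qed

lemma ins_B: "1 \<le> j \<Longrightarrow> Bv (ins x j S) i = Bv S i"
  by (cases "i = 0") (auto simp: ins_cv rowof_def[of _ 0] split: option.splits)

lemma rstep_len_ge: "length r \<le> length (fst (rstep r x))"
  by (simp add: rstep_def Let_def)

lemma ins_len_ge: "1 \<le> j \<Longrightarrow> length (Rv S i) \<le> length (Rv (ins x j S) i)"
  by (cases "i = 0") (auto simp: ins_cv rowof_def[of _ 0] rstep_len_ge split: option.splits)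

definition insl :: "nat list \<Rightarrow> nat \<Rightarrow> tab \<Rightarrow> tab" where
  "insl w j S = foldl (\<lambda>U x. ins x j U) S w"

primrec inp :: "tab \<Rightarrow> nat \<Rightarrow> nat list \<Rightarrow> nat \<Rightarrow> nat list" where
  "inp S j w 0 = []"
| "inp S j w (Suc i) = (if Suc i < j then [] else if Suc i = j then w else snd (rp (Rv S i) (inp S j w i)))"

lemma inp_Nil: "inp S j [] i = []"
  by (induction i) auto

lemma insl_sys:
  "1 \<le> j \<Longrightarrow> 1 \<le> i \<Longrightarrow> rowof (insl w j S) i = (Bv S i, fst (rp (Rv S i) (inp S j w i)))"
proof (induction w arbitrary: i rule: rev_induct)
  case Nil
  then show ?case by (simp add: insl_def inp_Nil)
next
  case (snoc x w)
  define Sw where "Sw = insl w j S"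
  have e: "insl (w @ [x]) j S = ins x j Sw" unfolding insl_def Sw_def by simp
  have IH: "\<And>i. 1 \<le> i \<Longrightarrow> rowof Sw i = (Bv S i, fst (rp (Rv S i) (inp S j w i)))"
    using snoc.IH snoc.prems(1) unfolding Sw_def by simp
  have key: "\<And>i. inp S j (w @ [x]) i = inp S j w i @ opt (cv Sw x j i)"
  proof -
    fix i show "inp S j (w @ [x]) i = inp S j w i @ opt (cv Sw x j i)"
    proof (induction i)
      case 0 then show ?case by simp
    next
      case (Suc i)
      show ?case
      proof (cases "Suc i \<le> j")
        case True then show ?thesis by auto
      next
        case False
        hence ij: "j \<le> i" "1 \<le> i" using snoc.prems(1) by auto
        have "inp S j (w @ [x]) (Suc i) = snd (rp (Rv S i) (inp S j w i @ opt (cv Sw x j i)))"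
          using Suc.IH False by simp
        also have "\<dots> = inp S j w (Suc i) @ opt (cv Sw x j (Suc i))"
          using False IH[OF ij(2)] ij snoc.prems(1)
          by (auto simp: rp_append split: option.splits prod.splits)
        finally show ?thesis .
      qed
    qed
  qed
  show ?case
    using ins_cv[OF snoc.prems(1,2), of x Sw] IH[OF snoc.prems(2)] key[of i] e
    by (auto simp: rp_append split: option.splits prod.splits)
qed


abbreviation Ol :: "tab \<Rightarrow> nat \<Rightarrow> nat" where "Ol S j \<equiv> Bv S j + length (Rv S j)"

definition colstr :: "nat \<Rightarrow> nat list \<Rightarrow> nat \<Rightarrow> nat list \<Rightarrow> bool" where
  "colstr a A b C \<longleftrightarrow> (\<forall>c. a < c \<longrightarrow> c \<le> a + length A \<longrightarrow> b < c \<longrightarrow> c \<le> b + length C \<longrightarrow>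
      A ! (c - a - 1) < C ! (c - b - 1))"

definition goodT :: "tab \<Rightarrow> bool" where
  "goodT S \<longleftrightarrow> (\<forall>j\<ge>1. sorted (Rv S j) \<and> (\<forall>y\<in>set (Rv S j). 0 < y) \<and> Bv S (Suc j) \<le> Bv S j \<and>
      Ol S (Suc j) \<le> Ol S j \<and> colstr (Bv S j) (Rv S j) (Bv S (Suc j)) (Rv S (Suc j)))"

lemma goodTD:
  assumes "goodT S" "1 \<le> j"
  shows "sorted (Rv S j)" "\<forall>y\<in>set (Rv S j). 0 < y" "Bv S (Suc j) \<le> Bv S j" "Ol S (Suc j) \<le> Ol S j"
    "colstr (Bv S j) (Rv S j) (Bv S (Suc j)) (Rv S (Suc j))"
  using assms unfolding goodT_def by auto

lemma goodT_setrow_intro: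
  assumes g: "goodT S" and j: "1 \<le> j"
    and s: "sorted r'" and p: "\<forall>y\<in>set r'. 0 < y"
    and b1: "Bv S (Suc j) \<le> b'" and b2: "2 \<le> j \<Longrightarrow> b' \<le> Bv S (j - 1)"
    and o1: "Ol S (Suc j) \<le> b' + length r'" and o2: "2 \<le> j \<Longrightarrow> b' + length r' \<le> Ol S (j - 1)"
    and c1: "colstr b' r' (Bv S (Suc j)) (Rv S (Suc j))"
    and c2: "2 \<le> j \<Longrightarrow> colstr (Bv S (j - 1)) (Rv S (j - 1)) b' r'"
  shows "goodT (setrow j (b', r') S)"
  unfolding goodT_def
proof (intro allI impI)
  fix i :: nat assume i: "1 \<le> i"
  let ?S = "setrow j (b', r') S"
  have rw: "\<And>t. rowof ?S t = (if t = j then (b', r') else rowof S t)" using j by (simp add: rowof_setrow)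
  consider "i = j" | "Suc i = j" | "i \<noteq> j" "Suc i \<noteq> j" by blast
  then show "sorted (Rv ?S i) \<and> (\<forall>y\<in>set (Rv ?S i). 0 < y) \<and> Bv ?S (Suc i) \<le> Bv ?S i \<and>
      Ol ?S (Suc i) \<le> Ol ?S i \<and> colstr (Bv ?S i) (Rv ?S i) (Bv ?S (Suc i)) (Rv ?S (Suc i))"
  proof cases
    case 1
    then show ?thesis using rw s p b1 o1 c1 by simp
  next
    case 2
    hence "2 \<le> j" "i = j - 1" using i by auto
    then show ?thesis using rw b2 o2 c2 goodTD[OF g i] 2 by auto
  next
    case 3
    then show ?thesis using rw goodTD[OF g i] by simp
  qed
qed

definition Qc :: "tab \<Rightarrow> nat \<Rightarrow> nat \<Rightarrow> nat \<Rightarrow> bool" where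
  "Qc S x j c \<longleftrightarrow> (2 \<le> j \<longrightarrow> (Bv S (j - 1) < c \<and> c \<le> Ol S (j - 1) \<and>
     (\<forall>c'. Bv S (j - 1) < c' \<longrightarrow> c' \<le> c \<longrightarrow> Rv S (j - 1) ! (c' - Bv S (j - 1) - 1) < x) \<and>
     (Bv S j < c \<longrightarrow> c \<le> Ol S j \<longrightarrow> x < Rv S j ! (c - Bv S j - 1))))"

lemma ins_good:
  "goodT S \<Longrightarrow> 1 \<le> j \<Longrightarrow> 0 < x \<Longrightarrow> Qc S x j c \<Longrightarrow> goodT (ins x j S)"
proof (induction x j S arbitrary: c rule: ins.induct)
  case (1 x j T)
  note g = "1.prems"(1) and j = "1.prems"(2) and x0 = "1.prems"(3) and Q = "1.prems"(4)
  obtain b r where br: "rowof T j = (b, r)" by fastforce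
  have j0: "j \<noteq> 0" using j by simp
  have sr: "sorted r" and pr: "\<forall>y\<in>set r. 0 < y" and cs1: "colstr b r (Bv T (Suc j)) (Rv T (Suc j))"
    and bb1: "Bv T (Suc j) \<le> b" and oo1: "Ol T (Suc j) \<le> b + length r"
    using goodTD[OF g j] br by auto
  have bb2: "2 \<le> j \<Longrightarrow> b \<le> Bv T (j - 1)" and oo2: "2 \<le> j \<Longrightarrow> b + length r \<le> Ol T (j - 1)"
    and cs2: "2 \<le> j \<Longrightarrow> colstr (Bv T (j - 1)) (Rv T (j - 1)) b r"
    using goodTD[OF g, of "j - 1"] br by (auto simp: Suc_diff_1)
  have Qj: "2 \<le> j \<Longrightarrow> Bv T (j - 1) < c \<and> c \<le> Ol T (j - 1) \<and>
     (\<forall>c'. Bv T (j - 1) < c' \<longrightarrow> c' \<le> c \<longrightarrow> Rv T (j - 1) ! (c' - Bv T (j - 1) - 1) < x) \<and>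
     (b < c \<longrightarrow> c \<le> b + length r \<longrightarrow> x < r ! (c - b - 1))"
    using Q br unfolding Qc_def by auto
  show ?case
  proof (cases "\<forall>y\<in>set r. y \<le> x")
    case True
    have e: "ins x j T = setrow j (b, r @ [x]) T" using j0 br True by (subst ins.simps) simp
    have cbig: "2 \<le> j \<Longrightarrow> b + length r < c"
    proof (rule ccontr)
      assume j2: "2 \<le> j" and "\<not> b + length r < c"
      hence cle: "c \<le> b + length r" by simp
      have bc: "b < c" using Qj[OF j2] bb2[OF j2] by linarith
      have "x < r ! (c - b - 1)" using Qj[OF j2] bc cle by blast
      moreover have "c - b - 1 < length r" using bc cle by linarith
      ultimately show False using True by (meson leD nth_mem)
    qed
    have "goodT (setrow j (b, r @ [x]) T)"
    proof (rule goodT_setrow_intro[OF g j])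
      show "sorted (r @ [x])" using sr True by (simp add: sorted_append)
      show "\<forall>y\<in>set (r @ [x]). 0 < y" using pr x0 by simp
      show "Bv T (Suc j) \<le> b" by fact
      show "2 \<le> j \<Longrightarrow> b \<le> Bv T (j - 1)" by fact
      show "Ol T (Suc j) \<le> b + length (r @ [x])" using oo1 by simp
      show "2 \<le> j \<Longrightarrow> b + length (r @ [x]) \<le> Ol T (j - 1)" using cbig Qj by fastforce
      show "colstr b (r @ [x]) (Bv T (Suc j)) (Rv T (Suc j))"
        unfolding colstr_def
      proof (intro allI impI)
        fix c' assume a: "b < c'" "c' \<le> b + length (r @ [x])" "Bv T (Suc j) < c'" "c' \<le> Bv T (Suc j) + length (Rv T (Suc j))"
        hence "c' \<le> b + length r" using oo1 by linarith
        hence "c' - b - 1 < length r" using a by linarith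
        thus "(r @ [x]) ! (c' - b - 1) < Rv T (Suc j) ! (c' - Bv T (Suc j) - 1)"
          using cs1 a \<open>c' \<le> b + length r\<close> unfolding colstr_def by (simp add: nth_append)
      qed
      show "2 \<le> j \<Longrightarrow> colstr (Bv T (j - 1)) (Rv T (j - 1)) b (r @ [x])"
        unfolding colstr_def
      proof (intro allI impI)
        fix c' assume j2: "2 \<le> j" and a: "Bv T (j - 1) < c'" "c' \<le> Bv T (j - 1) + length (Rv T (j - 1))" "b < c'" "c' \<le> b + length (r @ [x])"
        show "Rv T (j - 1) ! (c' - Bv T (j - 1) - 1) < (r @ [x]) ! (c' - b - 1)"
        proof (cases "c' \<le> b + length r")
          case True
          hence "c' - b - 1 < length r" using a by linarith
          then show ?thesis using cs2[OF j2] a True unfolding colstr_def by (simp add: nth_append)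
        next
          case False
          hence "c' - b - 1 = length r" using a by simp
          moreover have "c' \<le> c" using False a cbig[OF j2] by simp
          ultimately show ?thesis using Qj[OF j2] a by (simp add: nth_append)
        qed
      qed
    qed
    then show ?thesis using e by simp
  next
    case nT: False
    let ?k = "Min {k. k < length r \<and> x < r ! k}"
    note fk = first_gt[OF nT]
    define S' where "S' = setrow j (b, r[?k := x]) T"
    have e: "ins x j T = ins (r ! ?k) (Suc j) S'"
      using j0 br nT unfolding S'_def by (subst ins.simps) (auto simp: Let_def)
    have kmin: "\<And>i. i < length r \<Longrightarrow> x < r ! i \<Longrightarrow> ?k \<le> i" by (simp add: Min_le)
    have ck: "2 \<le> j \<Longrightarrow> b + ?k + 1 \<le> c"
    proof -
      assume j2: "2 \<le> j"
      show "b + ?k + 1 \<le> c"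
      proof (cases "c \<le> b + length r")
        case True
        have bc: "b < c" using Qj[OF j2] bb2[OF j2] by linarith
        have "x < r ! (c - b - 1)" using Qj[OF j2] bc True by blast
        moreover have "c - b - 1 < length r" using bc True by linarith
        ultimately have "?k \<le> c - b - 1" using kmin by blast
        then show ?thesis using bc by linarith
      next
        case False then show ?thesis using fk(1) by linarith
      qed
    qed
    have gS': "goodT S'"
      unfolding S'_def
    proof (rule goodT_setrow_intro[OF g j])
      show "sorted (r[?k := x])" using sorted_upd_first[OF sr fk] .
      show "\<forall>y\<in>set (r[?k := x]). 0 < y" using pr x0 set_update_subset_insert[of r ?k x] by blast
      show "Bv T (Suc j) \<le> b" by fact
      show "2 \<le> j \<Longrightarrow> b \<le> Bv T (j - 1)" by fact
      show "Ol T (Suc j) \<le> b + length (r[?k := x])" using oo1 by simp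
      show "2 \<le> j \<Longrightarrow> b + length (r[?k := x]) \<le> Ol T (j - 1)" using oo2 by simp
      show "colstr b (r[?k := x]) (Bv T (Suc j)) (Rv T (Suc j))"
        unfolding colstr_def
      proof (intro allI impI)
        fix c' assume a: "b < c'" "c' \<le> b + length (r[?k := x])" "Bv T (Suc j) < c'" "c' \<le> Bv T (Suc j) + length (Rv T (Suc j))"
        have old: "r ! (c' - b - 1) < Rv T (Suc j) ! (c' - Bv T (Suc j) - 1)"
          using cs1 a unfolding colstr_def by simp
        show "r[?k := x] ! (c' - b - 1) < Rv T (Suc j) ! (c' - Bv T (Suc j) - 1)"
        proof (cases "c' - b - 1 = ?k")
          case True then show ?thesis using old fk(1,2) by simp
        next
          case False then show ?thesis using old by simp
        qed
      qed
      show "2 \<le> j \<Longrightarrow> colstr (Bv T (j - 1)) (Rv T (j - 1)) b (r[?k := x])"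
        unfolding colstr_def
      proof (intro allI impI)
        fix c' assume j2: "2 \<le> j" and a: "Bv T (j - 1) < c'" "c' \<le> Bv T (j - 1) + length (Rv T (j - 1))" "b < c'" "c' \<le> b + length (r[?k := x])"
        show "Rv T (j - 1) ! (c' - Bv T (j - 1) - 1) < r[?k := x] ! (c' - b - 1)"
        proof (cases "c' - b - 1 = ?k")
          case True
          hence "c' \<le> c" using ck[OF j2] a by linarith
          then show ?thesis using Qj[OF j2] a True fk(1) by simp
        next
          case False
          then show ?thesis using cs2[OF j2] a unfolding colstr_def by simp
        qed
      qed
    qed
    have rS': "rowof S' j = (b, r[?k := x])" "rowof S' (Suc j) = rowof T (Suc j)"
      unfolding S'_def using j by (simp_all add: rowof_setrow)
    have y0: "0 < r ! ?k" using pr fk(1) by simp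
    have QS': "Qc S' (r ! ?k) (Suc j) (b + ?k + 1)"
      unfolding Qc_def
    proof (intro impI conjI allI)
      show "Bv S' (Suc j - 1) < b + ?k + 1" using rS' by simp
      show "b + ?k + 1 \<le> Ol S' (Suc j - 1)" using rS' fk(1) by simp
      fix c' assume a: "Bv S' (Suc j - 1) < c'" "c' \<le> b + ?k + 1"
      show "Rv S' (Suc j - 1) ! (c' - Bv S' (Suc j - 1) - 1) < r ! ?k"
      proof (cases "c' - b - 1 = ?k")
        case True then show ?thesis using rS' fk by simp
      next
        case False
        hence "c' - b - 1 < ?k" using a rS' by simp
        hence "r ! (c' - b - 1) \<le> x" using fk(3) by simp
        then show ?thesis using rS' fk False by simp
      qed
    next
      assume a: "Bv S' (Suc j) < b + ?k + 1" "b + ?k + 1 \<le> Ol S' (Suc j)"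
      have i1: "b < b + ?k + 1" "b + ?k + 1 \<le> b + length r" using fk(1) by simp_all
      have "r ! (b + ?k + 1 - b - 1) < Rv T (Suc j) ! (b + ?k + 1 - Bv T (Suc j) - 1)"
        using spec[OF cs1[unfolded colstr_def], of "b + ?k + 1"] i1 a rS' by simp
      then show "r ! ?k < Rv S' (Suc j) ! (b + ?k + 1 - Bv S' (Suc j) - 1)" using rS' by simp
    qed
    have "goodT (ins (r ! ?k) (Suc j) S')"
      by (rule "1.IH"[OF j0 br[symmetric] nT refl, of "b + ?k + 1", folded S'_def]) (use gS' y0 QS' in auto)
    then show ?thesis using e by simp
  qed
qed

lemma ext_ins_good: "goodT S \<Longrightarrow> 0 < x \<Longrightarrow> goodT (ins x 1 S)"
  by (rule ins_good[of S 1 x 0]) (auto simp: Qc_def)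


lemma last_lt:
  assumes "\<not> (\<forall>y\<in>set (R::nat list). x \<le> y)"
  shows "Max {k. k < length R \<and> R ! k < x} < length R"
    "R ! Max {k. k < length R \<and> R ! k < x} < x"
    "\<forall>i. Max {k. k < length R \<and> R ! k < x} < i \<longrightarrow> i < length R \<longrightarrow> x \<le> R ! i"
proof -
  let ?A = "{k. k < length R \<and> R ! k < x}"
  have fin: "finite ?A" by simp
  obtain y where "y \<in> set R" "\<not> x \<le> y" using assms by blast
  then obtain i0 where "i0 < length R" "R ! i0 < x" by (auto simp: in_set_conv_nth)
  hence ne: "?A \<noteq> {}" by auto
  have "Max ?A \<in> ?A" using Max_in[OF fin ne] .
  then show "Max ?A < length R" "R ! Max ?A < x" by auto
  show "\<forall>i. Max ?A < i \<longrightarrow> i < length R \<longrightarrow> x \<le> R ! i"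
  proof (intro allI impI)
    fix i assume i: "Max ?A < i" "i < length R"
    show "x \<le> R ! i"
    proof (rule ccontr)
      assume "\<not> x \<le> R ! i"
      hence "i \<in> ?A" using i by auto
      hence "i \<le> Max ?A" using fin by simp
      thus False using i by simp
    qed
  qed
qed

lemma sorted_upd_last:
  assumes "sorted R" "K < length R" "R ! K < (x::nat)" "\<forall>i. K < i \<longrightarrow> i < length R \<longrightarrow> x \<le> R ! i"
  shows "sorted (R[K := x])"
  unfolding sorted_iff_nth_mono
proof (intro allI impI)
  fix i j assume ij: "i \<le> j" "j < length (R[K := x])"
  have s: "\<And>a b. a \<le> b \<Longrightarrow> b < length R \<Longrightarrow> R ! a \<le> R ! b"
    using assms(1) by (simp add: sorted_iff_nth_mono)
  show "R[K := x] ! i \<le> R[K := x] ! j"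
  proof (cases "i = K")
    case True
    then show ?thesis using ij assms(3,4) by (cases "j = K") (auto simp: nth_list_update)
  next
    case iK: False
    show ?thesis
    proof (cases "j = K")
      case True
      hence "i < K" using ij iK by simp
      then show ?thesis using True ij s[of i K] assms(2,3) iK by (simp add: nth_list_update)
    next
      case False
      then show ?thesis using ij iK s[of i j] by (simp add: nth_list_update)
    qed
  qed
qed

definition Qr :: "tab \<Rightarrow> nat \<Rightarrow> nat \<Rightarrow> nat \<Rightarrow> bool" where
  "Qr S x r c \<longleftrightarrow> (1 \<le> r \<longrightarrow> (c \<le> Ol S r \<and> Bv S (Suc r) < c \<and>
     (\<forall>c'. c \<le> c' \<longrightarrow> Bv S (Suc r) < c' \<longrightarrow> c' \<le> Ol S (Suc r) \<longrightarrow> x < Rv S (Suc r) ! (c' - Bv S (Suc r) - 1)) \<and>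
     (Bv S r < c \<longrightarrow> c \<le> Ol S r \<longrightarrow> Rv S r ! (c - Bv S r - 1) < x)))"

lemma revins_le: "fst (snd (revins x r S)) \<le> r"
proof (induction x r S rule: revins.induct)
  case (1 x T) then show ?case by simp
next
  case (2 x r T)
  obtain b R where br: "rowof T (Suc r) = (b, R)" by fastforce
  show ?case
  proof (cases "\<forall>y\<in>set R. x \<le> y")
    case True then show ?thesis using br by simp
  next
    case False
    then show ?thesis using br "2.IH"[OF br[symmetric] False refl] by (simp add: Let_def)
  qed
qed

lemma revins_good:
  "goodT S \<Longrightarrow> 0 < x \<Longrightarrow> Qr S x r c \<Longrightarrow> goodT (fst (revins x r S)) \<and>
     (1 \<le> fst (snd (revins x r S)) \<longrightarrow> 1 \<le> Bv S (fst (snd (revins x r S))))"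
proof (induction x r S arbitrary: c rule: revins.induct)
  case (1 x T)
  then show ?case by simp
next
  case (2 x r T)
  note g = "2.prems"(1) and x0 = "2.prems"(2) and Q = "2.prems"(3)
  let ?p = "Suc r"
  obtain b R where br: "rowof T ?p = (b, R)" by fastforce
  have p1: "1 \<le> ?p" by simp
  have sr: "sorted R" and pr: "\<forall>y\<in>set R. 0 < y" and cs1: "colstr b R (Bv T (Suc ?p)) (Rv T (Suc ?p))"
    and bb1: "Bv T (Suc ?p) \<le> b" and oo1: "Ol T (Suc ?p) \<le> b + length R"
    using goodTD[OF g p1] br by auto
  have bb2: "2 \<le> ?p \<Longrightarrow> b \<le> Bv T r" and oo2: "2 \<le> ?p \<Longrightarrow> b + length R \<le> Ol T r"
    and cs2: "2 \<le> ?p \<Longrightarrow> colstr (Bv T r) (Rv T r) b R"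
    using goodTD[OF g, of r] br by auto
  have Qj: "c \<le> b + length R" "Bv T (Suc ?p) < c"
     "\<And>c'. c \<le> c' \<Longrightarrow> Bv T (Suc ?p) < c' \<Longrightarrow> c' \<le> Ol T (Suc ?p) \<Longrightarrow> x < Rv T (Suc ?p) ! (c' - Bv T (Suc ?p) - 1)"
     "b < c \<Longrightarrow> c \<le> b + length R \<Longrightarrow> R ! (c - b - 1) < x"
    using Q br unfolding Qr_def by auto
  show ?case
  proof (cases "\<forall>y\<in>set R. x \<le> y")
    case True
    have e: "revins x ?p T = (setrow ?p (b - 1, x # R) T, ?p, x)" using br True by simp
    have cb: "c \<le> b"
    proof (rule ccontr)
      assume "\<not> c \<le> b"
      hence "b < c" by simp
      hence "R ! (c - b - 1) < x" using Qj(1,4) by blast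
      moreover have "c - b - 1 < length R" using \<open>b < c\<close> Qj(1) by linarith
      ultimately show False using True by (meson leD nth_mem)
    qed
    have b1: "1 \<le> b" using cb Qj(2) by linarith
    have "goodT (setrow ?p (b - 1, x # R) T)"
    proof (rule goodT_setrow_intro[OF g p1])
      show "sorted (x # R)" using sr True by simp
      show "\<forall>y\<in>set (x # R). 0 < y" using pr x0 by simp
      show "Bv T (Suc ?p) \<le> b - 1" using cb Qj(2) by linarith
      show "2 \<le> ?p \<Longrightarrow> b - 1 \<le> Bv T (?p - 1)" using bb2 by simp
      show "Ol T (Suc ?p) \<le> b - 1 + length (x # R)" using oo1 b1 by simp
      show "2 \<le> ?p \<Longrightarrow> b - 1 + length (x # R) \<le> Ol T (?p - 1)" using oo2 b1 by simp
      show "colstr (b - 1) (x # R) (Bv T (Suc ?p)) (Rv T (Suc ?p))"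
        unfolding colstr_def
      proof (intro allI impI)
        fix c' assume a: "b - 1 < c'" "c' \<le> b - 1 + length (x # R)" "Bv T (Suc ?p) < c'" "c' \<le> Bv T (Suc ?p) + length (Rv T (Suc ?p))"
        show "(x # R) ! (c' - (b - 1) - 1) < Rv T (Suc ?p) ! (c' - Bv T (Suc ?p) - 1)"
        proof (cases "c' = b")
          case True
          then show ?thesis using Qj(3)[of c'] cb a b1 by simp
        next
          case False
          hence cb': "b < c'" using a by simp
          hence idx: "c' - (b - 1) - 1 = Suc (c' - b - 1)" using b1 by linarith
          have "R ! (c' - b - 1) < Rv T (Suc ?p) ! (c' - Bv T (Suc ?p) - 1)"
            using spec[OF cs1[unfolded colstr_def], of c'] cb' a b1 by simp
          then show ?thesis using idx by simp
        qed
      qed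
      show "2 \<le> ?p \<Longrightarrow> colstr (Bv T (?p - 1)) (Rv T (?p - 1)) (b - 1) (x # R)"
        unfolding colstr_def
      proof (intro allI impI)
        fix c' assume j2: "2 \<le> ?p" and a: "Bv T (?p - 1) < c'" "c' \<le> Bv T (?p - 1) + length (Rv T (?p - 1))" "b - 1 < c'" "c' \<le> b - 1 + length (x # R)"
        have cb': "b < c'" using a bb2[OF j2] by simp
        hence idx: "c' - (b - 1) - 1 = Suc (c' - b - 1)" using b1 by linarith
        have "Rv T r ! (c' - Bv T r - 1) < R ! (c' - b - 1)"
          using spec[OF cs2[OF j2, unfolded colstr_def], of c'] cb' a b1 by simp
        then show "Rv T (?p - 1) ! (c' - Bv T (?p - 1) - 1) < (x # R) ! (c' - (b - 1) - 1)" using idx by simp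
      qed
    qed
    then show ?thesis using e b1 br by simp
  next
    case nT: False
    let ?K = "Max {k. k < length R \<and> R ! k < x}"
    note lk = last_lt[OF nT]
    define S1 where "S1 = setrow ?p (b, R[?K := x]) T"
    have e: "revins x ?p T = revins (R ! ?K) r S1" using br nT unfolding S1_def by (auto simp: Let_def)
    have kmax: "\<And>i. i < length R \<Longrightarrow> R ! i < x \<Longrightarrow> i \<le> ?K" by (simp add: Max_ge)
    have ck: "c \<le> b + ?K + 1"
    proof (cases "b < c")
      case True
      have "R ! (c - b - 1) < x" using Qj(1,4) True by blast
      moreover have "c - b - 1 < length R" using True Qj(1) by linarith
      ultimately have "c - b - 1 \<le> ?K" using kmax by blast
      then show ?thesis using True by linarith
    next
      case False then show ?thesis by simp
    qed
    have gS1: "goodT S1"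
      unfolding S1_def
    proof (rule goodT_setrow_intro[OF g p1])
      show "sorted (R[?K := x])" using sorted_upd_last[OF sr lk] .
      show "\<forall>y\<in>set (R[?K := x]). 0 < y" using pr x0 set_update_subset_insert[of R ?K x] by blast
      show "Bv T (Suc ?p) \<le> b" by fact
      show "2 \<le> ?p \<Longrightarrow> b \<le> Bv T (?p - 1)" using bb2 by simp
      show "Ol T (Suc ?p) \<le> b + length (R[?K := x])" using oo1 by simp
      show "2 \<le> ?p \<Longrightarrow> b + length (R[?K := x]) \<le> Ol T (?p - 1)" using oo2 by simp
      show "colstr b (R[?K := x]) (Bv T (Suc ?p)) (Rv T (Suc ?p))"
        unfolding colstr_def
      proof (intro allI impI)
        fix c' assume a: "b < c'" "c' \<le> b + length (R[?K := x])" "Bv T (Suc ?p) < c'" "c' \<le> Bv T (Suc ?p) + length (Rv T (Suc ?p))"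
        show "R[?K := x] ! (c' - b - 1) < Rv T (Suc ?p) ! (c' - Bv T (Suc ?p) - 1)"
        proof (cases "c' - b - 1 = ?K")
          case True
          hence "c \<le> c'" using ck a by linarith
          then show ?thesis using Qj(3)[of c'] a True lk(1) by simp
        next
          case False
          then show ?thesis using spec[OF cs1[unfolded colstr_def], of c'] a by simp
        qed
      qed
      show "2 \<le> ?p \<Longrightarrow> colstr (Bv T (?p - 1)) (Rv T (?p - 1)) b (R[?K := x])"
        unfolding colstr_def
      proof (intro allI impI)
        fix c' assume j2: "2 \<le> ?p" and a: "Bv T (?p - 1) < c'" "c' \<le> Bv T (?p - 1) + length (Rv T (?p - 1))" "b < c'" "c' \<le> b + length (R[?K := x])"
        have old: "Rv T r ! (c' - Bv T r - 1) < R ! (c' - b - 1)"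
          using spec[OF cs2[OF j2, unfolded colstr_def], of c'] a by simp
        show "Rv T (?p - 1) ! (c' - Bv T (?p - 1) - 1) < R[?K := x] ! (c' - b - 1)"
        proof (cases "c' - b - 1 = ?K")
          case True then show ?thesis using old lk(1,2) by simp
        next
          case False then show ?thesis using old by simp
        qed
      qed
    qed
    have rS1: "rowof S1 ?p = (b, R[?K := x])" "rowof S1 r = rowof T r"
      unfolding S1_def by (simp_all add: rowof_setrow)
    have y0: "0 < R ! ?K" using pr lk(1) by simp
    have QS1: "Qr S1 (R ! ?K) r (b + ?K + 1)"
      unfolding Qr_def
    proof (intro impI conjI allI)
      assume r1: "1 \<le> r"
      show "b + ?K + 1 \<le> Ol S1 r" using rS1 oo2 lk(1) r1 by simp
      show "Bv S1 (Suc r) < b + ?K + 1" using rS1 by simp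
      fix c' assume a: "b + ?K + 1 \<le> c'" "Bv S1 (Suc r) < c'" "c' \<le> Ol S1 (Suc r)"
      show "R ! ?K < Rv S1 (Suc r) ! (c' - Bv S1 (Suc r) - 1)"
      proof (cases "c' - b - 1 = ?K")
        case True then show ?thesis using rS1 lk by simp
      next
        case False
        hence "?K < c' - b - 1" using a rS1 by simp
        moreover have "c' - b - 1 < length R" using a rS1 by simp
        ultimately have "x \<le> R ! (c' - b - 1)" using lk(3) by blast
        then show ?thesis using rS1 lk False by simp
      qed
    next
      assume r1: "1 \<le> r" and a: "Bv S1 r < b + ?K + 1" "b + ?K + 1 \<le> Ol S1 r"
      have i1: "b < b + ?K + 1" "b + ?K + 1 \<le> b + length R" using lk(1) by simp_all
      have "Rv T r ! (b + ?K + 1 - Bv T r - 1) < R ! (b + ?K + 1 - b - 1)"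
        using spec[OF cs2[unfolded colstr_def], of "b + ?K + 1"] i1 a rS1 r1 by simp
      then show "Rv S1 r ! (b + ?K + 1 - Bv S1 r - 1) < R ! ?K" using rS1 by simp
    qed
    have IH: "goodT (fst (revins (R ! ?K) r S1)) \<and>
     (1 \<le> fst (snd (revins (R ! ?K) r S1)) \<longrightarrow> 1 \<le> Bv S1 (fst (snd (revins (R ! ?K) r S1))))"
      by (rule "2.IH"[OF br[symmetric] nT refl, of "b + ?K + 1", folded S1_def]) (use gS1 y0 QS1 in auto)
    have "fst (snd (revins (R ! ?K) r S1)) \<le> r" by (rule revins_le)
    hence "Bv S1 (fst (snd (revins (R ! ?K) r S1))) = Bv T (fst (snd (revins (R ! ?K) r S1)))"
      unfolding S1_def by (simp add: rowof_setrow)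
    then show ?thesis using e IH by simp
  qed
qed


lemma revins_props:
  "revins x r S = (S', l, v) \<Longrightarrow> l \<le> r \<and> (\<forall>i. (i < l \<or> r < i) \<longrightarrow> rowof S' i = rowof S i) \<and>
     (\<forall>i. i \<noteq> l \<longrightarrow> Bv S' i = Bv S i \<and> length (Rv S' i) = length (Rv S i)) \<and>
     (1 \<le> l \<longrightarrow> rowof S' l = (Bv S l - 1, v # Rv S l))"
proof (induction x r S arbitrary: S' l v rule: revins.induct)
  case (1 x T)
  then show ?case by simp
next
  case (2 x r T)
  obtain b R where br: "rowof T (Suc r) = (b, R)" by fastforce
  show ?case
  proof (cases "\<forall>y\<in>set R. x \<le> y")
    case True
    then have "S' = setrow (Suc r) (b - 1, x # R) T" "l = Suc r" "v = x" using "2.prems" br by auto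
    then show ?thesis using br by (auto simp: rowof_setrow)
  next
    case nT: False
    let ?K = "Max {k. k < length R \<and> R ! k < x}"
    define S1 where "S1 = setrow (Suc r) (b, R[?K := x]) T"
    have e: "revins (R ! ?K) r S1 = (S', l, v)" using "2.prems" br nT unfolding S1_def by (auto simp: Let_def)
    have IH: "l \<le> r \<and> (\<forall>i. (i < l \<or> r < i) \<longrightarrow> rowof S' i = rowof S1 i) \<and>
     (\<forall>i. i \<noteq> l \<longrightarrow> Bv S' i = Bv S1 i \<and> length (Rv S' i) = length (Rv S1 i)) \<and>
     (1 \<le> l \<longrightarrow> rowof S' l = (Bv S1 l - 1, v # Rv S1 l))"
      using "2.IH"[OF br[symmetric] nT refl, folded S1_def] e by blast
    have r1: "\<And>i. i \<noteq> Suc r \<Longrightarrow> rowof S1 i = rowof T i" unfolding S1_def by (simp add: rowof_setrow)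
    have r2: "Bv S1 (Suc r) = Bv T (Suc r)" "length (Rv S1 (Suc r)) = length (Rv T (Suc r))"
      unfolding S1_def using br by (simp_all add: rowof_setrow)
    show ?thesis
    proof (intro conjI allI impI)
      show "l \<le> Suc r" using IH by simp
    next
      fix i assume "i < l \<or> Suc r < i"
      then show "rowof S' i = rowof T i" using IH r1[of i] by auto
    next
      fix i assume il: "i \<noteq> l"
      show "Bv S' i = Bv T i" using IH il r1[of i] r2 by (cases "i = Suc r") auto
      show "length (Rv S' i) = length (Rv T i)" using IH il r1[of i] r2 by (cases "i = Suc r") auto
    next
      assume "1 \<le> l"
      then show "rowof S' l = (Bv T l - 1, v # Rv T l)" using IH r1[of l] by auto
    qed
  qed
qed

definition srt :: "tab \<Rightarrow> bool" where "srt S \<longleftrightarrow> (\<forall>i\<ge>1. sorted (Rv S i))"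

lemma goodT_srt: "goodT S \<Longrightarrow> srt S"
  by (simp add: srt_def goodTD)

lemma srt_setrow: "srt S \<Longrightarrow> 1 \<le> j \<Longrightarrow> sorted r \<Longrightarrow> srt (setrow j (b, r) S)"
  by (simp add: srt_def rowof_setrow)

lemma min_idx:
  assumes "sorted R" "K < length R" "R ! K < (x::nat)"
  shows "Min {k. k < length (R[K := x]) \<and> R ! K < R[K := x] ! k} = K"
proof (rule Min_eqI)
  show "finite {k. k < length (R[K := x]) \<and> R ! K < R[K := x] ! k}" by simp
  show "K \<in> {k. k < length (R[K := x]) \<and> R ! K < R[K := x] ! k}" using assms by simp
  fix k assume "k \<in> {k. k < length (R[K := x]) \<and> R ! K < R[K := x] ! k}"
  hence k: "k < length R" "R ! K < R[K := x] ! k" by auto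
  show "K \<le> k"
  proof (rule ccontr)
    assume "\<not> K \<le> k"
    hence "k < K" by simp
    hence "R ! k \<le> R ! K" using assms(1,2) by (simp add: sorted_iff_nth_mono)
    thus False using k \<open>k < K\<close> by simp
  qed
qed

lemma ins_undo:
  assumes "sorted R" "K < length R" "R ! K < x" "rowof S p = (b, R[K := x])" "1 \<le> p"
  shows "ins (R ! K) p S = ins x (Suc p) (setrow p (b, R) S)"
proof -
  have nle: "\<not> (\<forall>z\<in>set (R[K := x]). z \<le> R ! K)" using assms(2,3)
    by (metis le_antisym length_list_update less_imp_le less_irrefl nth_list_update_eq nth_mem)
  have m: "Min {k. k < length (R[K := x]) \<and> R ! K < R[K := x] ! k} = K" using min_idx[OF assms(1-3)] .
  have uu: "(R[K := x])[K := R ! K] = R" by simp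
  have nth: "R[K := x] ! K = x" using assms(2) by simp
  show ?thesis using assms(2,4,5) nle m uu nth by (subst ins.simps) (auto simp: Let_def)
qed

lemma teq_setrow_back: "rowof S p = (b, R) \<Longrightarrow> 1 \<le> p \<Longrightarrow> teq (setrow p (b, R) (setrow p row' S)) S"
  by (simp add: teq_def rowof_setrow)

lemma inv_exit:
  "srt S \<Longrightarrow> revins x r S = (S', 0, v) \<Longrightarrow> teq (ins v 1 S') (ins x (Suc r) S)"
proof (induction x r S arbitrary: S' v rule: revins.induct)
  case (1 x T)
  then show ?case by simp
next
  case (2 x r T)
  obtain b R where br: "rowof T (Suc r) = (b, R)" by fastforce
  have nT: "\<not> (\<forall>y\<in>set R. x \<le> y)"
  proof
    assume "\<forall>y\<in>set R. x \<le> y"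
    thus False using "2.prems"(2) br by simp
  qed
  let ?K = "Max {k. k < length R \<and> R ! k < x}"
  note lk = last_lt[OF nT]
  define S1 where "S1 = setrow (Suc r) (b, R[?K := x]) T"
  have e: "revins (R ! ?K) r S1 = (S', 0, v)" using "2.prems"(2) br nT unfolding S1_def by (auto simp: Let_def)
  have sR: "sorted R" using "2.prems"(1) br unfolding srt_def by (metis fst_conv le_add1 plus_1_eq_Suc snd_conv)
  have sS1: "srt S1" unfolding S1_def by (rule srt_setrow[OF "2.prems"(1)]) (use sorted_upd_last[OF sR lk] in auto)
  have IH: "teq (ins v 1 S') (ins (R ! ?K) (Suc r) S1)"
    using "2.IH"[OF br[symmetric] nT refl, folded S1_def] sS1 e by blast
  have "ins (R ! ?K) (Suc r) S1 = ins x (Suc (Suc r)) (setrow (Suc r) (b, R) S1)"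
    by (rule ins_undo[OF sR lk(1,2)]) (simp_all add: S1_def rowof_setrow)
  moreover have "teq (setrow (Suc r) (b, R) S1) T" unfolding S1_def by (rule teq_setrow_back[OF br]) simp
  ultimately show ?case using IH teq_ins teq_trans by metis
qed

lemma inv_land:
  "srt S \<Longrightarrow> revins x r S = (S', l, v) \<Longrightarrow> 1 \<le> l \<Longrightarrow>
     teq (ins v (Suc l) (setrow l (rowof S l) S')) (ins x (Suc r) S)"
proof (induction x r S arbitrary: S' l v rule: revins.induct)
  case (1 x T)
  then show ?case by simp
next
  case (2 x r T)
  obtain b R where br: "rowof T (Suc r) = (b, R)" by fastforce
  show ?case
  proof (cases "\<forall>y\<in>set R. x \<le> y")
    case True
    then have e: "S' = setrow (Suc r) (b - 1, x # R) T" "l = Suc r" "v = x" using "2.prems" br by auto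
    have "teq (setrow (Suc r) (rowof T (Suc r)) S') T" using e br by (simp add: teq_setrow_back)
    then show ?thesis using e teq_ins by simp
  next
    case nT: False
    let ?K = "Max {k. k < length R \<and> R ! k < x}"
    note lk = last_lt[OF nT]
    define S1 where "S1 = setrow (Suc r) (b, R[?K := x]) T"
    have e: "revins (R ! ?K) r S1 = (S', l, v)" using "2.prems"(2) br nT unfolding S1_def by (auto simp: Let_def)
    have sR: "sorted R" using "2.prems"(1) br unfolding srt_def by (metis fst_conv le_add1 plus_1_eq_Suc snd_conv)
    have sS1: "srt S1" unfolding S1_def by (rule srt_setrow[OF "2.prems"(1)]) (use sorted_upd_last[OF sR lk] in auto)
    have IH: "teq (ins v (Suc l) (setrow l (rowof S1 l) S')) (ins (R ! ?K) (Suc r) S1)"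
      using "2.IH"[OF br[symmetric] nT refl, folded S1_def] sS1 e "2.prems"(3) by blast
    have "l \<le> r" using revins_props[OF e] by simp
    hence rl: "rowof S1 l = rowof T l" unfolding S1_def by (simp add: rowof_setrow)
    have "ins (R ! ?K) (Suc r) S1 = ins x (Suc (Suc r)) (setrow (Suc r) (b, R) S1)"
      by (rule ins_undo[OF sR lk(1,2)]) (simp_all add: S1_def rowof_setrow)
    moreover have "teq (setrow (Suc r) (b, R) S1) T" unfolding S1_def by (rule teq_setrow_back[OF br]) simp
    ultimately show ?thesis using IH rl teq_ins teq_trans by metis
  qed
qed


lemma rc_unfold: "rowof T j = (b, R) \<Longrightarrow> rev_corner T (cl, j) = revins (last R) (j - 1) (setrow j (b, butlast R) T)"
  by (simp add: rev_corner_def Let_def)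

lemma sorted_butlast': "sorted R \<Longrightarrow> sorted (butlast R)"
  by (simp add: butlast_conv_take sorted_wrt_take)

lemma butlast_le_last: "sorted R \<Longrightarrow> R \<noteq> [] \<Longrightarrow> \<forall>y\<in>set (butlast R). y \<le> last R"
proof -
  assume "sorted R" "R \<noteq> []"
  hence "sorted (butlast R @ [last R])" by simp
  thus ?thesis by (simp add: sorted_append)
qed

lemma rc_S0_eq: "rowof T j = (b, R) \<Longrightarrow> R \<noteq> [] \<Longrightarrow> sorted R \<Longrightarrow> 1 \<le> j \<Longrightarrow>
    teq (ins (last R) j (setrow j (b, butlast R) T)) T"
proof -
  assume br: "rowof T j = (b, R)" and ne: "R \<noteq> []" and s: "sorted R" and j: "1 \<le> j"
  have r0: "rowof (setrow j (b, butlast R) T) j = (b, butlast R)" using j by (simp add: rowof_setrow)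
  have "ins (last R) j (setrow j (b, butlast R) T) = setrow j (b, butlast R @ [last R]) (setrow j (b, butlast R) T)"
    using j r0 butlast_le_last[OF s ne] by (subst ins.simps) simp
  also have "butlast R @ [last R] = R" using ne by simp
  finally show ?thesis using teq_setrow_back[OF br j] by simp
qed

lemma rc_exit:
  assumes "srt T" "1 \<le> j" "rowof T j = (b, R)" "R \<noteq> []" "rev_corner T (cl, j) = (T', 0, k)"
  shows "teq (ins k 1 T') T"
proof -
  have "sorted (Rv T j)" using assms(1,2) by (simp add: srt_def)
  hence sR: "sorted R" using assms(3) by simp
  have s0: "srt (setrow j (b, butlast R) T)" by (rule srt_setrow[OF assms(1,2) sorted_butlast'[OF sR]])
  have "teq (ins k 1 T') (ins (last R) (Suc (j - 1)) (setrow j (b, butlast R) T))"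
    using inv_exit[OF s0] assms(5) rc_unfold[OF assms(3)] by simp
  then show ?thesis using assms(2) rc_S0_eq[OF assms(3,4) sR assms(2)] teq_trans by simp
qed

lemma rc_props:
  assumes "1 \<le> j" "rowof T j = (b, R)" "R \<noteq> []" "rev_corner T (cl, j) = (T', l, v)"
  shows "l < j" "\<forall>i. i < l \<longrightarrow> rowof T' i = rowof T i" "\<forall>i. j < i \<longrightarrow> rowof T' i = rowof T i"
    "\<forall>i. i \<noteq> l \<longrightarrow> Bv T' i = Bv T i"
    "\<forall>i. i \<noteq> l \<longrightarrow> i \<noteq> j \<longrightarrow> length (Rv T' i) = length (Rv T i)"
    "l \<noteq> j \<Longrightarrow> Rv T' j = butlast R"
    "1 \<le> l \<Longrightarrow> rowof T' l = (Bv T l - 1, v # Rv T l)"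
proof -
  let ?S0 = "setrow j (b, butlast R) T"
  have e: "revins (last R) (j - 1) ?S0 = (T', l, v)" using assms(4) rc_unfold[OF assms(2)] by simp
  note P = revins_props[OF e]
  have r0: "\<And>i. rowof ?S0 i = (if i = j then (b, butlast R) else rowof T i)" using assms(1) by (simp add: rowof_setrow)
  show lj: "l < j" using P assms(1) by linarith
  show "\<forall>i. i < l \<longrightarrow> rowof T' i = rowof T i" using P r0 lj by auto
  show "\<forall>i. j < i \<longrightarrow> rowof T' i = rowof T i" using P r0 by auto
  show "\<forall>i. i \<noteq> l \<longrightarrow> Bv T' i = Bv T i" using P r0 assms(2) by auto
  show "\<forall>i. i \<noteq> l \<longrightarrow> i \<noteq> j \<longrightarrow> length (Rv T' i) = length (Rv T i)" using P r0 by auto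
  show "l \<noteq> j \<Longrightarrow> Rv T' j = butlast R" using P r0 assms(1) by auto
  show "1 \<le> l \<Longrightarrow> rowof T' l = (Bv T l - 1, v # Rv T l)" using P r0 lj by auto
qed

lemma rc_land:
  assumes "srt T" "1 \<le> j" "rowof T j = (b, R)" "R \<noteq> []" "rev_corner T (cl, j) = (T', l, v)" "1 \<le> l"
  shows "teq (ins v (Suc l) (setrow l (rowof T l) T')) T"
proof -
  have "sorted (Rv T j)" using assms(1,2) by (simp add: srt_def)
  hence sR: "sorted R" using assms(3) by simp
  have s0: "srt (setrow j (b, butlast R) T)" by (rule srt_setrow[OF assms(1,2) sorted_butlast'[OF sR]])
  have e: "revins (last R) (j - 1) (setrow j (b, butlast R) T) = (T', l, v)" using assms(5) rc_unfold[OF assms(3)] by simp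
  have "l < j" using rc_props[OF assms(2-5)] by simp
  hence rl: "rowof (setrow j (b, butlast R) T) l = rowof T l" using assms(2) by (simp add: rowof_setrow)
  have "teq (ins v (Suc l) (setrow l (rowof T l) T')) (ins (last R) (Suc (j - 1)) (setrow j (b, butlast R) T))"
    using inv_land[OF s0 e assms(6)] rl by simp
  then show ?thesis using assms(2) rc_S0_eq[OF assms(3,4) sR assms(2)] teq_trans by simp
qed

lemma rc_good:
  assumes g: "goodT T" and j: "1 \<le> j" and br: "rowof T j = (b, R)" and ne: "R \<noteq> []"
    and corner: "Ol T (Suc j) < Ol T j"
  shows "goodT (fst (rev_corner T (cl, j))) \<and>
    (1 \<le> fst (snd (rev_corner T (cl, j))) \<longrightarrow> 1 \<le> Bv T (fst (snd (rev_corner T (cl, j)))))"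
proof -
  have sR: "sorted R" and pR: "\<forall>y\<in>set R. 0 < y" and cs1: "colstr b R (Bv T (Suc j)) (Rv T (Suc j))"
    and bb1: "Bv T (Suc j) \<le> b" using goodTD[OF g j] br by auto
  have pre: "2 \<le> j \<Longrightarrow> b \<le> Bv T (j - 1) \<and> b + length R \<le> Ol T (j - 1) \<and> colstr (Bv T (j - 1)) (Rv T (j - 1)) b R"
  proof -
    assume j2: "2 \<le> j"
    have j1: "1 \<le> j - 1" and jj: "Suc (j - 1) = j" using j2 by auto
    show ?thesis using goodTD[OF g j1] unfolding jj br by simp
  qed
  have bb2: "2 \<le> j \<Longrightarrow> b \<le> Bv T (j - 1)" and oo2: "2 \<le> j \<Longrightarrow> b + length R \<le> Ol T (j - 1)"
    and cs2: "2 \<le> j \<Longrightarrow> colstr (Bv T (j - 1)) (Rv T (j - 1)) b R" using pre by auto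
  have lenb: "length (butlast R) = length R - 1" by simp
  have ob: "Ol T (Suc j) \<le> b + length (butlast R)" using corner br ne by simp
  let ?S0 = "setrow j (b, butlast R) T"
  have g0: "goodT ?S0"
  proof (rule goodT_setrow_intro[OF g j])
    show "sorted (butlast R)" using sorted_butlast'[OF sR] .
    show "\<forall>y\<in>set (butlast R). 0 < y" using pR by (meson in_set_butlastD)
    show "Bv T (Suc j) \<le> b" by fact
    show "2 \<le> j \<Longrightarrow> b \<le> Bv T (j - 1)" by fact
    show "Ol T (Suc j) \<le> b + length (butlast R)" by fact
    show "2 \<le> j \<Longrightarrow> b + length (butlast R) \<le> Ol T (j - 1)" using oo2 by simp
    show "colstr b (butlast R) (Bv T (Suc j)) (Rv T (Suc j))"
      unfolding colstr_def
    proof (intro allI impI)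
      fix c' assume a: "b < c'" "c' \<le> b + length (butlast R)" "Bv T (Suc j) < c'" "c' \<le> Bv T (Suc j) + length (Rv T (Suc j))"
      have "c' - b - 1 < length R - 1" using a lenb by linarith
      then show "butlast R ! (c' - b - 1) < Rv T (Suc j) ! (c' - Bv T (Suc j) - 1)"
        using spec[OF cs1[unfolded colstr_def], of c'] a by (simp add: nth_butlast)
    qed
    show "2 \<le> j \<Longrightarrow> colstr (Bv T (j - 1)) (Rv T (j - 1)) b (butlast R)"
      unfolding colstr_def
    proof (intro allI impI)
      fix c' assume j2: "2 \<le> j" and a: "Bv T (j - 1) < c'" "c' \<le> Bv T (j - 1) + length (Rv T (j - 1))" "b < c'" "c' \<le> b + length (butlast R)"
      have "c' - b - 1 < length R - 1" using a lenb by linarith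
      then show "Rv T (j - 1) ! (c' - Bv T (j - 1) - 1) < butlast R ! (c' - b - 1)"
        using spec[OF cs2[OF j2, unfolded colstr_def], of c'] a by (simp add: nth_butlast)
    qed
  qed
  have r0: "\<And>i. rowof ?S0 i = (if i = j then (b, butlast R) else rowof T i)" using j by (simp add: rowof_setrow)
  have jne: "j - 1 \<noteq> j" using j by simp
  have r0': "rowof ?S0 (j - 1) = rowof T (j - 1)" by (simp only: r0[of "j - 1"] if_not_P[OF jne])
  have r0j: "rowof ?S0 j = (b, butlast R)" using r0[of j] by simp
  have lastR: "last R = R ! (length R - 1)" using ne by (simp add: last_conv_nth)
  have x0: "0 < last R" using pR ne by simp
  have Q: "Qr ?S0 (last R) (j - 1) (b + length R)"
    unfolding Qr_def
  proof (intro impI conjI allI)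
    assume j1: "1 \<le> j - 1"
    hence j2: "2 \<le> j" by simp
    have jj: "Suc (j - 1) = j" using j by simp
    show "b + length R \<le> Ol ?S0 (j - 1)" using r0' oo2[OF j2] by simp
    show "Bv ?S0 (Suc (j - 1)) < b + length R" unfolding jj r0j using ne by simp
    fix c' assume a: "b + length R \<le> c'" "Bv ?S0 (Suc (j - 1)) < c'" "c' \<le> Ol ?S0 (Suc (j - 1))"
    then show "last R < Rv ?S0 (Suc (j - 1)) ! (c' - Bv ?S0 (Suc (j - 1)) - 1)" unfolding jj r0j using ne by simp
  next
    assume j1: "1 \<le> j - 1" and a: "Bv ?S0 (j - 1) < b + length R" "b + length R \<le> Ol ?S0 (j - 1)"
    hence j2: "2 \<le> j" by simp
    have a': "Bv T (j - 1) < b + length R" "b + length R \<le> Ol T (j - 1)" using a r0' by simp_all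
    have "Rv T (j - 1) ! (b + length R - Bv T (j - 1) - 1) < R ! (b + length R - b - 1)"
      using spec[OF cs2[OF j2, unfolded colstr_def], of "b + length R"] a' ne by simp
    then show "Rv ?S0 (j - 1) ! (b + length R - Bv ?S0 (j - 1) - 1) < last R" using r0' lastR by simp
  qed
  have "goodT (fst (revins (last R) (j - 1) ?S0)) \<and>
     (1 \<le> fst (snd (revins (last R) (j - 1) ?S0)) \<longrightarrow> 1 \<le> Bv ?S0 (fst (snd (revins (last R) (j - 1) ?S0))))"
    by (rule revins_good[OF g0 x0 Q])
  moreover have "fst (snd (revins (last R) (j - 1) ?S0)) \<noteq> j" using revins_le[of "last R" "j - 1" ?S0] j by simp
  ultimately show ?thesis using rc_unfold[OF br] r0 by simp
qed


lemma cellmap_eq: "cellmap S (i, j) = (if 1 \<le> j \<and> Bv S j < i \<and> i \<le> Ol S j then Some (Rv S j ! (i - Bv S j - 1)) else None)"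
  by (simp add: cellmap_def split: prod.splits)

lemma goodT_mono:
  assumes "goodT S" "1 \<le> j" "j \<le> j'"
  shows "Bv S j' \<le> Bv S j \<and> Ol S j' \<le> Ol S j"
  using assms(3)
proof (induction j' rule: dec_induct)
  case base then show ?case by simp
next
  case (step n)
  have "1 \<le> n" using assms(2) step.hyps(1) by simp
  then show ?case using goodTD[OF assms(1), of n] step.IH by linarith
qed

lemma goodT_col:
  assumes g: "goodT S" and j: "1 \<le> j"
  shows "Bv S j < i \<Longrightarrow> i \<le> Ol S j \<Longrightarrow> Bv S (j + d) < i \<Longrightarrow> i \<le> Ol S (j + d) \<Longrightarrow> 0 < d \<Longrightarrow>
     Rv S j ! (i - Bv S j - 1) < Rv S (j + d) ! (i - Bv S (j + d) - 1)"
proof (induction d)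
  case 0 then show ?case by simp
next
  case (Suc d)
  have m1: "Bv S (Suc j) \<le> Bv S j" "Ol S (j + Suc d) \<le> Ol S (Suc j)"
    using goodT_mono[OF g j, of "Suc j"] goodT_mono[OF g, of "Suc j" "j + Suc d"] by auto
  have in1: "Bv S (Suc j) < i" "i \<le> Ol S (Suc j)" using Suc.prems m1 by linarith+
  have step1: "Rv S j ! (i - Bv S j - 1) < Rv S (Suc j) ! (i - Bv S (Suc j) - 1)"
    using spec[OF goodTD(5)[OF g j, unfolded colstr_def], of i] Suc.prems(1,2) in1 by simp
  show ?case
  proof (cases "d = 0")
    case True then show ?thesis using step1 by simp
  next
    case False
    have m2: "Bv S (j + d) \<le> Bv S (Suc j)" "Ol S (j + Suc d) \<le> Ol S (j + d)"
      using goodT_mono[OF g, of "Suc j" "j + d"] goodT_mono[OF g, of "j + d" "j + Suc d"] False by auto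
    have in2: "Bv S (j + d) < i" "i \<le> Ol S (j + d)"
    proof -
      have "Bv S (j + Suc d) \<le> Bv S (j + d)" using goodT_mono[OF g, of "j + d" "j + Suc d"] j by simp
      show "i \<le> Ol S (j + d)" using Suc.prems(4) m2 by linarith
      show "Bv S (j + d) < i" using m2(1) in1(1) by linarith
    qed
    have IH: "Rv S j ! (i - Bv S j - 1) < Rv S (j + d) ! (i - Bv S (j + d) - 1)"
      using Suc.IH Suc.prems(1,2) in2 False by simp
    have jd: "1 \<le> j + d" using j by simp
    have "Rv S (j + d) ! (i - Bv S (j + d) - 1) < Rv S (Suc (j + d)) ! (i - Bv S (Suc (j + d)) - 1)"
      using spec[OF goodTD(5)[OF g jd, unfolded colstr_def], of i] in2 Suc.prems(3,4) by simp
    then show ?thesis using IH by simp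
  qed
qed

lemma goodT_ssyt: "goodT S \<Longrightarrow> is_ssyt S"
  unfolding is_ssyt_def
proof (intro conjI allI impI)
  assume g: "goodT S"
  fix c a assume "cellmap S c = Some a"
  then obtain i j where c: "c = (i, j)" "1 \<le> j" "Bv S j < i" "i \<le> Ol S j" "a = Rv S j ! (i - Bv S j - 1)"
    by (cases c) (auto simp: cellmap_eq split: if_splits)
  have "i - Bv S j - 1 < length (Rv S j)" using c by linarith
  then show "0 < a" using goodTD(2)[OF g c(2)] c(5) by simp
next
  assume g: "goodT S"
  fix i i' j a a' assume ii: "i < i'" and c1: "cellmap S (i, j) = Some a" and c2: "cellmap S (i', j) = Some a'"
  have h1: "1 \<le> j" "Bv S j < i" "i \<le> Ol S j" "a = Rv S j ! (i - Bv S j - 1)" using c1 by (auto simp: cellmap_eq split: if_splits)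
  have h2: "Bv S j < i'" "i' \<le> Ol S j" "a' = Rv S j ! (i' - Bv S j - 1)" using c2 by (auto simp: cellmap_eq split: if_splits)
  have "i' - Bv S j - 1 < length (Rv S j)" using h2 by linarith
  moreover have "i - Bv S j - 1 \<le> i' - Bv S j - 1" using ii by linarith
  ultimately show "a \<le> a'" using goodTD(1)[OF g h1(1)] h1(4) h2(3) by (simp add: sorted_iff_nth_mono)
next
  assume g: "goodT S"
  fix i j j' a a' assume jj: "j < j'" and c1: "cellmap S (i, j) = Some a" and c2: "cellmap S (i, j') = Some a'"
  have h1: "1 \<le> j" "Bv S j < i" "i \<le> Ol S j" "a = Rv S j ! (i - Bv S j - 1)" using c1 by (auto simp: cellmap_eq split: if_splits)
  have h2: "Bv S j' < i" "i \<le> Ol S j'" "a' = Rv S j' ! (i - Bv S j' - 1)" using c2 by (auto simp: cellmap_eq split: if_splits)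
  obtain d where d: "j' = j + d" "0 < d" using jj by (metis less_imp_add_positive)
  show "a < a'" using goodT_col[OF g h1(1) h1(2,3), of d] h2 d h1(4) by simp
qed

lemma pt_mono: "is_partition l \<Longrightarrow> 1 \<le> j \<Longrightarrow> pt l (Suc j) \<le> pt l j"
  unfolding is_partition_def pt_def
  by (auto simp: sorted_wrt_iff_nth_less)

lemma ssyt_good:
  assumes sh: "ssyt_of_shape S lam mu" and pl: "is_partition lam" and pm: "is_partition mu"
  shows "goodT S"
  unfolding goodT_def
proof (intro allI impI conjI)
  have eqs: "\<And>j. 1 \<le> j \<Longrightarrow> Bv S j = pt mu j \<and> Ol S j = pt lam j" using sh unfolding ssyt_of_shape_def by auto
  have ss: "is_ssyt S" using sh unfolding ssyt_of_shape_def by auto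
  fix j :: nat assume j: "1 \<le> j"
  have cm: "\<And>p. p < length (Rv S j) \<Longrightarrow> cellmap S (Bv S j + p + 1, j) = Some (Rv S j ! p)"
    using j by (simp add: cellmap_eq)
  show "sorted (Rv S j)"
    unfolding sorted_iff_nth_mono
  proof (intro allI impI)
    fix p p' assume pp: "p \<le> p'" "p' < length (Rv S j)"
    show "Rv S j ! p \<le> Rv S j ! p'"
    proof (cases "p = p'")
      case True then show ?thesis by simp
    next
      case False
      hence lt: "Bv S j + p + 1 < Bv S j + p' + 1" using pp by simp
      have c1: "cellmap S (Bv S j + p + 1, j) = Some (Rv S j ! p)" using cm[of p] pp by simp
      have c2: "cellmap S (Bv S j + p' + 1, j) = Some (Rv S j ! p')" using cm[of p'] pp by simp
      show ?thesis using ss[unfolded is_ssyt_def] c1 c2 lt by blast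
    qed
  qed
  show "\<forall>y\<in>set (Rv S j). 0 < y"
  proof
    fix y assume "y \<in> set (Rv S j)"
    then obtain p where "p < length (Rv S j)" "Rv S j ! p = y" by (auto simp: in_set_conv_nth)
    then show "0 < y" using ss cm[of p] unfolding is_ssyt_def by auto
  qed
  show "Bv S (Suc j) \<le> Bv S j" using eqs[of j] eqs[of "Suc j"] pt_mono[OF pm j] j by simp
  show "Ol S (Suc j) \<le> Ol S j" using eqs[of j] eqs[of "Suc j"] pt_mono[OF pl j] j by simp
  show "colstr (Bv S j) (Rv S j) (Bv S (Suc j)) (Rv S (Suc j))"
    unfolding colstr_def
  proof (intro allI impI)
    fix c assume a: "Bv S j < c" "c \<le> Bv S j + length (Rv S j)" "Bv S (Suc j) < c" "c \<le> Bv S (Suc j) + length (Rv S (Suc j))"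
    have "cellmap S (c, j) = Some (Rv S j ! (c - Bv S j - 1))" using a j by (simp add: cellmap_eq)
    moreover have "cellmap S (c, Suc j) = Some (Rv S (Suc j) ! (c - Bv S (Suc j) - 1))" using a j by (simp add: cellmap_eq)
    ultimately show "Rv S j ! (c - Bv S j - 1) < Rv S (Suc j) ! (c - Bv S (Suc j) - 1)"
      using ss unfolding is_ssyt_def by blast
  qed
qed

lemma dec_gen:
  fixes f :: "nat \<Rightarrow> nat"
  assumes dec: "\<And>j. 1 \<le> j \<Longrightarrow> f (Suc j) \<le> f j" and a1: "1 \<le> a" and ab: "a \<le> b"
  shows "f b \<le> f a"
  using ab
proof (induction b rule: dec_induct)
  case base then show ?case by simp
next
  case (step n)
  have "1 \<le> n" using a1 step.hyps(1) by simp
  then show ?case using dec[of n] step.IH by simp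
qed

lemma part_of_fun:
  fixes f :: "nat \<Rightarrow> nat"
  assumes dec: "\<And>j. 1 \<le> j \<Longrightarrow> f (Suc j) \<le> f j" and z: "\<And>j. N < j \<Longrightarrow> f j = 0"
  shows "\<exists>L. is_partition L \<and> (\<forall>j\<ge>1. pt L j = f j)"
proof -
  define K where "K = (LEAST k. f (Suc k) = 0)"
  have ex: "f (Suc N) = 0" using z by simp
  have fK: "f (Suc K) = 0" unfolding K_def by (rule LeastI[of _ N]) (rule ex)
  have posK: "\<And>j. 1 \<le> j \<Longrightarrow> j \<le> K \<Longrightarrow> 0 < f j"
  proof -
    fix j :: nat assume j: "1 \<le> j" "j \<le> K"
    have "f (Suc (j - 1)) \<noteq> 0"
    proof
      assume "f (Suc (j - 1)) = 0"
      hence "K \<le> j - 1" unfolding K_def by (rule Least_le)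
      thus False using j by simp
    qed
    thus "0 < f j" using j by simp
  qed
  have zK: "\<And>j. K < j \<Longrightarrow> f j = 0"
  proof -
    fix j :: nat assume "K < j"
    hence "f j \<le> f (Suc K)" using dec_gen[of f, OF dec, of "Suc K" j] by simp
    thus "f j = 0" using fK by simp
  qed
  define L where "L = map f [1..<Suc K]"
  have lenL: "length L = K" unfolding L_def by simp
  have nthL: "\<And>p. p < K \<Longrightarrow> L ! p = f (Suc p)" unfolding L_def by (simp del: upt_Suc)
  have ptL: "\<forall>j\<ge>1. pt L j = f j"
  proof (intro allI impI)
    fix j :: nat assume j: "1 \<le> j"
    show "pt L j = f j"
    proof (cases "j \<le> K")
      case True
      then show ?thesis using nthL[of "j - 1"] j lenL by (simp add: pt_def)
    next
      case False
      then show ?thesis using zK[of j] lenL by (simp add: pt_def)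
    qed
  qed
  have pos: "\<forall>x\<in>set L. 0 < x"
  proof
    fix x assume "x \<in> set L"
    then obtain p where p: "p < K" "L ! p = x" using lenL by (auto simp: in_set_conv_nth)
    thus "0 < x" using nthL[of p] posK[of "Suc p"] by simp
  qed
  have srt: "sorted_wrt (\<ge>) L"
    unfolding sorted_wrt_iff_nth_less
  proof (intro allI impI)
    fix a b assume ab: "a < b" "b < length L"
    have "f (Suc b) \<le> f (Suc a)" using dec_gen[of f, OF dec, of "Suc a" "Suc b"] ab by simp
    then show "L ! a \<ge> L ! b" using nthL[of a] nthL[of b] ab lenL by simp
  qed
  show ?thesis using pos srt ptL unfolding is_partition_def by blast
qed

lemma diagram_sub: "(\<And>j. 1 \<le> j \<Longrightarrow> pt a j \<le> pt b j) \<Longrightarrow> diagram a \<subseteq> diagram b"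
  unfolding diagram_def by force

lemma hstrip_mid:
  assumes "hstrip lamp lam" "diagram lam \<subseteq> diagram lam'" "diagram lam' \<subseteq> diagram lamp"
  shows "hstrip lam' lam"
  using assms unfolding hstrip_def by blast


lemma rstep_contains: "x \<in> set (fst (rstep R x))"
proof (cases "\<forall>y\<in>set R. y \<le> x")
  case True then show ?thesis by (simp add: rstep_le)
next
  case False
  obtain k where "rstep R x = (R[k := x], Some (R ! k))" "k < length R"
    using rstep_gt_idx[OF False] by blast
  then show ?thesis by (simp add: set_update_memI)
qed

lemma rstep_length: "length (fst (rstep R x)) = length R + (if \<forall>y\<in>set R. y \<le> x then 1 else 0)"
  by (auto simp: rstep_def Let_def)

lemma srt_ins: "srt S \<Longrightarrow> 1 \<le> j \<Longrightarrow> srt (ins x j S)"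
  unfolding srt_def
proof (intro allI impI)
  fix i :: nat assume s: "\<forall>i\<ge>1. sorted (Rv S i)" and j: "1 \<le> j" and i: "1 \<le> i"
  show "sorted (Rv (ins x j S) i)"
    using ins_cv[OF j i, of x S] s i rstep_sorted[of "Rv S i"] by (auto split: option.splits)
qed

lemma cv_teq:
  assumes "teq S S'" shows "cv S x j i = cv S' x j i"
proof (induction i)
  case 0 show ?case by simp
next
  case (Suc i)
  have r: "rowof S i = rowof S' i" using assms by (simp add: teq_def)
  show ?case unfolding cv.simps Suc.IH r by (rule refl)
qed

lemma growth:
  assumes "1 \<le> i"
  shows "length (Rv (ins x 1 S) i) = length (Rv S i) +
     (if \<exists>a. cv S x 1 i = Some a \<and> (\<forall>z\<in>set (Rv S i). z \<le> a) then 1 else 0)"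
  using ins_cv[OF _ assms, of 1 x S] rstep_length by (auto split: option.splits)

lemma cv_prev:
  assumes "cv S x 1 g = Some a" "1 \<le> i" "i \<le> g"
  shows "\<exists>a'. cv S x 1 i = Some a'"
  using assms(3,1)
proof (induction g arbitrary: a rule: dec_induct)
  case base then show ?case by simp
next
  case (step n)
  have "1 \<le> n" using assms(2) step.hyps(1) by simp
  then obtain b where "cv S x 1 n = Some b" using step.prems by (cases "cv S x 1 n") auto
  then show ?case using step.IH by simp
qed

lemma two_ins:
  assumes s: "srt S" and yx: "y < x"
  shows "1 \<le> i \<Longrightarrow> cv S x 1 i = Some a \<Longrightarrow>
    \<exists>b. cv (ins x 1 S) y 1 i = Some b \<and> b < a \<and> a \<in> set (Rv (ins x 1 S) i)"
proof (induction i arbitrary: a rule: nat_induct_at_least)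
  case base
  have "a = x" using base by simp
  moreover have "Rv (ins x 1 S) 1 = fst (rstep (Rv S 1) x)" using ins_cv[of 1 1 x S] by simp
  ultimately show ?case using yx rstep_contains[of x "Rv S 1"] by simp
next
  case (Suc n)
  let ?S1 = "ins x 1 S"
  obtain a0 where a0: "cv S x 1 n = Some a0" "snd (rstep (Rv S n) a0) = Some a"
    using Suc.prems Suc.hyps by (cases "cv S x 1 n") auto
  obtain b0 where b0: "cv ?S1 y 1 n = Some b0" "b0 < a0" "a0 \<in> set (Rv ?S1 n)" using Suc.IH[OF a0(1)] by blast
  have rowS1: "Rv ?S1 n = fst (rstep (Rv S n) a0)" using ins_cv[of 1 n x S] Suc.hyps a0(1) by simp
  have sn: "sorted (Rv S n)" using s Suc.hyps by (simp add: srt_def)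
  have nle0: "\<not> (\<forall>z\<in>set (Rv S n). z \<le> a0)"
  proof
    assume "\<forall>z\<in>set (Rv S n). z \<le> a0"
    hence "rstep (Rv S n) a0 = (Rv S n @ [a0], None)" by (rule rstep_le)
    thus False using a0(2) by simp
  qed
  obtain R' where r0: "rstep (Rv S n) a0 = (R', Some a)" "is_min_gt (Rv S n) a0 a"
    using rstep_gt[OF sn nle0] a0(2) by auto
  have sS1: "sorted (Rv ?S1 n)" using srt_ins[OF s, of 1 x] Suc.hyps by (simp add: srt_def)
  have nle1: "\<not> (\<forall>z\<in>set (Rv ?S1 n). z \<le> b0)" using b0(2,3) leD by blast
  obtain R'' b where r1: "rstep (Rv ?S1 n) b0 = (R'', Some b)" "is_min_gt (Rv ?S1 n) b0 b"
    using rstep_gt[OF sS1 nle1] by auto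
  have "b \<le> a0" using r1(2) b0 unfolding is_min_gt_def by blast
  moreover have "a0 < a" using r0(2) unfolding is_min_gt_def by blast
  ultimately have ba: "b < a" by simp
  have cvb: "cv ?S1 y 1 (Suc n) = Some b" using b0(1) r1(1) Suc.hyps by simp
  have "Rv ?S1 (Suc n) = fst (rstep (Rv S (Suc n)) a)" using ins_cv[of 1 "Suc n" x S] Suc.prems by simp
  hence "a \<in> set (Rv ?S1 (Suc n))" using rstep_contains by simp
  then show ?case using cvb ba by simp
qed

lemma no_growth_before:
  assumes s: "srt S" and yx: "y < x" and i: "1 \<le> i" and g: "cv S x 1 i = Some a"
  shows "\<not> (\<exists>b. cv (ins x 1 S) y 1 i = Some b \<and> (\<forall>z\<in>set (Rv (ins x 1 S) i). z \<le> b))"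
  using two_ins[OF s yx i g] by force

lemma inert0_step: "rstep (0 # R) v = (0 # fst (rstep R v), snd (rstep R v))"
proof (cases "\<forall>y\<in>set R. y \<le> v")
  case True then show ?thesis by (simp add: rstep_le)
next
  case False
  obtain k where k: "rstep R v = (R[k := v], Some (R ! k))" "k < length R" "v < R ! k" "\<forall>i<k. R ! i \<le> v"
    using rstep_gt_idx[OF False] by blast
  have F0: "\<not> (\<forall>y\<in>set (0 # R). y \<le> v)" using False by simp
  have m: "Min {i. i < length (0 # R) \<and> v < (0 # R) ! i} = Suc k"
  proof (rule Min_eqI)
    show "finite {i. i < length (0 # R) \<and> v < (0 # R) ! i}" by simp
    show "Suc k \<in> {i. i < length (0 # R) \<and> v < (0 # R) ! i}" using k by simp
    fix i assume "i \<in> {i. i < length (0 # R) \<and> v < (0 # R) ! i}"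
    hence i: "i < Suc (length R)" "v < (0 # R) ! i" by auto
    show "Suc k \<le> i"
    proof (cases i)
      case 0 then show ?thesis using i by simp
    next
      case (Suc i')
      have "v < R ! i'" using i Suc by simp
      hence "\<not> i' < k" using k(4) by force
      then show ?thesis using Suc by simp
    qed
  qed
  show ?thesis using k(1) F0 m by (simp add: rstep_def Let_def)
qed

lemma inert0: "rp (0 # R) V = (0 # fst (rp R V), snd (rp R V))"
proof (induction V arbitrary: R)
  case Nil then show ?case by simp
next
  case (Cons v V)
  show ?case using inert0_step[of R v] Cons[of "fst (rstep R v)"] by (simp split: prod.splits)
qed

lemma zero_trick:
  assumes "sorted (e # R0)" "0 < e"
  shows "rp (e # R0) (0 # V) = (0 # fst (rp R0 V), e # snd (rp R0 V))"
proof -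
  have F: "\<not> (\<forall>y\<in>set (e # R0). y \<le> 0)" using assms(2) by simp
  have m: "Min {k. k < length (e # R0) \<and> 0 < (e # R0) ! k} = 0"
    by (rule Min_eqI) (use assms(2) in auto)
  have "rstep (e # R0) 0 = (0 # R0, Some e)" using F m by (simp add: rstep_def Let_def)
  then show ?thesis using inert0[of R0 V] by (simp split: prod.splits)
qed


lemma teq_insl: "teq S S' \<Longrightarrow> teq (insl w j S) (insl w j S')"
  unfolding insl_def by (induction w arbitrary: S S') (auto intro: teq_ins)

lemma insl_single: "insl [x] j S = ins x j S" by (simp add: insl_def)

lemma inp1_Suc: "1 \<le> j \<Longrightarrow> inp S 1 w (Suc j) = snd (rp (Rv S j) (inp S 1 w j))" by simp
lemma inp1_1: "inp S 1 w 1 = w" by simp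

primrec inpC :: "tab \<Rightarrow> nat \<Rightarrow> nat list \<Rightarrow> nat \<Rightarrow> nat list" where
  "inpC P r w 0 = []"
| "inpC P r w (Suc j) = (if Suc j < r then inp P 1 w (Suc j) else if Suc j = r then 0 # inp P 1 w (Suc j)
     else snd (rp (Rv P j) (inpC P r w j)))"

definition Dom :: "nat list \<Rightarrow> nat list \<Rightarrow> bool" where
  "Dom A C \<longleftrightarrow> sorted A \<and> sorted C \<and> (C = A \<or> (\<exists>Pp S z. A = Pp @ S \<and> C = Pp @ z # S \<and> (\<forall>s\<in>set S. z \<le> s)))"

lemma Dom_step:
  assumes "Dom A C" "sorted R"
  shows "Dom (snd (rp R A)) (snd (rp R C)) \<and> length (fst (rp R A)) \<le> length (fst (rp R C))"
proof -
  have sA: "sorted A" and sC: "sorted C" using assms(1) by (auto simp: Dom_def)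
  have sOA: "sorted (snd (rp R A))" and sOC: "sorted (snd (rp R C))" using rp_out_sorted assms(2) sA sC by auto
  from assms(1) consider "C = A" | Pp S z where "A = Pp @ S" "C = Pp @ z # S" "\<forall>s\<in>set S. z \<le> s"
    unfolding Dom_def by blast
  then show ?thesis
  proof cases
    case 1 then show ?thesis using sOA by (simp add: Dom_def)
  next
    case 2
    note M = M_final[OF assms(2) 2(3), of Pp]
    then show ?thesis
    proof
      assume h: "mset (snd (rp R (Pp @ z # S))) = mset (snd (rp R (Pp @ S))) \<and>
            length (fst (rp R (Pp @ z # S))) = Suc (length (fst (rp R (Pp @ S))))"
      have "snd (rp R C) = snd (rp R A)" using sorted_mset_eq[OF sOC sOA] h 2 by simp
      then show ?thesis using h 2 sOA unfolding Dom_def by simp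
    next
      assume "\<exists>q. mset (snd (rp R (Pp @ z # S))) = add_mset q (mset (snd (rp R (Pp @ S)))) \<and>
            length (fst (rp R (Pp @ z # S))) = length (fst (rp R (Pp @ S)))"
      then obtain q where h: "mset (snd (rp R C)) = add_mset q (mset (snd (rp R A)))"
          "length (fst (rp R C)) = length (fst (rp R A))" using 2 by auto
      obtain P2 S2 where "snd (rp R A) = P2 @ S2" "snd (rp R C) = P2 @ q # S2" "\<forall>s\<in>set S2. q \<le> s"
        using sorted_add_split[OF sOA sOC h(1)] by blast
      hence "Dom (snd (rp R A)) (snd (rp R C))" using sOA sOC unfolding Dom_def by blast
      then show ?thesis using h(2) by simp
    qed
  qed
qed

lemma shape_cmp:
  assumes sP: "srt P" and r1: "1 \<le> r" and hr: "Rv P r = e # R0" and e0: "0 < e" and ws: "sorted w"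
  shows "\<forall>j\<ge>1. Ol (insl w 1 P) j \<le> Ol (insl w 1 (ins e (Suc r) (setrow r (Bv P r + 1, R0) P))) j"
proof (intro allI impI)
  fix j :: nat assume j1: "1 \<le> j"
  define V' where "V' = setrow r (Bv P r + 1, R0) P"
  define S1 where "S1 = ins e (Suc r) V'"
  define A where "A = inp P 1 w"
  define E where "E = inp V' (Suc r) [e]"
  define W where "W = inp S1 1 w"
  define C where "C = inpC P r w"
  have sPr: "\<And>i. 1 \<le> i \<Longrightarrow> sorted (Rv P i)" using sP by (simp add: srt_def)
  have sR: "sorted (e # R0)" using sPr[OF r1] hr by simp
  have rV: "\<And>i. rowof V' i = (if i = r then (Bv P r + 1, R0) else rowof P i)" unfolding V'_def using r1 by (simp add: rowof_setrow)
  have F1: "\<And>i. 1 \<le> i \<Longrightarrow> rowof (insl w 1 P) i = (Bv P i, fst (rp (Rv P i) (A i)))"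
    unfolding A_def by (rule insl_sys) simp
  have F2: "\<And>i. 1 \<le> i \<Longrightarrow> rowof S1 i = (Bv V' i, fst (rp (Rv V' i) (E i)))"
    unfolding S1_def E_def using insl_sys[of "Suc r" _ "[e]" V'] by (simp add: insl_single)
  have F3: "\<And>i. 1 \<le> i \<Longrightarrow> rowof (insl w 1 S1) i = (Bv S1 i, fst (rp (Rv S1 i) (W i)))"
    unfolding W_def by (rule insl_sys) simp
  have E0: "\<And>i. i \<le> r \<Longrightarrow> E i = []" unfolding E_def by (case_tac i) auto
  have S1low: "\<And>i. 1 \<le> i \<Longrightarrow> i \<le> r \<Longrightarrow> rowof S1 i = rowof V' i" using F2 E0 by simp
  have Wa: "\<And>i. 1 \<le> i \<Longrightarrow> i \<le> r \<Longrightarrow> W i = A i"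
  proof -
    fix i :: nat assume "1 \<le> i" "i \<le> r"
    thus "W i = A i"
    proof (induction i rule: nat_induct_at_least)
      case base then show ?case unfolding W_def A_def by simp
    next
      case (Suc n)
      have "Rv S1 n = Rv P n" using S1low[of n] rV[of n] Suc by simp
      then show ?case using Suc unfolding W_def A_def by simp
    qed
  qed
  have Cr: "C r = 0 # A r" unfolding C_def A_def using r1 by (cases r) auto
  have Clow: "\<And>i. i < r \<Longrightarrow> C i = A i" unfolding C_def A_def by (case_tac i) auto
  have Chigh: "\<And>i. r \<le> i \<Longrightarrow> C (Suc i) = snd (rp (Rv P i) (C i))" unfolding C_def by simp
  have EW: "\<And>i. Suc r \<le> i \<Longrightarrow> E i @ W i = C i"
  proof -
    fix i :: nat assume "Suc r \<le> i"
    thus "E i @ W i = C i"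
    proof (induction i rule: dec_induct)
      case base
      have "E (Suc r) = [e]" unfolding E_def by simp
      moreover have "W (Suc r) = snd (rp R0 (A r))"
      proof -
        have "W (Suc r) = snd (rp (Rv S1 r) (W r))" unfolding W_def using r1 by simp
        also have "Rv S1 r = R0" using S1low[OF r1] rV[of r] by simp
        finally show ?thesis using Wa[OF r1] by simp
      qed
      moreover have "C (Suc r) = e # snd (rp R0 (A r))"
        using Chigh[of r] Cr hr zero_trick[OF sR e0] by simp
      ultimately show ?case by simp
    next
      case (step n)
      have n1: "1 \<le> n" "n \<noteq> r" using step.hyps r1 by auto
      have "E (Suc n) @ W (Suc n) = snd (rp (Rv V' n) (E n)) @ snd (rp (Rv S1 n) (W n))"
        unfolding E_def W_def using step.hyps n1 by simp
      also have "Rv S1 n = fst (rp (Rv V' n) (E n))" using F2[OF n1(1)] by simp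
      also have "snd (rp (Rv V' n) (E n)) @ snd (rp (fst (rp (Rv V' n) (E n))) (W n)) = snd (rp (Rv V' n) (E n @ W n))"
        by (simp add: rp_append split: prod.splits)
      also have "\<dots> = snd (rp (Rv P n) (C n))" using step.IH rV[of n] n1 by simp
      also have "\<dots> = C (Suc n)" using Chigh[of n] step.hyps by simp
      finally show ?case .
    qed
  qed
  have sA: "\<And>i. 1 \<le> i \<Longrightarrow> sorted (A i)"
  proof -
    fix i :: nat assume "1 \<le> i"
    thus "sorted (A i)"
    proof (induction i rule: nat_induct_at_least)
      case base then show ?case using ws unfolding A_def by simp
    next
      case (Suc n) then show ?case using rp_out_sorted[OF sPr[OF Suc.hyps]] unfolding A_def by simp
    qed
  qed
  have DomC: "\<And>i. r \<le> i \<Longrightarrow> Dom (A i) (C i) \<and> length (fst (rp (Rv P i) (A i))) \<le> length (fst (rp (Rv P i) (C i)))"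
  proof -
    fix i :: nat assume "r \<le> i"
    thus "Dom (A i) (C i) \<and> length (fst (rp (Rv P i) (A i))) \<le> length (fst (rp (Rv P i) (C i)))"
    proof (induction i rule: dec_induct)
      case base
      have "\<exists>Pp S z. A r = Pp @ S \<and> C r = Pp @ z # S \<and> (\<forall>s\<in>set S. z \<le> s)"
        using Cr by (intro exI[of _ "[]"] exI[of _ "A r"] exI[of _ 0]) simp
      hence "Dom (A r) (C r)" unfolding Dom_def using Cr sA[OF r1] by simp
      then show ?case using Dom_step[OF _ sPr[OF r1]] by blast
    next
      case (step n)
      have n1: "1 \<le> n" using step.hyps r1 by simp
      have "Dom (A (Suc n)) (C (Suc n))"
        using Dom_step[OF conjunct1[OF step.IH] sPr[OF n1]] Chigh[OF step.hyps(1)] n1 unfolding A_def by simp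
      then show ?case using Dom_step[OF _ sPr[of "Suc n"]] by simp
    qed
  qed
  show "Ol (insl w 1 P) j \<le> Ol (insl w 1 S1) j"
  proof (cases "j < r")
    case True
    have "Rv S1 j = Rv P j" "Bv S1 j = Bv P j" using S1low[OF j1] rV[of j] True by auto
    then show ?thesis using F1[OF j1] F3[OF j1] Wa[OF j1] True by simp
  next
    case False
    show ?thesis
    proof (cases "j = r")
      case True
      have "Rv S1 r = R0" "Bv S1 r = Bv P r + 1" using S1low[OF r1] rV[of r] by auto
      hence "Ol (insl w 1 S1) r = Bv P r + 1 + length (fst (rp R0 (A r)))" using F3[OF r1] Wa[OF r1] by simp
      moreover have "length (fst (rp (Rv P r) (C r))) = Suc (length (fst (rp R0 (A r))))"
        using Cr hr zero_trick[OF sR e0] by simp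
      moreover have "Ol (insl w 1 P) r = Bv P r + length (fst (rp (Rv P r) (A r)))" using F1[OF r1] by simp
      ultimately show ?thesis using DomC[of r] True by simp
    next
      case ne: False
      hence jr: "Suc r \<le> j" using False by simp
      have bS1: "Bv S1 j = Bv P j" using F2[OF j1] rV[of j] ne by simp
      have "Rv (insl w 1 S1) j = fst (rp (fst (rp (Rv V' j) (E j))) (W j))" using F3[OF j1] F2[OF j1] by simp
      also have "\<dots> = fst (rp (Rv V' j) (E j @ W j))" by (simp add: rp_append split: prod.splits)
      also have "\<dots> = fst (rp (Rv P j) (C j))" using EW[OF jr] rV[of j] ne by simp
      finally have "Ol (insl w 1 S1) j = Bv P j + length (fst (rp (Rv P j) (C j)))" using F3[OF j1] bS1 by simp
      moreover have "Ol (insl w 1 P) j = Bv P j + length (fst (rp (Rv P j) (A j)))" using F1[OF j1] by simp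
      ultimately show ?thesis using DomC[of j] jr by simp
    qed
  qed
qed


primrec tq :: "tab \<Rightarrow> (nat \<times> nat) list \<Rightarrow> nat \<Rightarrow> tab" where
  "tq T cs 0 = T"
| "tq T cs (Suc i) = fst (rev_corner (tq T cs i) (cs ! i))"

lemma tq_Cons: "tq T (c # cs) (Suc i) = tq (fst (rev_corner T c)) cs i"
  by (induction i) auto

lemma slide_steps_len: "length (slide_steps T cs) = length cs"
  by (induction cs arbitrary: T) (auto split: prod.splits)

lemma slide_steps_nth:
  "i < length cs \<Longrightarrow> slide_steps T cs ! i = (tq T cs (Suc i), snd (snd (rev_corner (tq T cs i) (cs ! i))),
     fst (snd (rev_corner (tq T cs i) (cs ! i))), bump_path (tq T cs i) (tq T cs (Suc i)))"
proof (induction cs arbitrary: T i)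
  case Nil then show ?case by simp
next
  case (Cons c cs)
  obtain T' l k where rc: "rev_corner T c = (T', l, k)" by (metis prod.exhaust)
  show ?case
  proof (cases i)
    case 0 then show ?thesis using rc by simp
  next
    case (Suc i')
    have "slide_steps T (c # cs) ! i = slide_steps T' cs ! i'" using rc Suc by simp
    also have "\<dots> = (tq T' cs (Suc i'), snd (snd (rev_corner (tq T' cs i') (cs ! i'))),
     fst (snd (rev_corner (tq T' cs i') (cs ! i'))), bump_path (tq T' cs i') (tq T' cs (Suc i')))"
      using Cons.IH[of i' T'] Cons.prems Suc by simp
    finally show ?thesis using Suc rc tq_Cons[of T c cs] by (cases i') simp_all
  qed
qed

context
  fixes lamp lam :: "nat list"
  assumes hs: "hstrip lamp lam" and plamp: "is_partition lamp" and plam: "is_partition lam"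
begin

definition St where "St = diagram lamp - diagram lam"

lemma diagram_finite: "finite (diagram l)"
proof -
  have "diagram l \<subseteq> {..sum_list l} \<times> {..length l}"
  proof
    fix c assume "c \<in> diagram l"
    then obtain i j where c: "c = (i, j)" "1 \<le> j" "1 \<le> i" "i \<le> pt l j" by (auto simp: diagram_def)
    have jl: "j \<le> length l" using c by (cases "j \<le> length l") (auto simp: pt_def)
    have "l ! (j - 1) \<le> sum_list l" using jl c(2) by (simp add: elem_le_sum_list)
    hence "i \<le> sum_list l" using c jl by (simp add: pt_def)
    then show "c \<in> {..sum_list l} \<times> {..length l}" using c jl by simp
  qed
  then show ?thesis by (rule finite_subset) simp
qed

lemma St_finite: "finite St" unfolding St_def using diagram_finite by simp

lemma in_St: "(c, j) \<in> St \<longleftrightarrow> 1 \<le> j \<and> pt lam j < c \<and> c \<le> pt lamp j"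
  unfolding St_def diagram_def by auto

lemma St_col: "a \<in> St \<Longrightarrow> b \<in> St \<Longrightarrow> fst a = fst b \<Longrightarrow> a = b"
  using hs unfolding hstrip_def St_def by blast

lemma pt_dec_gen: "is_partition l \<Longrightarrow> 1 \<le> a \<Longrightarrow> a \<le> b \<Longrightarrow> pt l b \<le> pt l a"
  using dec_gen[of "pt l", OF pt_mono] by blast

lemma St_rows:
  assumes "(a1, r1) \<in> St" "(a2, r2) \<in> St" "a1 < a2"
  shows "r2 \<le> r1"
proof (rule ccontr)
  assume "\<not> r2 \<le> r1"
  hence lt: "r1 < r2" by simp
  have h1: "1 \<le> r1" "pt lam r1 < a1" "a1 \<le> pt lamp r1" using assms(1) in_St by auto
  have h2: "1 \<le> r2" "pt lam r2 < a2" "a2 \<le> pt lamp r2" using assms(2) in_St by auto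
  have "pt lam r2 \<le> pt lam r1" using pt_dec_gen[OF plam h1(1)] lt by simp
  hence "(a1, r2) \<in> St" using in_St h1 h2 assms(3) by auto
  then show False using St_col[OF assms(1)] lt by fastforce
qed

definition cs where "cs = strip_cells lamp lam"

lemma cs_eq: "cs = rev (sorted_list_of_set St)" unfolding cs_def strip_cells_def St_def by simp

lemma cs_set: "set cs = St" using cs_eq St_finite by simp

lemma cs_distinct: "distinct cs" using cs_eq by simp

lemma cs_dec: "a < b \<Longrightarrow> b < length cs \<Longrightarrow> cs ! b < cs ! a"
proof -
  assume ab: "a < b" "b < length cs"
  let ?L = "sorted_list_of_set St"
  have len: "length cs = length ?L" using cs_eq by simp
  have "cs ! a = ?L ! (length ?L - Suc a)" "cs ! b = ?L ! (length ?L - Suc b)"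
    using ab len cs_eq by (simp_all add: rev_nth)
  moreover have "sorted_wrt (<) ?L" by simp
  ultimately show "cs ! b < cs ! a" using ab len sorted_wrt_nth_less[of "(<)" ?L "length ?L - Suc b" "length ?L - Suc a"] by simp
qed

lemma cs_in: "i < length cs \<Longrightarrow> cs ! i \<in> St" using cs_set nth_mem by blast

lemma cs_col_dec: "a < b \<Longrightarrow> b < length cs \<Longrightarrow> fst (cs ! b) < fst (cs ! a)"
proof -
  assume ab: "a < b" "b < length cs"
  have lt: "cs ! b < cs ! a" using cs_dec[OF ab] .
  have ne: "cs ! b \<noteq> cs ! a" using lt by simp
  have "fst (cs ! b) \<noteq> fst (cs ! a)" using St_col[OF cs_in[OF ab(2)] cs_in[of a]] ab ne by fastforce
  moreover have "fst (cs ! b) \<le> fst (cs ! a)" using lt by (cases "cs ! b"; cases "cs ! a") auto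
  ultimately show ?thesis by simp
qed

lemma cs_row_mono: "a < b \<Longrightarrow> b < length cs \<Longrightarrow> snd (cs ! a) \<le> snd (cs ! b)"
  using St_rows[of "fst (cs ! b)" "snd (cs ! b)" "fst (cs ! a)" "snd (cs ! a)"] cs_in cs_col_dec by force

lemma corner_facts:
  assumes i: "i < length cs" and ci: "cs ! i = (col, \<rho>)"
  shows "1 \<le> \<rho>" "pt lam \<rho> < col" "col \<le> pt lamp \<rho>" "pt lamp (Suc \<rho>) < col"
    "card {t. t < i \<and> snd (cs ! t) = \<rho>} = pt lamp \<rho> - col"
proof -
  have inS: "(col, \<rho>) \<in> St" using cs_in[OF i] ci by simp
  show r1: "1 \<le> \<rho>" and c1: "pt lam \<rho> < col" and c2: "col \<le> pt lamp \<rho>" using inS in_St by auto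
  show "pt lamp (Suc \<rho>) < col"
  proof (rule ccontr)
    assume "\<not> pt lamp (Suc \<rho>) < col"
    hence "col \<le> pt lamp (Suc \<rho>)" by simp
    moreover have "pt lam (Suc \<rho>) \<le> pt lam \<rho>" using pt_mono[OF plam r1] .
    ultimately have "(col, Suc \<rho>) \<in> St" using in_St c1 by auto
    hence "(col, Suc \<rho>) = (col, \<rho>)" using St_col[OF _ inS] by simp
    then show False by simp
  qed
  let ?A = "{t. t < i \<and> snd (cs ! t) = \<rho>}"
  let ?B = "{c'. col < c' \<and> c' \<le> pt lamp \<rho>}"
  have inj: "inj_on (\<lambda>t. fst (cs ! t)) ?A"
  proof (rule inj_onI)
    fix t1 t2 assume t1: "t1 \<in> ?A" and t2: "t2 \<in> ?A" and e: "fst (cs ! t1) = fst (cs ! t2)"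
    have "cs ! t1 = cs ! t2" using t1 t2 e by (simp add: prod_eq_iff)
    moreover have "t1 < length cs" "t2 < length cs" using t1 t2 i by auto
    ultimately show "t1 = t2" using nth_eq_iff_index_eq[OF cs_distinct] by blast
  qed
  have img: "(\<lambda>t. fst (cs ! t)) ` ?A = ?B"
  proof
    show "(\<lambda>t. fst (cs ! t)) ` ?A \<subseteq> ?B"
    proof
      fix c' assume "c' \<in> (\<lambda>t. fst (cs ! t)) ` ?A"
      then obtain t where t: "t < i" "snd (cs ! t) = \<rho>" "c' = fst (cs ! t)" by auto
      have "col < c'" using cs_col_dec[OF t(1) i] ci t(3) by simp
      moreover have "cs ! t \<in> St" using cs_in t(1) i by simp
      hence "(fst (cs ! t), snd (cs ! t)) \<in> St" by simp
      hence "c' \<le> pt lamp \<rho>" using t in_St[of "fst (cs ! t)" "snd (cs ! t)"] by blast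
      ultimately show "c' \<in> ?B" by simp
    qed
    show "?B \<subseteq> (\<lambda>t. fst (cs ! t)) ` ?A"
    proof
      fix c' assume "c' \<in> ?B"
      hence c': "col < c'" "c' \<le> pt lamp \<rho>" by auto
      have "(c', \<rho>) \<in> St" using in_St c' c1 r1 by auto
      hence "(c', \<rho>) \<in> set cs" using cs_set by simp
      then obtain t where t: "t < length cs" "cs ! t = (c', \<rho>)" by (auto simp: in_set_conv_nth)
      have "t < i"
      proof (rule ccontr)
        assume "\<not> t < i"
        hence "i < t \<or> i = t" by auto
        thus False
        proof
          assume "i < t" hence "fst (cs ! t) < fst (cs ! i)" using cs_col_dec t(1) by blast
          thus False using t(2) ci c' by simp
        next
          assume "i = t" thus False using t(2) ci c' by simp
        qed
      qed
      have tA: "t \<in> ?A" using \<open>t < i\<close> t by simp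
      show "c' \<in> (\<lambda>t. fst (cs ! t)) ` ?A" by (rule rev_image_eqI[OF tA]) (use t in simp)
    qed
  qed
  have "card ?A = card ?B" using card_image[OF inj] img by simp
  also have "?B = {Suc col..pt lamp \<rho>}" by auto
  also have "card \<dots> = pt lamp \<rho> - col" by simp
  finally show "card ?A = pt lamp \<rho> - col" .
qed

end

lemma cnt_Suc: "card {t. t < Suc i \<and> P t} = card {t. t < i \<and> P t} + (if P i then 1 else 0)"
proof -
  have "{t. t < Suc i \<and> P t} = {t. t < i \<and> P t} \<union> (if P i then {i} else {})" by (auto simp: less_Suc_eq)
  then show ?thesis by auto
qed


lemma pt_sub: "diagram a \<subseteq> diagram b \<Longrightarrow> 1 \<le> j \<Longrightarrow> pt a j \<le> pt b j"
proof -
  assume s: "diagram a \<subseteq> diagram b" and j: "1 \<le> j"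
  show "pt a j \<le> pt b j"
  proof (cases "pt a j = 0")
    case True then show ?thesis by simp
  next
    case False
    hence "(pt a j, j) \<in> diagram a" using j by (simp add: diagram_def)
    hence "(pt a j, j) \<in> diagram b" using s by blast
    then show ?thesis by (simp add: diagram_def)
  qed
qed

lemma foldl_ext: "foldl (\<lambda>U i. ext_ins U (f i)) X xs = insl (map f xs) 1 X"
  by (induction xs arbitrary: X) (simp_all add: insl_def ext_ins_def)

lemma insl_Cons: "insl (x # ws) j S = insl ws j (ins x j S)" by (simp add: insl_def)

lemma teq_rowof: "teq S S' \<Longrightarrow> rowof S j = rowof S' j" by (simp add: teq_def)

lemma insl_good: "goodT S \<Longrightarrow> \<forall>x\<in>set w. 0 < x \<Longrightarrow> goodT (insl w 1 S)"
proof (induction w arbitrary: S)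
  case Nil then show ?case by (simp add: insl_def)
next
  case (Cons x w)
  have "goodT (ins x 1 S)" using ext_ins_good[of S x] Cons.prems by simp
  then show ?case using Cons.IH[of "ins x 1 S"] Cons.prems by (simp add: insl_def)
qed

lemma insl_B: "1 \<le> j \<Longrightarrow> Bv (insl w j S) i = Bv S i"
  by (induction w arbitrary: S) (simp_all add: insl_def ins_B)

lemma insl_len: "1 \<le> j \<Longrightarrow> length (Rv S i) \<le> length (Rv (insl w j S) i)"
proof (induction w arbitrary: S)
  case Nil then show ?case by (simp add: insl_def)
next
  case (Cons x w)
  have "length (Rv S i) \<le> length (Rv (ins x j S) i)" using ins_len_ge[OF Cons.prems] .
  also have "\<dots> \<le> length (Rv (insl w j (ins x j S)) i)" using Cons.IH[OF Cons.prems] .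
  finally show ?case by (simp add: insl_def)
qed

lemma rowof_beyond: "length S < j \<Longrightarrow> rowof S j = (0, [])" by (simp add: rowof_def)

lemma sorted_rev_map:
  assumes "\<And>a. Suc a < n \<Longrightarrow> f (Suc a) \<le> (f a :: nat)"
  shows "sorted (rev (map f [0..<n]))"
proof -
  have g: "\<And>a b. a \<le> b \<Longrightarrow> b < n \<Longrightarrow> f b \<le> f a"
  proof -
    fix a b assume ab: "a \<le> b" "b < n"
    thus "f b \<le> f a"
    proof (induction b rule: dec_induct)
      case base then show ?case by simp
    next
      case (step k) then show ?case using assms[of k] by simp
    qed
  qed
  show ?thesis unfolding sorted_iff_nth_mono
  proof (intro allI impI)
    fix i j assume ij: "i \<le> j" "j < length (rev (map f [0..<n]))"
    have "rev (map f [0..<n]) ! i = f (n - Suc i)" "rev (map f [0..<n]) ! j = f (n - Suc j)"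
      using ij by (simp_all add: rev_nth)
    then show "rev (map f [0..<n]) ! i \<le> rev (map f [0..<n]) ! j" using g[of "n - Suc j" "n - Suc i"] ij by simp
  qed
qed

locale setting =
  fixes lam mu lamp mum :: "nat list" and T :: tab
  assumes pl: "is_partition lam" and pmu: "is_partition mu" and plp: "is_partition lamp" and pmm: "is_partition mum"
    and musub: "diagram mu \<subseteq> diagram lam" and hs: "hstrip lamp lam" and vs: "vstrip mu mum"
    and sh: "ssyt_of_shape T lamp mum"
begin

abbreviation "CS \<equiv> cs lamp lam"
abbreviation "TQ i \<equiv> tq T CS i"

definition land :: "nat \<Rightarrow> nat" where "land i = fst (snd (rev_corner (TQ i) (CS ! i)))"
definition kv :: "nat \<Rightarrow> nat" where "kv i = snd (snd (rev_corner (TQ i) (CS ! i)))"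
definition cnt :: "nat \<Rightarrow> nat \<Rightarrow> nat" where "cnt i j = card {t. t < i \<and> snd (CS ! t) = j}"

lemma rc_TQ: "rev_corner (TQ i) (CS ! i) = (TQ (Suc i), land i, kv i)"
  by (simp add: land_def kv_def)

lemma gT: "goodT T" using ssyt_good[OF sh plp pmm] .

lemma shT: "\<And>j. 1 \<le> j \<Longrightarrow> Bv T j = pt mum j \<and> Ol T j = pt lamp j"
  using sh unfolding ssyt_of_shape_def by auto

lemma mum_le: "\<And>j. 1 \<le> j \<Longrightarrow> pt mum j \<le> pt lam j"
proof -
  fix j :: nat assume j: "1 \<le> j"
  have "diagram mum \<subseteq> diagram mu" using vs unfolding vstrip_def by blast
  then show "pt mum j \<le> pt lam j" using pt_sub[OF _ j] pt_sub[OF musub j] by (meson le_trans)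
qed

definition Inv :: "nat \<Rightarrow> bool" where
  "Inv i \<longleftrightarrow> goodT (TQ i) \<and> (\<forall>j\<ge>1. Ol (TQ i) j = pt lamp j - cnt i j) \<and> (\<forall>j\<ge>1. pt lam j \<le> Ol (TQ i) j)"

lemma corner_at:
  assumes i: "i < length CS" and inv: "Inv i" and bv: "\<forall>j\<ge>1. Bv (TQ i) j = pt mum j"
  shows "1 \<le> snd (CS ! i)" "Rv (TQ i) (snd (CS ! i)) \<noteq> []"
    "Ol (TQ i) (Suc (snd (CS ! i))) < Ol (TQ i) (snd (CS ! i))"
    "Ol (TQ i) (snd (CS ! i)) = fst (CS ! i)" "pt lam (snd (CS ! i)) < fst (CS ! i)"
proof -
  obtain col \<rho> where ci: "CS ! i = (col, \<rho>)" by fastforce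
  note cf = corner_facts[OF hs plp pl i ci]
  have r1: "1 \<le> \<rho>" using cf by simp
  have olr: "Ol (TQ i) \<rho> = col" using inv cf(5) r1 cf(3) unfolding Inv_def cnt_def by simp
  have ol2: "Ol (TQ i) (Suc \<rho>) < col" using inv cf(4) unfolding Inv_def by (metis diff_le_self le_add1 order.strict_trans1 plus_1_eq_Suc)
  have "Bv (TQ i) \<rho> = pt mum \<rho>" using bv r1 by simp
  also have "\<dots> < col" using mum_le[OF r1] cf(2) by simp
  finally have "Rv (TQ i) \<rho> \<noteq> []" using olr by auto
  then show "1 \<le> snd (CS ! i)" "Rv (TQ i) (snd (CS ! i)) \<noteq> []"
    "Ol (TQ i) (Suc (snd (CS ! i))) < Ol (TQ i) (snd (CS ! i))"
    "Ol (TQ i) (snd (CS ! i)) = fst (CS ! i)" "pt lam (snd (CS ! i)) < fst (CS ! i)"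
    using ci r1 olr ol2 cf(2) by auto
qed

lemma exit_phase:
  "i \<le> length CS \<Longrightarrow> (\<forall>t<i. land t = 0) \<Longrightarrow> Inv i \<and> (\<forall>j\<ge>1. Bv (TQ i) j = pt mum j)"
proof (induction i)
  case 0
  have lsub: "diagram lam \<subseteq> diagram lamp" using hs unfolding hstrip_def by blast
  show ?case unfolding Inv_def cnt_def
  proof (intro conjI allI impI)
    show "goodT (TQ 0)" using gT by simp
  next
    fix j :: nat assume j: "1 \<le> j"
    show "Ol (TQ 0) j = pt lamp j - card {t. t < 0 \<and> snd (CS ! t) = j}" using shT[OF j] by simp
    show "pt lam j \<le> Ol (TQ 0) j" using shT[OF j] pt_sub[OF lsub j] by simp
    show "Bv (TQ 0) j = pt mum j" using shT[OF j] by simp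
  qed
next
  case (Suc i)
  have IH: "Inv i" "\<forall>j\<ge>1. Bv (TQ i) j = pt mum j" using Suc by auto
  have ilt: "i < length CS" using Suc.prems by simp
  have l0: "land i = 0" using Suc.prems by simp
  obtain col \<rho> where ci: "CS ! i = (col, \<rho>)" by fastforce
  note ca = corner_at[OF ilt IH]
  have r1: "1 \<le> \<rho>" and ne: "Rv (TQ i) \<rho> \<noteq> []" and cor: "Ol (TQ i) (Suc \<rho>) < Ol (TQ i) \<rho>"
    and olr: "Ol (TQ i) \<rho> = col" and lc: "pt lam \<rho> < col" using ca ci by auto
  obtain b R where br: "rowof (TQ i) \<rho> = (b, R)" by fastforce
  have R: "R \<noteq> []" using ne br by simp
  have rc: "rev_corner (TQ i) (col, \<rho>) = (TQ (Suc i), 0, kv i)" using rc_TQ[of i] l0 ci by simp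
  have g: "goodT (TQ (Suc i))"
    using rc_good[OF conjunct1[OF IH(1)[unfolded Inv_def]] r1 br R, of col] cor rc by simp
  note P = rc_props[OF r1 br R rc]
  have bv: "\<forall>j\<ge>1. Bv (TQ (Suc i)) j = pt mum j" using P(4) IH(2) by simp
  have len: "\<And>j. 1 \<le> j \<Longrightarrow> length (Rv (TQ (Suc i)) j) = length (Rv (TQ i) j) - (if j = \<rho> then 1 else 0)"
    using P(5,6) br r1 by (auto simp: length_butlast)
  have ol: "\<And>j. 1 \<le> j \<Longrightarrow> Ol (TQ (Suc i)) j = Ol (TQ i) j - (if j = \<rho> then 1 else 0)"
  proof -
    fix j :: nat assume j: "1 \<le> j"
    have "Bv (TQ (Suc i)) j = Bv (TQ i) j" using P(4) j by simp
    moreover have "length (Rv (TQ i) \<rho>) \<ge> 1" using ne by (cases "Rv (TQ i) \<rho>") auto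
    ultimately show "Ol (TQ (Suc i)) j = Ol (TQ i) j - (if j = \<rho> then 1 else 0)" using len[OF j] by auto
  qed
  have cntS: "\<And>j. cnt (Suc i) j = cnt i j + (if \<rho> = j then 1 else 0)"
    unfolding cnt_def using cnt_Suc[of i "\<lambda>t. snd (CS ! t) = _"] ci by simp
  have inv: "Inv (Suc i)"
    unfolding Inv_def
  proof (intro conjI allI impI)
    show "goodT (TQ (Suc i))" by fact
  next
    fix j :: nat assume j: "1 \<le> j"
    show "Ol (TQ (Suc i)) j = pt lamp j - cnt (Suc i) j"
      using ol[OF j] cntS[of j] IH(1) j unfolding Inv_def by auto
  next
    fix j :: nat assume j: "1 \<le> j"
    show "pt lam j \<le> Ol (TQ (Suc i)) j"
    proof (cases "j = \<rho>")
      case True then show ?thesis using ol[OF j] olr lc by simp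
    next
      case False
      have "pt lam j \<le> Ol (TQ i) j" using IH(1) j unfolding Inv_def by blast
      then show ?thesis using ol[OF j] False by simp
    qed
  qed
  show ?case using inv bv by simp
qed

lemma exit_teq:
  assumes "i < length CS" "land i = 0" "Inv i" "\<forall>j\<ge>1. Bv (TQ i) j = pt mum j"
  shows "teq (ins (kv i) 1 (TQ (Suc i))) (TQ i)"
proof -
  obtain col \<rho> where ci: "CS ! i = (col, \<rho>)" by fastforce
  note ca = corner_at[OF assms(1,3,4)]
  obtain b R where br: "rowof (TQ i) \<rho> = (b, R)" by fastforce
  have r1: "1 \<le> \<rho>" using ca ci by simp
  have R: "R \<noteq> []" using ca ci br by simp
  have rc: "rev_corner (TQ i) (col, \<rho>) = (TQ (Suc i), 0, kv i)" using rc_TQ[of i] assms(2) ci by simp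
  show ?thesis by (rule rc_exit[OF goodT_srt r1 br R rc]) (use assms(3) in \<open>simp add: Inv_def\<close>)
qed

lemma chain:
  "s \<le> length CS \<Longrightarrow> (\<forall>t<s. land t = 0) \<Longrightarrow> teq T (insl (map kv (rev [0..<s])) 1 (TQ s))"
proof (induction s)
  case 0 then show ?case by (simp add: insl_def)
next
  case (Suc s)
  have IH: "teq T (insl (map kv (rev [0..<s])) 1 (TQ s))" using Suc by simp
  have ex: "Inv s \<and> (\<forall>j\<ge>1. Bv (TQ s) j = pt mum j)" using exit_phase Suc.prems by simp
  have "teq (ins (kv s) 1 (TQ (Suc s))) (TQ s)" using exit_teq[of s] ex Suc.prems by simp
  hence "teq (insl (map kv (rev [0..<s])) 1 (TQ s)) (insl (map kv (rev [0..<s])) 1 (ins (kv s) 1 (TQ (Suc s))))"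
    using teq_insl teq_sym by blast
  moreover have "insl (map kv (rev [0..<s])) 1 (ins (kv s) 1 (TQ (Suc s))) = insl (map kv (rev [0..<Suc s])) 1 (TQ (Suc s))"
    by (simp add: insl_Cons)
  ultimately show ?case using IH teq_trans by metis
qed

end


lemma cellmap_rowof: "rowof S j = rowof S' j \<Longrightarrow> cellmap S (i, j) = cellmap S' (i, j)"
  by (simp add: cellmap_def)

lemma goodT_teq: "teq S S' \<Longrightarrow> goodT S \<Longrightarrow> goodT S'"
  unfolding goodT_def teq_def colstr_def by simp

lemma build_shape:
  assumes g: "goodT D"
  shows "\<exists>lam' mu'. is_partition lam' \<and> is_partition mu' \<and> ssyt_of_shape D lam' mu' \<and>
     (\<forall>j\<ge>1. pt lam' j = Ol D j) \<and> (\<forall>j\<ge>1. pt mu' j = Bv D j)"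
proof -
  have z1: "\<And>j. length D < j \<Longrightarrow> Ol D j = 0" by (simp add: rowof_beyond)
  have z2: "\<And>j. length D < j \<Longrightarrow> Bv D j = 0" by (simp add: rowof_beyond)
  obtain lam' where l: "is_partition lam'" "\<forall>j\<ge>1. pt lam' j = Ol D j"
    using part_of_fun[of "Ol D" "length D"] goodTD(4)[OF g] z1 by blast
  obtain mu' where m: "is_partition mu'" "\<forall>j\<ge>1. pt mu' j = Bv D j"
    using part_of_fun[of "Bv D" "length D"] goodTD(3)[OF g] z2 by blast
  have "diagram mu' \<subseteq> diagram lam'" by (rule diagram_sub) (use l m in simp)
  hence "ssyt_of_shape D lam' mu'" using l m goodT_ssyt[OF g] unfolding ssyt_of_shape_def by simp
  then show ?thesis using l m by blast
qed

lemma vstrip_dec: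
  assumes vs: "vstrip mu mum" and r1: "1 \<le> r" and nr: "\<forall>d \<in> diagram mu - diagram mum. snd d \<noteq> r"
    and pm: "\<forall>j\<ge>1. pt mu' j = pt mum j - (if j = r then 1 else 0)"
  shows "vstrip mu mu'"
proof -
  have sub1: "diagram mum \<subseteq> diagram mu" using vs unfolding vstrip_def by blast
  have sub2: "diagram mu' \<subseteq> diagram mum" by (rule diagram_sub) (use pm in simp)
  have murm: "pt mu r \<le> pt mum r"
  proof (rule ccontr)
    assume "\<not> pt mu r \<le> pt mum r"
    hence "(pt mu r, r) \<in> diagram mu - diagram mum" using r1 by (auto simp: diagram_def)
    hence "snd (pt mu r, r) \<noteq> r" using nr by blast
    thus False by simp
  qed
  have cls: "\<And>c. c \<in> diagram mu - diagram mu' \<Longrightarrow> (snd c \<noteq> r \<and> c \<in> diagram mu - diagram mum) \<or> (c = (pt mum r, r))"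
  proof -
    fix c assume c: "c \<in> diagram mu - diagram mu'"
    obtain i j where ij: "c = (i, j)" by fastforce
    have h: "1 \<le> j" "1 \<le> i" "i \<le> pt mu j" "\<not> i \<le> pt mu' j" using c ij by (auto simp: diagram_def)
    show "(snd c \<noteq> r \<and> c \<in> diagram mu - diagram mum) \<or> (c = (pt mum r, r))"
    proof (cases "j = r")
      case True
      have "pt mum r - 1 < i" using h pm True by simp
      moreover have "i \<le> pt mum r" using h murm True by simp
      ultimately have "i = pt mum r" by linarith
      then show ?thesis using ij True by simp
    next
      case False
      hence "\<not> i \<le> pt mum j" using h pm by simp
      then show ?thesis using False ij h c by (auto simp: diagram_def)
    qed
  qed
  show ?thesis unfolding vstrip_def
  proof (intro conjI ballI impI)
    show "diagram mu' \<subseteq> diagram mu" using sub1 sub2 by blast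
  next
    fix c d assume c: "c \<in> diagram mu - diagram mu'" and d: "d \<in> diagram mu - diagram mu'" and cd: "snd c = snd d"
    from cls[OF c] cls[OF d] cd show "c = d" using vs unfolding vstrip_def by auto
  qed
qed

lemma kv_mono_core:
  assumes sX: "srt X" and teqY: "teq (ins x 1 X) Y" and te0: "teq (ins y 1 Y) Z"
    and r0: "1 \<le> \<rho>0" and r01: "\<rho>0 \<le> \<rho>1"
    and l1: "\<forall>j\<ge>1. length (Rv Y j) = length (Rv X j) + (if j = \<rho>1 then 1 else 0)"
    and l0: "\<forall>j\<ge>1. length (Rv Z j) = length (Rv Y j) + (if j = \<rho>0 then 1 else 0)"
  shows "x \<le> y"
proof (rule ccontr)
  assume "\<not> x \<le> y"
  hence yx: "y < x" by simp
  have r1: "1 \<le> \<rho>1" using r0 r01 by simp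
  have gx: "\<exists>a0. cv X x 1 \<rho>1 = Some a0 \<and> (\<forall>z\<in>set (Rv X \<rho>1). z \<le> a0)"
  proof -
    have e1: "length (Rv (ins x 1 X) \<rho>1) = length (Rv Y \<rho>1)" using teq_rowof[OF teqY, of \<rho>1] by simp
    have e2: "length (Rv Y \<rho>1) = length (Rv X \<rho>1) + 1" using l1 r1 by simp
    have e3: "length (Rv (ins x 1 X) \<rho>1) = length (Rv X \<rho>1) +
       (if \<exists>a. cv X x 1 \<rho>1 = Some a \<and> (\<forall>z\<in>set (Rv X \<rho>1). z \<le> a) then 1 else 0)" by (rule growth[OF r1])
    show ?thesis
    proof (rule ccontr)
      assume "\<not> ?thesis"
      hence "length (Rv (ins x 1 X) \<rho>1) = length (Rv X \<rho>1)" using e3 by simp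
      thus False using e1 e2 by simp
    qed
  qed
  have gy: "\<exists>b. cv Y y 1 \<rho>0 = Some b \<and> (\<forall>z\<in>set (Rv Y \<rho>0). z \<le> b)"
  proof -
    have e1: "length (Rv (ins y 1 Y) \<rho>0) = length (Rv Z \<rho>0)" using teq_rowof[OF te0, of \<rho>0] by simp
    have e2: "length (Rv Z \<rho>0) = length (Rv Y \<rho>0) + 1" using l0 r0 by simp
    have e3: "length (Rv (ins y 1 Y) \<rho>0) = length (Rv Y \<rho>0) +
       (if \<exists>a. cv Y y 1 \<rho>0 = Some a \<and> (\<forall>z\<in>set (Rv Y \<rho>0). z \<le> a) then 1 else 0)" by (rule growth[OF r0])
    show ?thesis
    proof (rule ccontr)
      assume "\<not> ?thesis"
      hence "length (Rv (ins y 1 Y) \<rho>0) = length (Rv Y \<rho>0)" using e3 by simp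
      thus False using e1 e2 by simp
    qed
  qed
  have cvY: "cv Y y 1 \<rho>0 = cv (ins x 1 X) y 1 \<rho>0" using cv_teq[OF teq_sym[OF teqY]] by simp
  have rY: "Rv Y \<rho>0 = Rv (ins x 1 X) \<rho>0" using teq_rowof[OF teqY, of \<rho>0] by simp
  obtain a0 where ca0: "cv X x 1 \<rho>1 = Some a0" using gx by blast
  obtain a1 where ca1: "cv X x 1 \<rho>0 = Some a1" using cv_prev[OF ca0 r0 r01] by blast
  have ng: "\<not> (\<exists>b. cv (ins x 1 X) y 1 \<rho>0 = Some b \<and> (\<forall>z\<in>set (Rv (ins x 1 X) \<rho>0). z \<le> b))"
    by (rule no_growth_before[OF sX yx r0 ca1])
  have "\<exists>b. cv (ins x 1 X) y 1 \<rho>0 = Some b \<and> (\<forall>z\<in>set (Rv (ins x 1 X) \<rho>0). z \<le> b)"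
    using gy unfolding cvY rY .
  then show False using ng by blast
qed

context setting
begin

lemma Inv_ex: "i \<le> length CS \<Longrightarrow> \<forall>t<i. land t = 0 \<Longrightarrow> Inv i \<and> (\<forall>j\<ge>1. Bv (TQ i) j = pt mum j)"
  using exit_phase by blast

lemma exit_len:
  assumes "i < length CS" "land i = 0" "\<forall>t<i. land t = 0"
  shows "\<forall>j\<ge>1. length (Rv (TQ i) j) = length (Rv (TQ (Suc i)) j) + (if j = snd (CS ! i) then 1 else 0)"
proof (intro allI impI)
  fix j :: nat assume j: "1 \<le> j"
  have IH: "Inv i" "\<forall>j\<ge>1. Bv (TQ i) j = pt mum j" using Inv_ex assms by auto
  obtain col \<rho> where ci: "CS ! i = (col, \<rho>)" by fastforce
  note ca = corner_at[OF assms(1) IH]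
  obtain b R where br: "rowof (TQ i) \<rho> = (b, R)" by fastforce
  have r1: "1 \<le> \<rho>" using ca ci by simp
  have R: "R \<noteq> []" using ca ci br by simp
  have rc: "rev_corner (TQ i) (col, \<rho>) = (TQ (Suc i), 0, kv i)" using rc_TQ[of i] assms(2) ci by simp
  note P = rc_props[OF r1 br R rc]
  show "length (Rv (TQ i) j) = length (Rv (TQ (Suc i)) j) + (if j = snd (CS ! i) then 1 else 0)"
  proof (cases "j = \<rho>")
    case True then show ?thesis using P(6) r1 br R ci by (simp add: length_butlast)
  next
    case False then show ?thesis using P(5) j ci by simp
  qed
qed

lemma kv_pos:
  assumes "i < length CS" "land i = 0" "\<forall>t<i. land t = 0"
  shows "0 < kv i"
proof -
  have IH: "Inv i" "\<forall>j\<ge>1. Bv (TQ i) j = pt mum j" using Inv_ex assms by auto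
  have te: "teq (ins (kv i) 1 (TQ (Suc i))) (TQ i)" using exit_teq[OF assms(1,2) IH] .
  have "Rv (ins (kv i) 1 (TQ (Suc i))) 1 = fst (rstep (Rv (TQ (Suc i)) 1) (kv i))"
    using ins_cv[of 1 1 "kv i" "TQ (Suc i)"] by simp
  hence "kv i \<in> set (Rv (ins (kv i) 1 (TQ (Suc i))) 1)" using rstep_contains by simp
  hence "kv i \<in> set (Rv (TQ i) 1)" using teq_rowof[OF te, of 1] by simp
  then show ?thesis using goodTD(2)[of "TQ i" 1] IH(1) unfolding Inv_def by auto
qed

lemma kv_mono:
  assumes a: "Suc a < length CS" "\<forall>t<Suc (Suc a). land t = 0"
  shows "kv (Suc a) \<le> kv a"
proof -
  have ia: "Inv (Suc a)" "\<forall>j\<ge>1. Bv (TQ (Suc a)) j = pt mum j" using Inv_ex[of "Suc a"] a by auto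
  have ia0: "Inv a" "\<forall>j\<ge>1. Bv (TQ a) j = pt mum j" using Inv_ex[of a] a by auto
  have ib: "Inv (Suc (Suc a))" using Inv_ex[of "Suc (Suc a)"] a by auto
  have sX: "srt (TQ (Suc (Suc a)))" using ib goodT_srt unfolding Inv_def by blast
  have teqY: "teq (ins (kv (Suc a)) 1 (TQ (Suc (Suc a)))) (TQ (Suc a))" using exit_teq[of "Suc a"] a ia by simp
  have te0: "teq (ins (kv a) 1 (TQ (Suc a))) (TQ a)" using exit_teq[of a] a ia0 by simp
  have r01: "snd (CS ! a) \<le> snd (CS ! Suc a)" using cs_row_mono[OF hs plp pl, of a "Suc a"] a by simp
  have r0: "1 \<le> snd (CS ! a)" using corner_at[of a] ia0 a by simp
  have l1: "\<forall>j\<ge>1. length (Rv (TQ (Suc a)) j) = length (Rv (TQ (Suc (Suc a))) j) + (if j = snd (CS ! Suc a) then 1 else 0)"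
    using exit_len[of "Suc a"] a by simp
  have l0: "\<forall>j\<ge>1. length (Rv (TQ a) j) = length (Rv (TQ (Suc a)) j) + (if j = snd (CS ! a) then 1 else 0)"
    using exit_len[of a] a by simp
  show ?thesis by (rule kv_mono_core[OF sX teqY te0 r0 r01 l1 l0])
qed

lemma w_sorted: "i \<le> length CS \<Longrightarrow> \<forall>t<i. land t = 0 \<Longrightarrow> sorted (rev (map kv [0..<i]))"
proof -
  assume i: "i \<le> length CS" and ex: "\<forall>t<i. land t = 0"
  show ?thesis
  proof (rule sorted_rev_map)
    fix a assume "Suc a < i"
    then show "kv (Suc a) \<le> kv a" using kv_mono[of a] i ex by simp
  qed
qed

end


context setting
begin

lemma land_step:
  assumes i0: "i0 < length CS" and ex: "\<forall>t<i0. land t = 0" and l1: "1 \<le> land i0"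
  shows "goodT (TQ (Suc i0))" "1 \<le> Bv (TQ i0) (land i0)"
    "rowof (TQ (Suc i0)) (land i0) = (Bv (TQ i0) (land i0) - 1, kv i0 # Rv (TQ i0) (land i0))"
    "\<forall>j\<ge>1. Bv (TQ (Suc i0)) j = pt mum j - (if j = land i0 then 1 else 0)"
    "\<forall>j\<ge>1. pt lam j \<le> Ol (TQ (Suc i0)) j" "\<forall>j\<ge>1. Ol (TQ (Suc i0)) j \<le> pt lamp j"
    "teq (ins (kv i0) (Suc (land i0)) (setrow (land i0) (rowof (TQ i0) (land i0)) (TQ (Suc i0)))) (TQ i0)"
    "\<forall>j<land i0. rowof (TQ (Suc i0)) j = rowof (TQ i0) j"
proof -
  have IH: "Inv i0" "\<forall>j\<ge>1. Bv (TQ i0) j = pt mum j" using Inv_ex i0 ex by auto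
  have gQ: "goodT (TQ i0)" and olQ: "\<forall>j\<ge>1. Ol (TQ i0) j = pt lamp j - cnt i0 j"
    and lbQ: "\<forall>j\<ge>1. pt lam j \<le> Ol (TQ i0) j" using IH(1) unfolding Inv_def by auto
  obtain col \<rho> where ci: "CS ! i0 = (col, \<rho>)" by fastforce
  note ca = corner_at[OF i0 IH]
  have r1: "1 \<le> \<rho>" and ne: "Rv (TQ i0) \<rho> \<noteq> []" and cor: "Ol (TQ i0) (Suc \<rho>) < Ol (TQ i0) \<rho>"
    and olr: "Ol (TQ i0) \<rho> = col" and lc: "pt lam \<rho> < col" using ca ci by auto
  obtain b R where br: "rowof (TQ i0) \<rho> = (b, R)" by fastforce
  have R: "R \<noteq> []" using ne br by simp
  let ?r = "land i0"
  have rc: "rev_corner (TQ i0) (col, \<rho>) = (TQ (Suc i0), ?r, kv i0)" using rc_TQ[of i0] ci by simp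
  have G: "goodT (TQ (Suc i0)) \<and> (1 \<le> ?r \<longrightarrow> 1 \<le> Bv (TQ i0) ?r)"
    using rc_good[OF gQ r1 br R, of col] cor rc by simp
  show g: "goodT (TQ (Suc i0))" using G by simp
  show b1: "1 \<le> Bv (TQ i0) ?r" using G l1 by simp
  note P = rc_props[OF r1 br R rc]
  show rr: "rowof (TQ (Suc i0)) ?r = (Bv (TQ i0) ?r - 1, kv i0 # Rv (TQ i0) ?r)" using P(7) l1 by simp
  have rlt: "?r < \<rho>" using P(1) .
  show "\<forall>j\<ge>1. Bv (TQ (Suc i0)) j = pt mum j - (if j = ?r then 1 else 0)"
  proof (intro allI impI)
    fix j :: nat assume j: "1 \<le> j"
    show "Bv (TQ (Suc i0)) j = pt mum j - (if j = ?r then 1 else 0)"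
    proof (cases "j = ?r")
      case True then show ?thesis using rr IH(2) j by simp
    next
      case False then show ?thesis using P(4) IH(2) j by simp
    qed
  qed
  have ol: "\<And>j. 1 \<le> j \<Longrightarrow> Ol (TQ (Suc i0)) j = Ol (TQ i0) j - (if j = \<rho> then 1 else 0)"
  proof -
    fix j :: nat assume j: "1 \<le> j"
    show "Ol (TQ (Suc i0)) j = Ol (TQ i0) j - (if j = \<rho> then 1 else 0)"
    proof (cases "j = ?r")
      case True
      then show ?thesis using rr b1 rlt by simp
    next
      case nr: False
      show ?thesis
      proof (cases "j = \<rho>")
        case True
        have "Rv (TQ (Suc i0)) \<rho> = butlast R" using P(6) rlt by simp
        moreover have "Bv (TQ (Suc i0)) \<rho> = b" using P(4) rlt br by simp
        moreover have "1 \<le> length R" using R by (cases R) auto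
        ultimately show ?thesis using True br by (simp add: length_butlast)
      next
        case False
        then show ?thesis using P(4) P(5) nr by simp
      qed
    qed
  qed
  show "\<forall>j\<ge>1. pt lam j \<le> Ol (TQ (Suc i0)) j"
  proof (intro allI impI)
    fix j :: nat assume j: "1 \<le> j"
    show "pt lam j \<le> Ol (TQ (Suc i0)) j"
    proof (cases "j = \<rho>")
      case True then show ?thesis using ol[OF j] olr lc by simp
    next
      case False
      have "pt lam j \<le> Ol (TQ i0) j" using lbQ j by blast
      then show ?thesis using ol[OF j] False by simp
    qed
  qed
  show "\<forall>j\<ge>1. Ol (TQ (Suc i0)) j \<le> pt lamp j"
  proof (intro allI impI)
    fix j :: nat assume j: "1 \<le> j"
    have "Ol (TQ i0) j \<le> pt lamp j" using olQ j by simp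
    then show "Ol (TQ (Suc i0)) j \<le> pt lamp j" using ol[OF j] by simp
  qed
  show "teq (ins (kv i0) (Suc ?r) (setrow ?r (rowof (TQ i0) ?r) (TQ (Suc i0)))) (TQ i0)"
    by (rule rc_land[OF goodT_srt[OF gQ] r1 br R rc l1])
  show "\<forall>j<?r. rowof (TQ (Suc i0)) j = rowof (TQ i0) j" using P(2) by simp
qed

lemma path_case:
  assumes m: "1 \<le> m" "m \<le> length CS" "1 \<le> land (m - 1)" "\<forall>t < m - 1. land t = 0"
  shows "goodT (insl (map kv (rev [0..<m - 1])) 1 (TQ m)) \<and>
    (\<forall>j\<ge>1. pt lam j \<le> Ol (insl (map kv (rev [0..<m - 1])) 1 (TQ m)) j \<and>
            Ol (insl (map kv (rev [0..<m - 1])) 1 (TQ m)) j \<le> pt lamp j) \<and>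
    (\<forall>j\<ge>1. Bv (insl (map kv (rev [0..<m - 1])) 1 (TQ m)) j = pt mum j - (if j = land (m - 1) then 1 else 0))"
proof -
  define i0 where "i0 = m - 1"
  have mi: "m = Suc i0" using m(1) unfolding i0_def by simp
  have i0l: "i0 < length CS" using m(2) mi by simp
  have ex: "\<forall>t<i0. land t = 0" using m(4) unfolding i0_def .
  have l1: "1 \<le> land i0" using m(3) unfolding i0_def .
  note LS = land_step[OF i0l ex l1]
  define P where "P = TQ m"
  define r where "r = land i0"
  define e where "e = kv i0"
  define R0 where "R0 = Rv (TQ i0) r"
  define w where "w = map kv (rev [0..<i0])"
  have gP: "goodT P" using LS(1) mi P_def by simp
  have r1: "1 \<le> r" using l1 r_def by simp
  have rowP: "rowof P r = (Bv (TQ i0) r - 1, e # R0)" using LS(3) mi unfolding P_def r_def e_def R0_def by simp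
  have RvP: "Rv P r = e # R0" using rowP by simp
  have BvP: "Bv P r + 1 = Bv (TQ i0) r" using rowP LS(2) r_def by simp
  have e0: "0 < e" using goodTD(2)[OF gP r1] RvP by simp
  have ws: "sorted w" using w_sorted[of i0] i0l ex unfolding w_def by (simp add: rev_map)
  have wpos: "\<forall>x\<in>set w. 0 < x"
  proof
    fix x assume "x \<in> set w"
    then obtain t where t: "t < i0" "x = kv t" unfolding w_def by auto
    show "0 < x" using kv_pos[of t] t i0l ex by simp
  qed
  define D where "D = insl w 1 P"
  have gD: "goodT D" unfolding D_def by (rule insl_good[OF gP wpos])
  have BD: "\<And>j. Bv D j = Bv P j" unfolding D_def by (simp add: insl_B)
  have lower: "\<And>j. 1 \<le> j \<Longrightarrow> pt lam j \<le> Ol D j"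
  proof -
    fix j :: nat assume j: "1 \<le> j"
    have "pt lam j \<le> Ol P j" using LS(5) j mi P_def by simp
    also have "\<dots> \<le> Ol D j" using insl_len[of 1 P j w] BD[of j] unfolding D_def by simp
    finally show "pt lam j \<le> Ol D j" .
  qed
  have teqT: "teq T (insl w 1 (ins e (Suc r) (setrow r (Bv P r + 1, R0) P)))"
  proof -
    have c: "teq T (insl w 1 (TQ i0))" using chain[of i0] i0l ex unfolding w_def by simp
    have "rowof (TQ i0) r = (Bv P r + 1, R0)" using BvP R0_def by simp
    hence "teq (ins e (Suc r) (setrow r (Bv P r + 1, R0) P)) (TQ i0)"
      using LS(7) mi unfolding P_def r_def e_def by simp
    hence "teq (insl w 1 (TQ i0)) (insl w 1 (ins e (Suc r) (setrow r (Bv P r + 1, R0) P)))"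
      using teq_insl teq_sym by blast
    then show ?thesis using c teq_trans by blast
  qed
  have upper: "\<And>j. 1 \<le> j \<Longrightarrow> Ol D j \<le> pt lamp j"
  proof -
    fix j :: nat assume j: "1 \<le> j"
    have "Ol D j \<le> Ol (insl w 1 (ins e (Suc r) (setrow r (Bv P r + 1, R0) P))) j"
      using shape_cmp[OF goodT_srt[OF gP] r1 RvP e0 ws] j unfolding D_def by blast
    also have "\<dots> = Ol T j" using teq_rowof[OF teqT, of j] by simp
    also have "\<dots> = pt lamp j" using shT[OF j] by simp
    finally show "Ol D j \<le> pt lamp j" .
  qed
  have bvD: "\<And>j. 1 \<le> j \<Longrightarrow> Bv D j = pt mum j - (if j = land (m - 1) then 1 else 0)"
    using BD LS(4) mi unfolding P_def i0_def by simp
  show ?thesis using gD lower upper bvD unfolding D_def w_def P_def i0_def by simp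
qed

lemma path_row:
  assumes m: "1 \<le> m" "m \<le> length CS" "1 \<le> land (m - 1)" "\<forall>t < m - 1. land t = 0"
    and er: "exits_right (bump_path (TQ (m - 1)) (TQ m)) mu mum"
  shows "\<forall>d\<in>diagram mu - diagram mum. snd d \<noteq> land (m - 1)"
proof -
  define i0 where "i0 = m - 1"
  have mi: "m = Suc i0" using m(1) unfolding i0_def by simp
  have i0l: "i0 < length CS" using m(2) mi by simp
  have ex: "\<forall>t<i0. land t = 0" using m(4) unfolding i0_def .
  have l1: "1 \<le> land i0" using m(3) unfolding i0_def .
  note LS = land_step[OF i0l ex l1]
  define Q where "Q = TQ i0"
  define P where "P = TQ m"
  define r where "r = land i0"
  have r1: "1 \<le> r" using l1 r_def by simp
  have rowP: "rowof P r = (Bv Q r - 1, kv i0 # Rv Q r)" using LS(3) mi unfolding P_def r_def Q_def by simp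
  have b1: "1 \<le> Bv Q r" using LS(2) unfolding Q_def r_def .
  let ?B = "bump_path Q P"
  have Lin: "(Bv Q r, r) \<in> ?B"
  proof -
    have "cellmap Q (Bv Q r, r) = None" by (simp add: cellmap_eq)
    moreover have "cellmap P (Bv Q r, r) \<noteq> None" using rowP r1 b1 by (simp add: cellmap_eq)
    ultimately show ?thesis unfolding bump_path_def by auto
  qed
  have low: "\<And>c. c \<in> ?B \<Longrightarrow> r \<le> snd c"
  proof (rule ccontr)
    fix c assume c: "c \<in> ?B" and "\<not> r \<le> snd c"
    hence lt: "snd c < r" by simp
    have "rowof P (snd c) = rowof Q (snd c)" using LS(8) lt mi unfolding P_def Q_def r_def by simp
    hence "cellmap P (fst c, snd c) = cellmap Q (fst c, snd c)" by (rule cellmap_rowof)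
    thus False using c unfolding bump_path_def by simp
  qed
  have Beq: "bump_path (TQ (m - 1)) (TQ m) = ?B" unfolding Q_def P_def i0_def by (rule refl)
  obtain c where c: "c \<in> ?B" "\<forall>c'\<in>?B. snd c \<le> snd c'" "\<forall>d\<in>diagram mu - diagram mum. snd c < snd d"
    using er unfolding exits_right_def Beq by blast
  have "snd c \<le> r" using c(2) Lin by force
  moreover have "r \<le> snd c" using low[OF c(1)] .
  ultimately have "snd c = r" by simp
  then show ?thesis using c(3) r_def i0_def by force
qed

end


lemma diagram_eq: "(\<And>j. 1 \<le> j \<Longrightarrow> pt a j = pt b j) \<Longrightarrow> diagram a = diagram b"
  unfolding diagram_def by force

context setting
begin

lemma steps_eq: "steps lamp lam T = slide_steps T CS" by (simp add: steps_def cs_def[OF hs plp pl])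

lemma len_steps: "length (steps lamp lam T) = length CS" by (simp add: steps_eq slide_steps_len)

lemma step_nth:
  assumes "1 \<le> i" "i \<le> length CS"
  shows "step_row lamp lam T i = land (i - 1)" "step_val lamp lam T i = kv (i - 1)"
    "step_tab lamp lam T i = TQ i" "step_path lamp lam T i = bump_path (TQ (i - 1)) (TQ i)"
proof -
  have lt: "i - 1 < length CS" using assms by simp
  have e: "steps lamp lam T ! (i - 1) = (TQ i, kv (i - 1), land (i - 1), bump_path (TQ (i - 1)) (TQ i))"
    using slide_steps_nth[OF lt, of T] assms(1) by (simp add: steps_eq land_def kv_def)
  show "step_row lamp lam T i = land (i - 1)" using e by (simp add: step_row_def)
  show "step_val lamp lam T i = kv (i - 1)" using e by (simp add: step_val_def)
  show "step_tab lamp lam T i = TQ i" using e assms(1) by (simp add: step_tab_def)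
  show "step_path lamp lam T i = bump_path (TQ (i - 1)) (TQ i)" using e by (simp add: step_path_def)
qed

lemma step_tab0: "step_tab lamp lam T 0 = TQ 0" by (simp add: step_tab_def)

lemma map_sv: "n \<le> length CS \<Longrightarrow> map (step_val lamp lam T) (rev [1..<Suc n]) = map kv (rev [0..<n])"
proof -
  assume n: "n \<le> length CS"
  have "[1..<Suc n] = map Suc [0..<n]" by (simp add: map_Suc_upt)
  hence "map (step_val lamp lam T) (rev [1..<Suc n]) = map (step_val lamp lam T \<circ> Suc) (rev [0..<n])"
    by (simp add: rev_map)
  also have "\<dots> = map kv (rev [0..<n])"
    by (rule map_cong) (use n step_nth(2) in auto)
  finally show ?thesis .
qed

lemma key_facts:
  assumes pc: "has_down_path lamp lam T \<longrightarrow> exits_right (down_path lamp lam T) mu mum"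
  shows "goodT (down_slide lamp lam T) \<and>
    (\<forall>j\<ge>1. pt lam j \<le> Ol (down_slide lamp lam T) j \<and> Ol (down_slide lamp lam T) j \<le> pt lamp j) \<and>
    ((\<forall>j\<ge>1. Bv (down_slide lamp lam T) j = pt mum j) \<or>
     (\<exists>r\<ge>1. (\<forall>d\<in>diagram mu - diagram mum. snd d \<noteq> r) \<and>
        (\<forall>j\<ge>1. Bv (down_slide lamp lam T) j = pt mum j - (if j = r then 1 else 0))))"
proof (cases "has_down_path lamp lam T")
  case True
  let ?Pr = "\<lambda>i. 1 \<le> i \<and> i \<le> length (steps lamp lam T) \<and> 1 \<le> step_row lamp lam T i"
  define m where "m = (LEAST i. ?Pr i)"
  have dm: "down_m lamp lam T = m" using True unfolding down_m_def m_def by simp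
  have dm': "down_m' lamp lam T = m - 1" using True dm unfolding down_m'_def by simp
  have Pm: "?Pr m" unfolding m_def by (rule LeastI_ex) (use True in \<open>simp add: has_down_path_def\<close>)
  have m1: "1 \<le> m" and mle: "m \<le> length CS" and sr: "1 \<le> step_row lamp lam T m" using Pm len_steps by auto
  have lm: "1 \<le> land (m - 1)" using sr step_nth(1)[OF m1 mle] by simp
  have ex: "\<forall>t < m - 1. land t = 0"
  proof (intro allI impI)
    fix t assume t: "t < m - 1"
    show "land t = 0"
    proof (rule ccontr)
      assume "land t \<noteq> 0"
      hence "?Pr (Suc t)" using t mle step_nth(1)[of "Suc t"] len_steps by simp
      hence "m \<le> Suc t" unfolding m_def by (rule Least_le)
      thus False using t by simp
    qed
  qed
  have D: "down_slide lamp lam T = insl (map kv (rev [0..<m - 1])) 1 (TQ m)"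
  proof -
    have "down_slide lamp lam T = insl (map (step_val lamp lam T) (rev [1..<Suc (m - 1)])) 1 (step_tab lamp lam T m)"
      unfolding down_slide_def dm dm' foldl_ext by simp
    also have "map (step_val lamp lam T) (rev [1..<Suc (m - 1)]) = map kv (rev [0..<m - 1])"
      using map_sv[of "m - 1"] mle by simp
    also have "step_tab lamp lam T m = TQ m" using step_nth(3)[OF m1 mle] .
    finally show ?thesis .
  qed
  note PC = path_case[OF m1 mle lm ex]
  have er: "exits_right (bump_path (TQ (m - 1)) (TQ m)) mu mum"
    using pc True unfolding down_path_def dm using step_nth(4)[OF m1 mle] by simp
  have nr: "\<forall>d\<in>diagram mu - diagram mum. snd d \<noteq> land (m - 1)" using path_row[OF m1 mle lm ex er] .
  show ?thesis using PC nr lm unfolding D by blast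
next
  case False
  have ex: "\<forall>t < length CS. land t = 0"
  proof (intro allI impI)
    fix t assume t: "t < length CS"
    show "land t = 0"
    proof (rule ccontr)
      assume "land t \<noteq> 0"
      hence "has_down_path lamp lam T" unfolding has_down_path_def
        using t step_nth(1)[of "Suc t"] len_steps by (intro exI[of _ "Suc t"]) simp
      thus False using False by simp
    qed
  qed
  have dm: "down_m lamp lam T = length CS" "down_m' lamp lam T = length CS"
    using False len_steps unfolding down_m_def down_m'_def by auto
  have D: "down_slide lamp lam T = insl (map kv (rev [0..<length CS])) 1 (TQ (length CS))"
  proof -
    have st: "step_tab lamp lam T (length CS) = TQ (length CS)"
      using step_nth(3)[of "length CS"] step_tab0 by (cases "length CS = 0") auto
    show ?thesis unfolding down_slide_def dm foldl_ext map_sv[OF le_refl] st by (rule refl)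
  qed
  have te: "teq T (down_slide lamp lam T)" unfolding D using chain[OF le_refl ex] .
  have gD: "goodT (down_slide lamp lam T)" using goodT_teq[OF te gT] .
  have "\<forall>j\<ge>1. pt lam j \<le> Ol (down_slide lamp lam T) j \<and> Ol (down_slide lamp lam T) j \<le> pt lamp j"
  proof (intro allI impI)
    fix j :: nat assume j: "1 \<le> j"
    have lsub: "diagram lam \<subseteq> diagram lamp" using hs unfolding hstrip_def by blast
    have "Ol (down_slide lamp lam T) j = pt lamp j" using teq_rowof[OF te, of j] shT[OF j] by simp
    then show "pt lam j \<le> Ol (down_slide lamp lam T) j \<and> Ol (down_slide lamp lam T) j \<le> pt lamp j"
      using pt_sub[OF lsub j] by simp
  qed
  moreover have "\<forall>j\<ge>1. Bv (down_slide lamp lam T) j = pt mum j" using teq_rowof[OF te] shT by simp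
  ultimately show ?thesis using gD by blast
qed

theorem main:
  assumes pc: "has_down_path lamp lam T \<longrightarrow> exits_right (down_path lamp lam T) mu mum"
  shows "\<exists>lam' mu'. is_partition lam' \<and> is_partition mu' \<and>
           ssyt_of_shape (down_slide lamp lam T) lam' mu' \<and> hstrip lam' lam \<and> vstrip mu mu'"
proof -
  let ?D = "down_slide lamp lam T"
  note K = key_facts[OF pc]
  obtain lam' mu' where b: "is_partition lam'" "is_partition mu'" "ssyt_of_shape ?D lam' mu'"
    "\<forall>j\<ge>1. pt lam' j = Ol ?D j" "\<forall>j\<ge>1. pt mu' j = Bv ?D j"
    using build_shape[of ?D] K by blast
  have d1: "diagram lam \<subseteq> diagram lam'" by (rule diagram_sub) (use K b(4) in simp)
  have d2: "diagram lam' \<subseteq> diagram lamp" by (rule diagram_sub) (use K b(4) in simp)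
  have hs': "hstrip lam' lam" by (rule hstrip_mid[OF hs d1 d2])
  have vs': "vstrip mu mu'"
  proof -
    from K consider (a) "\<forall>j\<ge>1. Bv ?D j = pt mum j"
      | (b) r where "1 \<le> r" "\<forall>d\<in>diagram mu - diagram mum. snd d \<noteq> r"
          "\<forall>j\<ge>1. Bv ?D j = pt mum j - (if j = r then 1 else 0)" by blast
    then show ?thesis
    proof cases
      case a
      have "diagram mu' = diagram mum" by (rule diagram_eq) (use a b(5) in simp)
      then show ?thesis using vs unfolding vstrip_def by simp
    next
      case bb: b
      show ?thesis by (rule vstrip_dec[OF vs bb(1) bb(2)]) (use bb(3) b(5) in simp)
    qed
  qed
  show ?thesis using b(1-3) hs' vs' by blast
qed

end

theorem proposition5p3:
  fixes lam mu lamp mum :: "nat list" and T :: tab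
  assumes "is_partition lam" and "is_partition mu"
    and "is_partition lamp" and "is_partition mum"
    and "diagram mu \<subseteq> diagram lam"
    and "hstrip lamp lam" and "vstrip mu mum"
    and "ssyt_of_shape T lamp mum"
    and "has_down_path lamp lam T \<longrightarrow> exits_right (down_path lamp lam T) mu mum"
  shows "\<exists>lam' mu'. is_partition lam' \<and> is_partition mu' \<and>
           ssyt_of_shape (down_slide lamp lam T) lam' mu' \<and>
           hstrip lam' lam \<and> vstrip mu mu'"
proof -
  interpret setting lam mu lamp mum T by (unfold_locales) (use assms in auto)
  show ?thesis using main assms(9) by blast
qed


end
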